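(* In the setting of the construction below, if $a_{ii}\not\equiv0\pmod n$ for some $i$, then the associator $\Phi$ of $A$ is nontrivial, and the quasi-Hopf algebra $A$ (with coproduct $\Delta_{\mathbb J}$ and associator $\Phi$) is not twist equivalent to a Hopf algebra.
   Context: Setting: $n\ge2$, $q$ a primitive root of unity of order $n^2$, $m\ge1$; $H$ a finite dimensional Hopf algebra over $\mathbb{C}$ generated by grouplike $g_1,\dots,g_m$ and $e_1,\dots,e_m$ with $g_i^{n^2}=1$, $g_ig_j=g_jg_i$, $g_ie_jg_i^{-1}=q^{\delta_{ij}}e_j$, $\Delta(e_i)=e_i\otimes K_i+1\otimes e_i$, $K_i=\prod_jg_j^{a_{ij}}$, $a_{ij}\in\mathbb{Z}_{n^2}$; $H$ admits a Hopf algebra projection onto $\mathbb{C}[(\mathbb{Z}_{n^2})^m]$ via $g_i\mapsto g_i$, $e_i\mapsto0$. $A\subset H$ is the subalgebra generated by the $g_i^n$ and $e_i$. With $1_\beta$ the primitive idempotents of $\mathbb{C}[g_1,\dots,g_m]$ ($1_\beta g_i=q^{\beta_i}1_\beta$), $c(z,y)=q^{-z(y-y')}$ ($z,y\in\{0,\dots,n^2-1\}$, $y'$ = remainder of $y$ mod $n$), $\mathbb J=\sum_{\beta,\gamma}\prod_{i,j}c(\beta_i,\gamma_j)^{a_{ij}}1_\beta\otimes1_\gamma$, $\Delta_{\mathbb J}(z)=\mathbb J\Delta(z)\mathbb J^{-1}$, and $\Phi=(1\otimes\mathbb J)(\mathrm{id}\otimes\Delta)(\mathbb J)(\Delta\otimes\mathrm{id})(\mathbb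 J^{-1})(\mathbb J^{-1}\otimes1)$. It is known (and may be assumed) that $A$ with $\Delta_{\mathbb J}$ and $\Phi$ is a quasi-Hopf algebra. Twist equivalence means isomorphism after twisting by an invertible element of $A\otimes A$. *)

theory Defs
  imports Complex_Main "HOL-Library.FuncSet"
begin

text \<open>Finite-dimensional algebras, coalgebras and Hopf algebras over the complex numbers
are presented in coordinates with respect to a basis b_0, ..., b_(d-1).
Elements of H, H (x) H, H (x) H (x) H are functions with support in the index ranges.\<close>

type_synonym v1 = "nat \<Rightarrow> complex"
type_synonym v2 = "nat \<Rightarrow> nat \<Rightarrow> complex"
type_synonym v3 = "nat \<Rightarrow> nat \<Rightarrow> nat \<Rightarrow> complex"

record hopf_data =
  dim :: nat
  mu  :: "nat \<Rightarrow> nat \<Rightarrow> nat \<Rightarrow> complex"   \<comment> \<open>b_i b_j = sum_k mu i j k b_k\<close>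
  unt :: v1
  dlt :: "nat \<Rightarrow> nat \<Rightarrow> nat \<Rightarrow> complex"   \<comment> \<open>Delta b_i = sum_(j,k) dlt i j k b_j (x) b_k\<close>
  eps :: "nat \<Rightarrow> complex"
  ant :: "nat \<Rightarrow> nat \<Rightarrow> complex"          \<comment> \<open>S b_i = sum_k ant i k b_k\<close>

definition V1 :: "nat \<Rightarrow> v1 set" where "V1 d = {x. \<forall>i\<ge>d. x i = 0}"

definition bv :: "nat \<Rightarrow> v1" where "bv j = (\<lambda>i. if i = j then 1 else 0)"

definition scal :: "complex \<Rightarrow> v1 \<Rightarrow> v1" where "scal c x = (\<lambda>k. c * x k)"

definition mul :: "hopf_data \<Rightarrow> v1 \<Rightarrow> v1 \<Rightarrow> v1" where
  "mul H x y = (\<lambda>k. if k < dim H then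
     (\<Sum>i<dim H. \<Sum>j<dim H. x i * y j * mu H i j k) else 0)"

definition mul2 :: "hopf_data \<Rightarrow> v2 \<Rightarrow> v2 \<Rightarrow> v2" where
  "mul2 H X Y = (\<lambda>k l. if k < dim H \<and> l < dim H then
     (\<Sum>i<dim H. \<Sum>j<dim H. \<Sum>i'<dim H. \<Sum>j'<dim H.
        X i j * Y i' j' * mu H i i' k * mu H j j' l) else 0)"

definition mul3 :: "hopf_data \<Rightarrow> v3 \<Rightarrow> v3 \<Rightarrow> v3" where
  "mul3 H X Y = (\<lambda>k l r. if k < dim H \<and> l < dim H \<and> r < dim H then
     (\<Sum>i<dim H. \<Sum>j<dim H. \<Sum>t<dim H. \<Sum>i'<dim H. \<Sum>j'<dim H. \<Sum>t'<dim H.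
        X i j t * Y i' j' t' * mu H i i' k * mu H j j' l * mu H t t' r) else 0)"

definition tens :: "v1 \<Rightarrow> v1 \<Rightarrow> v2" where "tens x y = (\<lambda>i j. x i * y j)"

definition one2 :: "hopf_data \<Rightarrow> v2" where "one2 H = (\<lambda>i j. unt H i * unt H j)"
definition one3 :: "hopf_data \<Rightarrow> v3" where "one3 H = (\<lambda>i j k. unt H i * unt H j * unt H k)"

definition lone :: "hopf_data \<Rightarrow> v2 \<Rightarrow> v3" where "lone H X = (\<lambda>a b c. unt H a * X b c)"
definition rone :: "hopf_data \<Rightarrow> v2 \<Rightarrow> v3" where "rone H X = (\<lambda>a b c. X a b * unt H c)"

definition cop :: "hopf_data \<Rightarrow> v1 \<Rightarrow> v2" where
  "cop H x = (\<lambda>j k. if j < dim H \<and> k < dim H then (\<Sum>i<dim H. x i * dlt H i j k) else 0)"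

definition cop_l :: "hopf_data \<Rightarrow> v2 \<Rightarrow> v3" where
  "cop_l H X = (\<lambda>a b c. if a < dim H \<and> b < dim H \<and> c < dim H then
      (\<Sum>i<dim H. X i c * dlt H i a b) else 0)"

definition cop_r :: "hopf_data \<Rightarrow> v2 \<Rightarrow> v3" where
  "cop_r H X = (\<lambda>a b c. if a < dim H \<and> b < dim H \<and> c < dim H then
      (\<Sum>i<dim H. X a i * dlt H i b c) else 0)"

definition cnt :: "hopf_data \<Rightarrow> v1 \<Rightarrow> complex" where
  "cnt H x = (\<Sum>i<dim H. eps H i * x i)"

definition cnt_l :: "hopf_data \<Rightarrow> v2 \<Rightarrow> v1" where
  "cnt_l H X = (\<lambda>k. if k < dim H then (\<Sum>i<dim H. eps H i * X i k) else 0)"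
definition cnt_r :: "hopf_data \<Rightarrow> v2 \<Rightarrow> v1" where
  "cnt_r H X = (\<lambda>k. if k < dim H then (\<Sum>i<dim H. X k i * eps H i) else 0)"

definition antip :: "hopf_data \<Rightarrow> v1 \<Rightarrow> v1" where
  "antip H x = (\<lambda>k. if k < dim H then (\<Sum>i<dim H. x i * ant H i k) else 0)"

definition mSl :: "hopf_data \<Rightarrow> v2 \<Rightarrow> v1" where
  "mSl H X = (\<lambda>k. \<Sum>j<dim H. \<Sum>l<dim H. X j l * mul H (antip H (bv j)) (bv l) k)"
definition mSr :: "hopf_data \<Rightarrow> v2 \<Rightarrow> v1" where
  "mSr H X = (\<lambda>k. \<Sum>j<dim H. \<Sum>l<dim H. X j l * mul H (bv j) (antip H (bv l)) k)"

definition is_hopf :: "hopf_data \<Rightarrow> bool" where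
  "is_hopf H \<longleftrightarrow>
     unt H \<in> V1 (dim H) \<and>
     (\<forall>x\<in>V1 (dim H). \<forall>y\<in>V1 (dim H). \<forall>z\<in>V1 (dim H). mul H (mul H x y) z = mul H x (mul H y z)) \<and>
     (\<forall>x\<in>V1 (dim H). mul H (unt H) x = x \<and> mul H x (unt H) = x) \<and>
     (\<forall>x\<in>V1 (dim H). cop_l H (cop H x) = cop_r H (cop H x)) \<and>
     (\<forall>x\<in>V1 (dim H). cnt_l H (cop H x) = x \<and> cnt_r H (cop H x) = x) \<and>
     (\<forall>x\<in>V1 (dim H). \<forall>y\<in>V1 (dim H). cop H (mul H x y) = mul2 H (cop H x) (cop H y)) \<and>
     cop H (unt H) = one2 H \<and>
     (\<forall>x\<in>V1 (dim H). \<forall>y\<in>V1 (dim H). cnt H (mul H x y) = cnt H x * cnt H y) \<and>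
     cnt H (unt H) = 1 \<and>
     (\<forall>x\<in>V1 (dim H). mSl H (cop H x) = scal (cnt H x) (unt H) \<and>
                       mSr H (cop H x) = scal (cnt H x) (unt H))"

definition lmap :: "nat \<Rightarrow> nat \<Rightarrow> (nat \<Rightarrow> nat \<Rightarrow> complex) \<Rightarrow> v1 \<Rightarrow> v1" where
  "lmap d1 d2 f x = (\<lambda>k. if k < d2 then (\<Sum>i<d1. f k i * x i) else 0)"
definition lmap2 :: "nat \<Rightarrow> nat \<Rightarrow> (nat \<Rightarrow> nat \<Rightarrow> complex) \<Rightarrow> v2 \<Rightarrow> v2" where
  "lmap2 d1 d2 f X = (\<lambda>k l. if k < d2 \<and> l < d2 then
      (\<Sum>i<d1. \<Sum>j<d1. f k i * f l j * X i j) else 0)"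
definition lmap3 :: "nat \<Rightarrow> nat \<Rightarrow> (nat \<Rightarrow> nat \<Rightarrow> complex) \<Rightarrow> v3 \<Rightarrow> v3" where
  "lmap3 d1 d2 f X = (\<lambda>k l r. if k < d2 \<and> l < d2 \<and> r < d2 then
      (\<Sum>i<d1. \<Sum>j<d1. \<Sum>t<d1. f k i * f l j * f r t * X i j t) else 0)"

definition hopf_hom :: "hopf_data \<Rightarrow> hopf_data \<Rightarrow> (nat \<Rightarrow> nat \<Rightarrow> complex) \<Rightarrow> bool" where
  "hopf_hom H B p \<longleftrightarrow>
     (\<forall>x\<in>V1 (dim H). \<forall>y\<in>V1 (dim H).
        lmap (dim H) (dim B) p (mul H x y) = mul B (lmap (dim H) (dim B) p x) (lmap (dim H) (dim B) p y)) \<and>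
     lmap (dim H) (dim B) p (unt H) = unt B \<and>
     (\<forall>x\<in>V1 (dim H). cop B (lmap (dim H) (dim B) p x) = lmap2 (dim H) (dim B) p (cop H x)) \<and>
     (\<forall>x\<in>V1 (dim H). cnt B (lmap (dim H) (dim B) p x) = cnt H x)"

definition grouplike :: "hopf_data \<Rightarrow> v1 \<Rightarrow> bool" where
  "grouplike H x \<longleftrightarrow> cop H x = tens x x \<and> cnt H x = 1"

definition pw :: "hopf_data \<Rightarrow> v1 \<Rightarrow> nat \<Rightarrow> v1" where
  "pw H x k = (mul H x ^^ k) (unt H)"

primrec mprod :: "hopf_data \<Rightarrow> (nat \<Rightarrow> v1) \<Rightarrow> nat \<Rightarrow> v1" where
  "mprod H f 0 = unt H"
| "mprod H f (Suc k) = mul H (mprod H f k) (f k)"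

inductive_set alg_gen :: "hopf_data \<Rightarrow> v1 set \<Rightarrow> v1 set" for H S where
  unit: "unt H \<in> alg_gen H S"
| gen: "x \<in> S \<Longrightarrow> x \<in> alg_gen H S"
| add: "x \<in> alg_gen H S \<Longrightarrow> y \<in> alg_gen H S \<Longrightarrow> (\<lambda>k. x k + y k) \<in> alg_gen H S"
| smul: "x \<in> alg_gen H S \<Longrightarrow> scal c x \<in> alg_gen H S"
| mult: "x \<in> alg_gen H S \<Longrightarrow> y \<in> alg_gen H S \<Longrightarrow> mul H x y \<in> alg_gen H S"

definition tens2 :: "v1 set \<Rightarrow> v2 set" where
  "tens2 A = {X. \<exists>xs. set xs \<subseteq> A \<times> A \<and>
       X = (\<lambda>i j. sum_list (map (\<lambda>(x,y). x i * y j) xs))}"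

definition Gm :: "nat \<Rightarrow> nat \<Rightarrow> (nat \<Rightarrow> nat) set" where
  "Gm n m = PiE {..<m} (\<lambda>_. {..<n^2})"

definition gmon :: "hopf_data \<Rightarrow> (nat \<Rightarrow> v1) \<Rightarrow> nat \<Rightarrow> (nat \<Rightarrow> nat) \<Rightarrow> v1" where
  "gmon H g m \<alpha> = mprod H (\<lambda>i. pw H (g i) (\<alpha> i)) m"

definition Kel :: "hopf_data \<Rightarrow> (nat \<Rightarrow> v1) \<Rightarrow> nat \<Rightarrow> (nat \<Rightarrow> nat \<Rightarrow> nat) \<Rightarrow> nat \<Rightarrow> v1" where
  "Kel H g m a i = mprod H (\<lambda>j. pw H (g j) (a i j)) m"

text \<open>primitive idempotents 1_beta of C[g_1..g_m], 1_beta g_i = q^(beta_i) 1_beta\<close>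
definition idem :: "hopf_data \<Rightarrow> complex \<Rightarrow> nat \<Rightarrow> nat \<Rightarrow> (nat \<Rightarrow> v1) \<Rightarrow> (nat \<Rightarrow> nat) \<Rightarrow> v1" where
  "idem H q n m g \<beta> = (\<lambda>k. (1 / of_nat (n^2)) ^ m *
      (\<Sum>\<alpha>\<in>Gm n m. (\<Prod>i<m. inverse q ^ (\<beta> i * \<alpha> i)) * gmon H g m \<alpha> k))"

definition cpow :: "complex \<Rightarrow> nat \<Rightarrow> nat \<Rightarrow> nat \<Rightarrow> nat \<Rightarrow> complex" where
  "cpow q n z y a = inverse q ^ (a * (z * (y - y mod n)))"

definition Jel :: "hopf_data \<Rightarrow> complex \<Rightarrow> nat \<Rightarrow> nat \<Rightarrow> (nat \<Rightarrow> nat \<Rightarrow> nat) \<Rightarrow> (nat \<Rightarrow> v1) \<Rightarrow> v2" where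
  "Jel H q n m a g = (\<lambda>k l. \<Sum>\<beta>\<in>Gm n m. \<Sum>\<gamma>\<in>Gm n m.
      (\<Prod>i<m. \<Prod>j<m. cpow q n (\<beta> i) (\<gamma> j) (a i j)) * idem H q n m g \<beta> k * idem H q n m g \<gamma> l)"

definition inv2 :: "hopf_data \<Rightarrow> v2 \<Rightarrow> v2" where
  "inv2 H X = (THE Y. (\<forall>i j. (i \<ge> dim H \<or> j \<ge> dim H) \<longrightarrow> Y i j = 0) \<and>
                       mul2 H X Y = one2 H \<and> mul2 H Y X = one2 H)"

definition copJ :: "hopf_data \<Rightarrow> v2 \<Rightarrow> v1 \<Rightarrow> v2" where
  "copJ H J x = mul2 H (mul2 H J (cop H x)) (inv2 H J)"
definition copJ_l :: "hopf_data \<Rightarrow> v2 \<Rightarrow> v2 \<Rightarrow> v3" where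
  "copJ_l H J X = mul3 H (mul3 H (rone H J) (cop_l H X)) (rone H (inv2 H J))"
definition copJ_r :: "hopf_data \<Rightarrow> v2 \<Rightarrow> v2 \<Rightarrow> v3" where
  "copJ_r H J X = mul3 H (mul3 H (lone H J) (cop_r H X)) (lone H (inv2 H J))"

definition PhiJ :: "hopf_data \<Rightarrow> v2 \<Rightarrow> v3" where
  "PhiJ H J = mul3 H (mul3 H (mul3 H (lone H J) (cop_r H J)) (cop_l H (inv2 H J))) (rone H (inv2 H J))"

text \<open>(A, Delta_J, Phi) is twist equivalent to a Hopf algebra: there is an invertible
F in A (x) A (inverse G in A (x) A) such that the twisted quasi-bialgebra
(A, F Delta_J(-) F^-1, (1 (x) F)(id (x) Delta_J)(F) Phi (Delta_J (x) id)(F^-1)(F^-1 (x) 1))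
is isomorphic to some Hopf algebra B (whose associator is 1 (x) 1 (x) 1).\<close>
definition twist_equiv_hopf :: "hopf_data \<Rightarrow> v1 set \<Rightarrow> v2 \<Rightarrow> v3 \<Rightarrow> bool" where
  "twist_equiv_hopf H A J \<Phi> \<longleftrightarrow>
    (\<exists>F G. F \<in> tens2 A \<and> G \<in> tens2 A \<and> mul2 H F G = one2 H \<and> mul2 H G F = one2 H \<and>
      (\<exists>B f. is_hopf B \<and>
         bij_betw (lmap (dim H) (dim B) f) A (V1 (dim B)) \<and>
         (\<forall>x\<in>A. \<forall>y\<in>A. lmap (dim H) (dim B) f (mul H x y) =
                        mul B (lmap (dim H) (dim B) f x) (lmap (dim H) (dim B) f y)) \<and>
         lmap (dim H) (dim B) f (unt H) = unt B \<and>
         (\<forall>x\<in>A. lmap2 (dim H) (dim B) f (mul2 H (mul2 H F (copJ H J x)) G)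
                   = cop B (lmap (dim H) (dim B) f x)) \<and>
         lmap3 (dim H) (dim B) f
           (mul3 H (mul3 H (mul3 H (mul3 H (lone H F) (copJ_r H J F)) \<Phi>) (copJ_l H J G)) (rone H G))
           = one3 B))"

end

theory Submission
  imports Defs "HOL-Library.Function_Algebras"
begin


definition V2 :: "nat \<Rightarrow> v2 set" where "V2 d = {X. \<forall>i j. (d \<le> i \<or> d \<le> j) \<longrightarrow> X i j = 0}"
definition V3 :: "nat \<Rightarrow> v3 set" where "V3 d = {X. \<forall>i j k. (d \<le> i \<or> d \<le> j \<or> d \<le> k) \<longrightarrow> X i j k = 0}"
definition tens3 :: "v1 \<Rightarrow> v1 \<Rightarrow> v1 \<Rightarrow> v3" where "tens3 x y z = (\<lambda>i j k. x i * y j * z k)"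
definition sc2 :: "complex \<Rightarrow> v2 \<Rightarrow> v2" where "sc2 c X = (\<lambda>i j. c * X i j)"
definition sc3 :: "complex \<Rightarrow> v3 \<Rightarrow> v3" where "sc3 c X = (\<lambda>i j k. c * X i j k)"
definition ltens :: "v1 \<Rightarrow> v2 \<Rightarrow> v3" where "ltens x Y = (\<lambda>a b c. x a * Y b c)"
definition rtens :: "v2 \<Rightarrow> v1 \<Rightarrow> v3" where "rtens Y x = (\<lambda>a b c. Y a b * x c)"

lemma sum_fun_app: "sum f K x = (\<Sum>k\<in>K. f k x)"
  by (induction K rule: infinite_finite_induct) auto

lemma add_sum:
  fixes f :: "'a::comm_monoid_add \<Rightarrow> 'b::comm_monoid_add"
  assumes "\<And>x y. f (x + y) = f x + f y" "f 0 = 0"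
  shows "f (sum g K) = (\<Sum>k\<in>K. f (g k))"
  by (induction K rule: infinite_finite_induct) (auto simp: assms)

lemma add_zero:
  fixes f :: "'a::monoid_add \<Rightarrow> 'b::cancel_comm_monoid_add"
  assumes "\<And>x y. f (x + y) = f x + f y" shows "f 0 = 0"
proof -
  have "f 0 = f 0 + f 0" using assms[of 0 0] by simp
  then show ?thesis by (metis add_cancel_right_right)
qed

lemma sum4: "(\<Sum>i\<in>A. \<Sum>j\<in>B. \<Sum>i'\<in>A'. \<Sum>j'\<in>B'. f i i' * (g j j' :: complex)) =
   (\<Sum>i\<in>A. \<Sum>i'\<in>A'. f i i') * (\<Sum>j\<in>B. \<Sum>j'\<in>B'. g j j')"
  by (simp only: sum_product)

lemma sum6: "(\<Sum>i\<in>A. \<Sum>j\<in>B. \<Sum>t\<in>C. \<Sum>i'\<in>A'. \<Sum>j'\<in>B'. \<Sum>t'\<in>C'. f i i' * g j j' * (h t t' :: complex)) =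
   (\<Sum>i\<in>A. \<Sum>i'\<in>A'. f i i') * (\<Sum>j\<in>B. \<Sum>j'\<in>B'. g j j') * (\<Sum>t\<in>C. \<Sum>t'\<in>C'. h t t')"
proof -
  have "(\<Sum>i\<in>A. \<Sum>j\<in>B. \<Sum>t\<in>C. \<Sum>i'\<in>A'. \<Sum>j'\<in>B'. \<Sum>t'\<in>C'. f i i' * g j j' * h t t') =
        (\<Sum>i\<in>A. \<Sum>j\<in>B. \<Sum>i'\<in>A'. \<Sum>j'\<in>B'. \<Sum>t\<in>C. \<Sum>t'\<in>C'. f i i' * g j j' * h t t')"
  proof (intro sum.cong refl)
    fix i j
    have "(\<Sum>t\<in>C. \<Sum>i'\<in>A'. \<Sum>j'\<in>B'. \<Sum>t'\<in>C'. f i i' * g j j' * h t t') =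
          (\<Sum>i'\<in>A'. \<Sum>t\<in>C. \<Sum>j'\<in>B'. \<Sum>t'\<in>C'. f i i' * g j j' * h t t')" by (rule sum.swap)
    also have "\<dots> = (\<Sum>i'\<in>A'. \<Sum>j'\<in>B'. \<Sum>t\<in>C. \<Sum>t'\<in>C'. f i i' * g j j' * h t t')"
      by (intro sum.cong refl sum.swap)
    finally show "(\<Sum>t\<in>C. \<Sum>i'\<in>A'. \<Sum>j'\<in>B'. \<Sum>t'\<in>C'. f i i' * g j j' * h t t') =
          (\<Sum>i'\<in>A'. \<Sum>j'\<in>B'. \<Sum>t\<in>C. \<Sum>t'\<in>C'. f i i' * g j j' * h t t')" .
  qed
  also have "\<dots> = (\<Sum>i\<in>A. \<Sum>j\<in>B. \<Sum>i'\<in>A'. \<Sum>j'\<in>B'. (f i i' * g j j') * (\<Sum>t\<in>C. \<Sum>t'\<in>C'. h t t'))"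
    by (simp add: sum_distrib_left)
  also have "\<dots> = (\<Sum>i\<in>A. \<Sum>j\<in>B. \<Sum>i'\<in>A'. \<Sum>j'\<in>B'. f i i' * g j j') * (\<Sum>t\<in>C. \<Sum>t'\<in>C'. h t t')"
    by (simp add: sum_distrib_right)
  finally show ?thesis by (simp only: sum4)
qed

lemma sum_bv: "(\<Sum>i<d. F i * bv i k) = (if k < d then F k else (0::complex))"
proof -
  have "(\<Sum>i<d. F i * bv i k) = (\<Sum>i<d. if k = i then F i else 0)"
    by (intro sum.cong) (auto simp: bv_def)
  then show ?thesis by (simp add: sum.delta')
qed

lemma expand1: "x \<in> V1 d \<Longrightarrow> x = (\<Sum>i<d. scal (x i) (bv i))"
  by (auto simp: fun_eq_iff sum_fun_app scal_def sum_bv V1_def)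

lemma expand2: "X \<in> V2 d \<Longrightarrow> X = (\<Sum>i<d. \<Sum>j<d. sc2 (X i j) (tens (bv i) (bv j)))"
proof (rule ext, rule ext)
  fix k l assume X: "X \<in> V2 d"
  have "(\<Sum>i<d. \<Sum>j<d. sc2 (X i j) (tens (bv i) (bv j))) k l = (\<Sum>i<d. (\<Sum>j<d. (X i j * bv i k) * bv j l))"
    by (simp add: sum_fun_app sc2_def tens_def mult.assoc)
  also have "\<dots> = (\<Sum>i<d. (if l < d then X i l * bv i k else 0))"
    by (simp only: sum_bv)
  also have "\<dots> = (if l < d then (\<Sum>i<d. X i l * bv i k) else 0)" by simp
  also have "\<dots> = X k l" using X by (simp add: sum_bv V2_def)
  finally show "X k l = (\<Sum>i<d. \<Sum>j<d. sc2 (X i j) (tens (bv i) (bv j))) k l" by simp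
qed

lemma expand3: "X \<in> V3 d \<Longrightarrow> X = (\<Sum>i<d. \<Sum>j<d. \<Sum>k<d. sc3 (X i j k) (tens3 (bv i) (bv j) (bv k)))"
proof (rule ext, rule ext, rule ext)
  fix a b c assume X: "X \<in> V3 d"
  have "(\<Sum>i<d. \<Sum>j<d. \<Sum>k<d. sc3 (X i j k) (tens3 (bv i) (bv j) (bv k))) a b c =
     (\<Sum>i<d. (\<Sum>j<d. (\<Sum>k<d. (X i j k * bv i a * bv j b) * bv k c)))"
    by (simp add: sum_fun_app sc3_def tens3_def mult.assoc)
  also have "\<dots> = (\<Sum>i<d. (\<Sum>j<d. (if c < d then (X i j c * bv i a) * bv j b else 0)))"
    by (simp only: sum_bv)
  also have "\<dots> = (if c < d then (\<Sum>i<d. (\<Sum>j<d. (X i j c * bv i a) * bv j b)) else 0)" by simp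
  also have "\<dots> = (if c < d then (\<Sum>i<d. (if b < d then X i b c * bv i a else 0)) else 0)"
    by (simp only: sum_bv)
  also have "\<dots> = (if c < d then (if b < d then (\<Sum>i<d. X i b c * bv i a) else 0) else 0)" by simp
  also have "\<dots> = X a b c" using X by (simp add: sum_bv V3_def)
  finally show "X a b c = (\<Sum>i<d. \<Sum>j<d. \<Sum>k<d. sc3 (X i j k) (tens3 (bv i) (bv j) (bv k))) a b c" by simp
qed

lemma lin_ext1:
  fixes f f' :: "v1 \<Rightarrow> 'b::ab_group_add"
  assumes X: "X \<in> V1 d"
    and fa: "\<And>X Y. f (X + Y) = f X + f Y" and fs: "\<And>c X. f (scal c X) = s c (f X)"
    and fa': "\<And>X Y. f' (X + Y) = f' X + f' Y" and fs': "\<And>c X. f' (scal c X) = s c (f' X)"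
    and basis: "\<And>i. i < d \<Longrightarrow> f (bv i) = f' (bv i)"
  shows "f X = f' X"
proof -
  have z: "f 0 = 0" "f' 0 = 0" using add_zero[of f, OF fa] add_zero[of f', OF fa'] by auto
  have "f X = f (\<Sum>i<d. scal (X i) (bv i))" using expand1[OF X] by simp
  also have "\<dots> = (\<Sum>i<d. s (X i) (f (bv i)))"
    by (simp add: add_sum[of f, OF fa z(1)] fs)
  also have "\<dots> = (\<Sum>i<d. s (X i) (f' (bv i)))" by (simp add: basis)
  also have "\<dots> = f' (\<Sum>i<d. scal (X i) (bv i))"
    by (simp add: add_sum[of f', OF fa' z(2)] fs')
  also have "\<dots> = f' X" using expand1[OF X] by simp
  finally show ?thesis .
qed

lemma lin_ext2:
  fixes f f' :: "v2 \<Rightarrow> 'b::ab_group_add"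
  assumes X: "X \<in> V2 d"
    and fa: "\<And>X Y. f (X + Y) = f X + f Y" and fs: "\<And>c X. f (sc2 c X) = s c (f X)"
    and fa': "\<And>X Y. f' (X + Y) = f' X + f' Y" and fs': "\<And>c X. f' (sc2 c X) = s c (f' X)"
    and basis: "\<And>i j. i < d \<Longrightarrow> j < d \<Longrightarrow> f (tens (bv i) (bv j)) = f' (tens (bv i) (bv j))"
  shows "f X = f' X"
proof -
  have z: "f 0 = 0" "f' 0 = 0" using add_zero[of f, OF fa] add_zero[of f', OF fa'] by auto
  have "f X = f (\<Sum>i<d. \<Sum>j<d. sc2 (X i j) (tens (bv i) (bv j)))" using expand2[OF X] by simp
  also have "\<dots> = (\<Sum>i<d. \<Sum>j<d. s (X i j) (f (tens (bv i) (bv j))))"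
    by (simp add: add_sum[of f, OF fa z(1)] fs)
  also have "\<dots> = (\<Sum>i<d. \<Sum>j<d. s (X i j) (f' (tens (bv i) (bv j))))" by (simp add: basis)
  also have "\<dots> = f' (\<Sum>i<d. \<Sum>j<d. sc2 (X i j) (tens (bv i) (bv j)))"
    by (simp add: add_sum[of f', OF fa' z(2)] fs')
  also have "\<dots> = f' X" using expand2[OF X] by simp
  finally show ?thesis .
qed

lemma lin_ext3:
  fixes f f' :: "v3 \<Rightarrow> 'b::ab_group_add"
  assumes X: "X \<in> V3 d"
    and fa: "\<And>X Y. f (X + Y) = f X + f Y" and fs: "\<And>c X. f (sc3 c X) = s c (f X)"
    and fa': "\<And>X Y. f' (X + Y) = f' X + f' Y" and fs': "\<And>c X. f' (sc3 c X) = s c (f' X)"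
    and basis: "\<And>i j k. i < d \<Longrightarrow> j < d \<Longrightarrow> k < d \<Longrightarrow>
       f (tens3 (bv i) (bv j) (bv k)) = f' (tens3 (bv i) (bv j) (bv k))"
  shows "f X = f' X"
proof -
  have z: "f 0 = 0" "f' 0 = 0" using add_zero[of f, OF fa] add_zero[of f', OF fa'] by auto
  have "f X = f (\<Sum>i<d. \<Sum>j<d. \<Sum>k<d. sc3 (X i j k) (tens3 (bv i) (bv j) (bv k)))" using expand3[OF X] by simp
  also have "\<dots> = (\<Sum>i<d. \<Sum>j<d. \<Sum>k<d. s (X i j k) (f (tens3 (bv i) (bv j) (bv k))))"
    by (simp add: add_sum[of f, OF fa z(1)] fs)
  also have "\<dots> = (\<Sum>i<d. \<Sum>j<d. \<Sum>k<d. s (X i j k) (f' (tens3 (bv i) (bv j) (bv k))))" by (simp add: basis)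
  also have "\<dots> = f' (\<Sum>i<d. \<Sum>j<d. \<Sum>k<d. sc3 (X i j k) (tens3 (bv i) (bv j) (bv k)))"
    by (simp add: add_sum[of f', OF fa' z(2)] fs')
  also have "\<dots> = f' X" using expand3[OF X] by simp
  finally show ?thesis .
qed


lemma V1_mem: "x \<in> V1 d \<longleftrightarrow> (\<forall>i\<ge>d. x i = 0)" by (simp add: V1_def)
lemma V2_mem: "X \<in> V2 d \<longleftrightarrow> (\<forall>i j. (d \<le> i \<or> d \<le> j) \<longrightarrow> X i j = 0)" by (simp add: V2_def)
lemma V3_mem: "X \<in> V3 d \<longleftrightarrow> (\<forall>i j k. (d \<le> i \<or> d \<le> j \<or> d \<le> k) \<longrightarrow> X i j k = 0)" by (simp add: V3_def)

lemma bv_V1: "i < d \<Longrightarrow> bv i \<in> V1 d" by (simp add: V1_def bv_def)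
lemma V1_add: "x \<in> V1 d \<Longrightarrow> y \<in> V1 d \<Longrightarrow> x + y \<in> V1 d" by (simp add: V1_def)
lemma V1_scal: "x \<in> V1 d \<Longrightarrow> scal c x \<in> V1 d" by (simp add: V1_def scal_def)
lemma V1_zero: "0 \<in> V1 d" by (simp add: V1_def)
lemma V1_sum: "(\<And>k. k \<in> K \<Longrightarrow> f k \<in> V1 d) \<Longrightarrow> sum f K \<in> V1 d"
  by (induction K rule: infinite_finite_induct) (auto simp: V1_zero V1_add)
lemma V2_add: "x \<in> V2 d \<Longrightarrow> y \<in> V2 d \<Longrightarrow> x + y \<in> V2 d" by (simp add: V2_def)
lemma V2_sc2: "x \<in> V2 d \<Longrightarrow> sc2 c x \<in> V2 d" by (simp add: V2_def sc2_def)
lemma V2_zero: "0 \<in> V2 d" by (simp add: V2_def)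
lemma V2_sum: "(\<And>k. k \<in> K \<Longrightarrow> f k \<in> V2 d) \<Longrightarrow> sum f K \<in> V2 d"
  by (induction K rule: infinite_finite_induct) (auto simp: V2_zero V2_add)
lemma V3_add: "x \<in> V3 d \<Longrightarrow> y \<in> V3 d \<Longrightarrow> x + y \<in> V3 d" by (simp add: V3_def)
lemma V3_sc3: "x \<in> V3 d \<Longrightarrow> sc3 c x \<in> V3 d" by (simp add: V3_def sc3_def)
lemma V3_zero: "0 \<in> V3 d" by (simp add: V3_def)
lemma V3_sum: "(\<And>k. k \<in> K \<Longrightarrow> f k \<in> V3 d) \<Longrightarrow> sum f K \<in> V3 d"
  by (induction K rule: infinite_finite_induct) (auto simp: V3_zero V3_add)

lemma tens_V2: "x \<in> V1 d \<Longrightarrow> y \<in> V1 d \<Longrightarrow> tens x y \<in> V2 d" by (auto simp: V1_def V2_def tens_def)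
lemma tens3_V3: "x \<in> V1 d \<Longrightarrow> y \<in> V1 d \<Longrightarrow> z \<in> V1 d \<Longrightarrow> tens3 x y z \<in> V3 d"
  by (auto simp: V1_def V3_def tens3_def)
lemma ltens_V3: "x \<in> V1 d \<Longrightarrow> Y \<in> V2 d \<Longrightarrow> ltens x Y \<in> V3 d" by (auto simp: V1_def V2_def V3_def ltens_def)
lemma rtens_V3: "Y \<in> V2 d \<Longrightarrow> x \<in> V1 d \<Longrightarrow> rtens Y x \<in> V3 d" by (auto simp: V1_def V2_def V3_def rtens_def)

lemma scal_add: "scal c (x + y) = scal c x + scal c y" by (simp add: scal_def fun_eq_iff algebra_simps)
lemma scal_add2: "scal (c + c') x = scal c x + scal c' x" by (simp add: scal_def fun_eq_iff algebra_simps)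
lemma scal_scal: "scal c (scal c' x) = scal (c * c') x" by (simp add: scal_def fun_eq_iff)
lemma scal_one[simp]: "scal 1 x = x" by (simp add: scal_def)
lemma scal_zero[simp]: "scal 0 x = 0" "scal c 0 = 0" by (simp_all add: scal_def fun_eq_iff)
lemma scal_sum: "scal c (sum f K) = (\<Sum>k\<in>K. scal c (f k))"
  by (rule add_sum[of "scal c"]) (simp_all add: scal_add)
lemma scal_sum2: "scal (sum f K) x = (\<Sum>k\<in>K. scal (f k) x)"
  by (induction K rule: infinite_finite_induct) (simp_all add: scal_add2)
lemma sc2_add: "sc2 c (x + y) = sc2 c x + sc2 c y" by (simp add: sc2_def fun_eq_iff algebra_simps)
lemma sc2_add2: "sc2 (c + c') x = sc2 c x + sc2 c' x" by (simp add: sc2_def fun_eq_iff algebra_simps)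
lemma sc2_sc2: "sc2 c (sc2 c' x) = sc2 (c * c') x" by (simp add: sc2_def fun_eq_iff)
lemma sc2_one[simp]: "sc2 1 x = x" by (simp add: sc2_def)
lemma sc2_zero[simp]: "sc2 0 x = 0" "sc2 c 0 = 0" by (simp_all add: sc2_def fun_eq_iff)
lemma sc2_sum: "sc2 c (sum f K) = (\<Sum>k\<in>K. sc2 c (f k))"
  by (rule add_sum[of "sc2 c"]) (simp_all add: sc2_add)
lemma sc3_add: "sc3 c (x + y) = sc3 c x + sc3 c y" by (simp add: sc3_def fun_eq_iff algebra_simps)
lemma sc3_sc3: "sc3 c (sc3 c' x) = sc3 (c * c') x" by (simp add: sc3_def fun_eq_iff)
lemma sc3_one[simp]: "sc3 1 x = x" by (simp add: sc3_def)
lemma sc3_zero[simp]: "sc3 0 x = 0" "sc3 c 0 = 0" by (simp_all add: sc3_def fun_eq_iff)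
lemma sc3_sum: "sc3 c (sum f K) = (\<Sum>k\<in>K. sc3 c (f k))"
  by (rule add_sum[of "sc3 c"]) (simp_all add: sc3_add)

lemma tens_add_l: "tens (x + y) z = tens x z + tens y z" by (simp add: tens_def fun_eq_iff algebra_simps)
lemma tens_add_r: "tens x (y + z) = tens x y + tens x z" by (simp add: tens_def fun_eq_iff algebra_simps)
lemma tens_scal_l: "tens (scal c x) y = sc2 c (tens x y)" by (simp add: tens_def sc2_def scal_def fun_eq_iff)
lemma tens_scal_r: "tens x (scal c y) = sc2 c (tens x y)" by (simp add: tens_def sc2_def scal_def fun_eq_iff)
lemma tens_zero[simp]: "tens 0 y = 0" "tens x 0 = 0" by (simp_all add: tens_def fun_eq_iff)
lemma tens_sum_l: "tens (sum f K) y = (\<Sum>k\<in>K. tens (f k) y)"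
  by (rule add_sum[of "\<lambda>x. tens x y"]) (simp_all add: tens_add_l)
lemma tens_sum_r: "tens x (sum f K) = (\<Sum>k\<in>K. tens x (f k))"
  by (rule add_sum[of "\<lambda>y. tens x y"]) (simp_all add: tens_add_r)

lemma tens3_add_1: "tens3 (x + x') y z = tens3 x y z + tens3 x' y z" by (simp add: tens3_def fun_eq_iff algebra_simps)
lemma tens3_add_2: "tens3 x (y + y') z = tens3 x y z + tens3 x y' z" by (simp add: tens3_def fun_eq_iff algebra_simps)
lemma tens3_add_3: "tens3 x y (z + z') = tens3 x y z + tens3 x y z'" by (simp add: tens3_def fun_eq_iff algebra_simps)
lemma tens3_scal_1: "tens3 (scal c x) y z = sc3 c (tens3 x y z)" by (simp add: tens3_def sc3_def scal_def fun_eq_iff)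
lemma tens3_scal_2: "tens3 x (scal c y) z = sc3 c (tens3 x y z)" by (simp add: tens3_def sc3_def scal_def fun_eq_iff)
lemma tens3_scal_3: "tens3 x y (scal c z) = sc3 c (tens3 x y z)" by (simp add: tens3_def sc3_def scal_def fun_eq_iff)
lemma tens3_zero[simp]: "tens3 0 y z = 0" "tens3 x 0 z = 0" "tens3 x y 0 = 0" by (simp_all add: tens3_def fun_eq_iff)
lemma tens3_sum_1: "tens3 (sum f K) y z = (\<Sum>k\<in>K. tens3 (f k) y z)"
  by (rule add_sum[of "\<lambda>x. tens3 x y z"]) (simp_all add: tens3_add_1)
lemma tens3_sum_2: "tens3 x (sum f K) z = (\<Sum>k\<in>K. tens3 x (f k) z)"
  by (rule add_sum[of "\<lambda>y. tens3 x y z"]) (simp_all add: tens3_add_2)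
lemma tens3_sum_3: "tens3 x y (sum f K) = (\<Sum>k\<in>K. tens3 x y (f k))"
  by (rule add_sum[of "\<lambda>z. tens3 x y z"]) (simp_all add: tens3_add_3)

lemma ltens_tens: "ltens x (tens y z) = tens3 x y z" by (simp add: ltens_def tens_def tens3_def fun_eq_iff mult.assoc)
lemma rtens_tens: "rtens (tens x y) z = tens3 x y z" by (simp add: rtens_def tens_def tens3_def fun_eq_iff)
lemma ltens_add_r: "ltens x (Y + Z) = ltens x Y + ltens x Z" by (simp add: ltens_def fun_eq_iff algebra_simps)
lemma ltens_sc2_r: "ltens x (sc2 c Y) = sc3 c (ltens x Y)" by (simp add: ltens_def sc2_def sc3_def fun_eq_iff)
lemma ltens_add_l: "ltens (x + y) Z = ltens x Z + ltens y Z" by (simp add: ltens_def fun_eq_iff algebra_simps)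
lemma ltens_scal_l: "ltens (scal c x) Y = sc3 c (ltens x Y)" by (simp add: ltens_def scal_def sc3_def fun_eq_iff)
lemma rtens_add_l: "rtens (Y + Z) x = rtens Y x + rtens Z x" by (simp add: rtens_def fun_eq_iff algebra_simps)
lemma rtens_sc2_l: "rtens (sc2 c Y) x = sc3 c (rtens Y x)" by (simp add: rtens_def sc2_def sc3_def fun_eq_iff)
lemma rtens_add_r: "rtens Z (x + y) = rtens Z x + rtens Z y" by (simp add: rtens_def fun_eq_iff algebra_simps)
lemma rtens_scal_r: "rtens Y (scal c x) = sc3 c (rtens Y x)" by (simp add: rtens_def scal_def sc3_def fun_eq_iff)
lemma ltens_zero[simp]: "ltens x 0 = 0" "ltens 0 Y = 0" by (simp_all add: ltens_def fun_eq_iff)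
lemma rtens_zero[simp]: "rtens 0 x = 0" "rtens Y 0 = 0" by (simp_all add: rtens_def fun_eq_iff)

lemma lone_eq: "lone H X = ltens (unt H) X" by (simp add: lone_def ltens_def)
lemma rone_eq: "rone H X = rtens X (unt H)" by (simp add: rone_def rtens_def)
lemma one2_eq: "one2 H = tens (unt H) (unt H)" by (simp add: one2_def tens_def)
lemma one3_eq: "one3 H = tens3 (unt H) (unt H) (unt H)" by (simp add: one3_def tens3_def)

lemma mul_V1: "mul H x y \<in> V1 (dim H)" by (simp add: mul_def V1_def)
lemma mul_add_l: "mul H (x + y) z = mul H x z + mul H y z"
  by (simp add: mul_def fun_eq_iff algebra_simps sum.distrib)
lemma mul_add_r: "mul H x (y + z) = mul H x y + mul H x z"
  by (simp add: mul_def fun_eq_iff algebra_simps sum.distrib)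
lemma mul_scal_l: "mul H (scal c x) y = scal c (mul H x y)"
  by (simp add: mul_def scal_def fun_eq_iff algebra_simps sum_distrib_left)
lemma mul_scal_r: "mul H x (scal c y) = scal c (mul H x y)"
  by (simp add: mul_def scal_def fun_eq_iff algebra_simps sum_distrib_left)
lemma mul_zero[simp]: "mul H 0 y = 0" "mul H x 0 = 0" by (simp_all add: mul_def fun_eq_iff)
lemma mul_sum_l: "mul H (sum f K) y = (\<Sum>k\<in>K. mul H (f k) y)"
  by (rule add_sum[of "\<lambda>x. mul H x y"]) (simp_all add: mul_add_l)
lemma mul_sum_r: "mul H x (sum f K) = (\<Sum>k\<in>K. mul H x (f k))"
  by (rule add_sum[of "\<lambda>y. mul H x y"]) (simp_all add: mul_add_r)

lemma mul2_V2: "mul2 H X Y \<in> V2 (dim H)" by (simp add: mul2_def V2_def)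
lemma mul2_add_l: "mul2 H (X + Y) Z = mul2 H X Z + mul2 H Y Z"
  by (simp add: mul2_def fun_eq_iff algebra_simps sum.distrib)
lemma mul2_add_r: "mul2 H X (Y + Z) = mul2 H X Y + mul2 H X Z"
  by (simp add: mul2_def fun_eq_iff algebra_simps sum.distrib)
lemma mul2_sc2_l: "mul2 H (sc2 c X) Y = sc2 c (mul2 H X Y)"
  by (simp add: mul2_def sc2_def fun_eq_iff algebra_simps sum_distrib_left)
lemma mul2_sc2_r: "mul2 H X (sc2 c Y) = sc2 c (mul2 H X Y)"
  by (simp add: mul2_def sc2_def fun_eq_iff algebra_simps sum_distrib_left)
lemma mul2_zero[simp]: "mul2 H 0 Y = 0" "mul2 H X 0 = 0" by (simp_all add: mul2_def fun_eq_iff)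
lemma mul2_sum_l: "mul2 H (sum f K) y = (\<Sum>k\<in>K. mul2 H (f k) y)"
  by (rule add_sum[of "\<lambda>x. mul2 H x y"]) (simp_all add: mul2_add_l)
lemma mul2_sum_r: "mul2 H x (sum f K) = (\<Sum>k\<in>K. mul2 H x (f k))"
  by (rule add_sum[of "\<lambda>y. mul2 H x y"]) (simp_all add: mul2_add_r)

lemma mul2_tens: "mul2 H (tens x y) (tens x' y') = tens (mul H x x') (mul H y y')"
proof (rule ext, rule ext)
  fix k l
  let ?d = "dim H"
  have "(\<Sum>i<?d. \<Sum>j<?d. \<Sum>i'<?d. \<Sum>j'<?d. x i * y j * (x' i' * y' j') * mu H i i' k * mu H j j' l)
     = (\<Sum>i<?d. \<Sum>j<?d. \<Sum>i'<?d. \<Sum>j'<?d. (x i * x' i' * mu H i i' k) * (y j * y' j' * mu H j j' l))"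
    by (simp add: mult_ac)
  also have "\<dots> = (\<Sum>i<?d. \<Sum>i'<?d. x i * x' i' * mu H i i' k) * (\<Sum>j<?d. \<Sum>j'<?d. y j * y' j' * mu H j j' l)"
    by (rule sum4)
  finally show "mul2 H (tens x y) (tens x' y') k l = tens (mul H x x') (mul H y y') k l"
    by (simp add: mul2_def tens_def mul_def sum_distrib_left sum_distrib_right mult_ac)
qed

lemma mul3_V3: "mul3 H X Y \<in> V3 (dim H)" by (simp add: mul3_def V3_def)
lemma mul3_add_l: "mul3 H (X + Y) Z = mul3 H X Z + mul3 H Y Z"
  by (simp add: mul3_def fun_eq_iff algebra_simps sum.distrib)
lemma mul3_add_r: "mul3 H X (Y + Z) = mul3 H X Y + mul3 H X Z"
  by (simp add: mul3_def fun_eq_iff algebra_simps sum.distrib)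
lemma mul3_sc3_l: "mul3 H (sc3 c X) Y = sc3 c (mul3 H X Y)"
  by (simp add: mul3_def sc3_def fun_eq_iff algebra_simps sum_distrib_left)
lemma mul3_sc3_r: "mul3 H X (sc3 c Y) = sc3 c (mul3 H X Y)"
  by (simp add: mul3_def sc3_def fun_eq_iff algebra_simps sum_distrib_left)
lemma mul3_zero[simp]: "mul3 H 0 Y = 0" "mul3 H X 0 = 0" by (simp_all add: mul3_def fun_eq_iff)
lemma mul3_sum_l: "mul3 H (sum f K) y = (\<Sum>k\<in>K. mul3 H (f k) y)"
  by (rule add_sum[of "\<lambda>x. mul3 H x y"]) (simp_all add: mul3_add_l)
lemma mul3_sum_r: "mul3 H x (sum f K) = (\<Sum>k\<in>K. mul3 H x (f k))"
  by (rule add_sum[of "\<lambda>y. mul3 H x y"]) (simp_all add: mul3_add_r)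

lemma mul3_tens3: "mul3 H (tens3 x y z) (tens3 x' y' z') = tens3 (mul H x x') (mul H y y') (mul H z z')"
proof (rule ext, rule ext, rule ext)
  fix k l r
  let ?d = "dim H"
  have "(\<Sum>i<?d. \<Sum>j<?d. \<Sum>t<?d. \<Sum>i'<?d. \<Sum>j'<?d. \<Sum>t'<?d.
          x i * y j * z t * (x' i' * y' j' * z' t') * mu H i i' k * mu H j j' l * mu H t t' r)
     = (\<Sum>i<?d. \<Sum>j<?d. \<Sum>t<?d. \<Sum>i'<?d. \<Sum>j'<?d. \<Sum>t'<?d.
          (x i * x' i' * mu H i i' k) * (y j * y' j' * mu H j j' l) * (z t * z' t' * mu H t t' r))"
    by (simp add: mult_ac)
  also have "\<dots> = (\<Sum>i<?d. \<Sum>i'<?d. x i * x' i' * mu H i i' k) * (\<Sum>j<?d. \<Sum>j'<?d. y j * y' j' * mu H j j' l)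
       * (\<Sum>t<?d. \<Sum>t'<?d. z t * z' t' * mu H t t' r)"
    by (rule sum6)
  finally have "(\<Sum>i<?d. \<Sum>j<?d. \<Sum>t<?d. \<Sum>i'<?d. \<Sum>j'<?d. \<Sum>t'<?d.
          x i * y j * z t * (x' i' * y' j' * z' t') * mu H i i' k * mu H j j' l * mu H t t' r) =
      (\<Sum>i<?d. \<Sum>i'<?d. x i * x' i' * mu H i i' k) * (\<Sum>j<?d. \<Sum>j'<?d. y j * y' j' * mu H j j' l)
       * (\<Sum>t<?d. \<Sum>t'<?d. z t * z' t' * mu H t t' r)" .
  then show "mul3 H (tens3 x y z) (tens3 x' y' z') k l r = tens3 (mul H x x') (mul H y y') (mul H z z') k l r"
    by (simp add: mul3_def tens3_def mul_def)
qed

lemma cop_V2: "cop H x \<in> V2 (dim H)" by (simp add: cop_def V2_def)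
lemma cop_add: "cop H (x + y) = cop H x + cop H y"
  by (simp add: cop_def fun_eq_iff algebra_simps sum.distrib)
lemma cop_scal: "cop H (scal c x) = sc2 c (cop H x)"
  by (simp add: cop_def scal_def sc2_def fun_eq_iff algebra_simps sum_distrib_left)
lemma cop_zero[simp]: "cop H 0 = 0" by (simp add: cop_def fun_eq_iff)
lemma cop_sum: "cop H (sum f K) = (\<Sum>k\<in>K. cop H (f k))"
  by (rule add_sum[of "cop H"]) (simp_all add: cop_add)

lemma cop_r_add: "cop_r H (X + Y) = cop_r H X + cop_r H Y"
  by (simp add: cop_r_def fun_eq_iff algebra_simps sum.distrib)
lemma cop_r_sc2: "cop_r H (sc2 c X) = sc3 c (cop_r H X)"
  by (simp add: cop_r_def sc2_def sc3_def fun_eq_iff algebra_simps sum_distrib_left)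
lemma cop_l_add: "cop_l H (X + Y) = cop_l H X + cop_l H Y"
  by (simp add: cop_l_def fun_eq_iff algebra_simps sum.distrib)
lemma cop_l_sc2: "cop_l H (sc2 c X) = sc3 c (cop_l H X)"
  by (simp add: cop_l_def sc2_def sc3_def fun_eq_iff algebra_simps sum_distrib_left)
lemma cop_r_V3: "cop_r H X \<in> V3 (dim H)" by (simp add: cop_r_def V3_def)
lemma cop_l_V3: "cop_l H X \<in> V3 (dim H)" by (simp add: cop_l_def V3_def)

lemma cop_r_tens: "x \<in> V1 (dim H) \<Longrightarrow> cop_r H (tens x y) = ltens x (cop H y)"
  by (auto simp: cop_r_def ltens_def tens_def cop_def fun_eq_iff V1_def sum_distrib_left mult_ac)
lemma cop_l_tens: "y \<in> V1 (dim H) \<Longrightarrow> cop_l H (tens x y) = rtens (cop H x) y"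
  by (auto simp: cop_l_def rtens_def tens_def cop_def fun_eq_iff V1_def sum_distrib_left sum_distrib_right mult_ac)

lemma lmap_V1: "lmap d1 d2 f x \<in> V1 d2" by (simp add: lmap_def V1_def)
lemma lmap_add: "lmap d1 d2 f (x + y) = lmap d1 d2 f x + lmap d1 d2 f y"
  by (simp add: lmap_def fun_eq_iff algebra_simps sum.distrib)
lemma lmap_scal: "lmap d1 d2 f (scal c x) = scal c (lmap d1 d2 f x)"
  by (simp add: lmap_def scal_def fun_eq_iff algebra_simps sum_distrib_left)
lemma lmap_zero[simp]: "lmap d1 d2 f 0 = 0" by (simp add: lmap_def fun_eq_iff)
lemma lmap_sum: "lmap d1 d2 f (sum g K) = (\<Sum>k\<in>K. lmap d1 d2 f (g k))"
  by (rule add_sum[of "lmap d1 d2 f"]) (simp_all add: lmap_add)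
lemma lmap2_add: "lmap2 d1 d2 f (x + y) = lmap2 d1 d2 f x + lmap2 d1 d2 f y"
  by (simp add: lmap2_def fun_eq_iff algebra_simps sum.distrib)
lemma lmap2_sc2: "lmap2 d1 d2 f (sc2 c x) = sc2 c (lmap2 d1 d2 f x)"
  by (simp add: lmap2_def sc2_def fun_eq_iff algebra_simps sum_distrib_left)
lemma lmap2_zero[simp]: "lmap2 d1 d2 f 0 = 0" by (simp add: lmap2_def fun_eq_iff)
lemma lmap2_sum: "lmap2 d1 d2 f (sum g K) = (\<Sum>k\<in>K. lmap2 d1 d2 f (g k))"
  by (rule add_sum[of "lmap2 d1 d2 f"]) (simp_all add: lmap2_add)
lemma lmap3_add: "lmap3 d1 d2 f (x + y) = lmap3 d1 d2 f x + lmap3 d1 d2 f y"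
  by (simp add: lmap3_def fun_eq_iff algebra_simps sum.distrib)
lemma lmap3_sc3: "lmap3 d1 d2 f (sc3 c x) = sc3 c (lmap3 d1 d2 f x)"
  by (simp add: lmap3_def sc3_def fun_eq_iff algebra_simps sum_distrib_left)
lemma lmap3_zero[simp]: "lmap3 d1 d2 f 0 = 0" by (simp add: lmap3_def fun_eq_iff)
lemma lmap3_sum: "lmap3 d1 d2 f (sum g K) = (\<Sum>k\<in>K. lmap3 d1 d2 f (g k))"
  by (rule add_sum[of "lmap3 d1 d2 f"]) (simp_all add: lmap3_add)
lemma lmap2_V2: "lmap2 d1 d2 f X \<in> V2 d2" by (simp add: lmap2_def V2_def)
lemma lmap3_V3: "lmap3 d1 d2 f X \<in> V3 d2" by (simp add: lmap3_def V3_def)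

lemma lmap2_tens: "lmap2 d1 d2 f (tens x y) = tens (lmap d1 d2 f x) (lmap d1 d2 f y)"
  by (simp add: lmap2_def lmap_def tens_def fun_eq_iff sum_product mult_ac)

lemma sum3_prod: "(\<Sum>i\<in>A. \<Sum>j\<in>B. \<Sum>t\<in>C. f i * g j * (h t::complex)) = sum f A * sum g B * sum h C"
proof -
  have "(\<Sum>i\<in>A. \<Sum>j\<in>B. \<Sum>t\<in>C. f i * g j * h t) = (\<Sum>i\<in>A. f i * (\<Sum>j\<in>B. g j * (\<Sum>t\<in>C. h t)))"
    by (simp add: sum_distrib_left mult.assoc)
  also have "\<dots> = sum f A * (sum g B * sum h C)"
    by (simp only: sum_distrib_right[symmetric])
  finally show ?thesis by (simp add: mult.assoc)
qed

lemma lmap3_tens3: "lmap3 d1 d2 f (tens3 x y z) = tens3 (lmap d1 d2 f x) (lmap d1 d2 f y) (lmap d1 d2 f z)"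
proof (rule ext, rule ext, rule ext)
  fix a b c
  have "(\<Sum>i<d1. \<Sum>j<d1. \<Sum>t<d1. f a i * f b j * f c t * (x i * y j * z t)) =
        (\<Sum>i<d1. \<Sum>j<d1. \<Sum>t<d1. (f a i * x i) * (f b j * y j) * (f c t * z t))"
    by (simp add: mult_ac)
  also have "\<dots> = (\<Sum>i<d1. f a i * x i) * (\<Sum>j<d1. f b j * y j) * (\<Sum>t<d1. f c t * z t)"
    by (rule sum3_prod)
  finally show "lmap3 d1 d2 f (tens3 x y z) a b c = tens3 (lmap d1 d2 f x) (lmap d1 d2 f y) (lmap d1 d2 f z) a b c"
    by (simp add: lmap3_def lmap_def tens3_def)
qed


locale hopfH =
  fixes H :: hopf_data
  assumes hopf: "is_hopf H"
begin

abbreviation "dH \<equiv> dim H"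

lemma unt_V1: "unt H \<in> V1 dH" using hopf by (simp add: is_hopf_def)
lemma mul_assoc: "x \<in> V1 dH \<Longrightarrow> y \<in> V1 dH \<Longrightarrow> z \<in> V1 dH \<Longrightarrow> mul H (mul H x y) z = mul H x (mul H y z)"
  using hopf by (simp add: is_hopf_def)
lemma mul_unt_l: "x \<in> V1 dH \<Longrightarrow> mul H (unt H) x = x" using hopf by (simp add: is_hopf_def)
lemma mul_unt_r: "x \<in> V1 dH \<Longrightarrow> mul H x (unt H) = x" using hopf by (simp add: is_hopf_def)
lemma cop_mul: "x \<in> V1 dH \<Longrightarrow> y \<in> V1 dH \<Longrightarrow> cop H (mul H x y) = mul2 H (cop H x) (cop H y)"
  using hopf by (simp add: is_hopf_def)
lemma cop_unt: "cop H (unt H) = one2 H" using hopf by (simp add: is_hopf_def)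
lemma unt_nz: "unt H \<noteq> 0"
proof
  assume "unt H = 0"
  moreover have "cnt H (unt H) = 1" using hopf by (simp add: is_hopf_def)
  ultimately show False by (simp add: cnt_def)
qed

lemmas lin2_simps = mul2_add_r mul2_sc2_r mul2_add_l mul2_sc2_l mul2_tens mul3_add_r mul3_sc3_r mul3_add_l mul3_sc3_l
  mul3_tens3 ltens_add_r ltens_sc2_r rtens_add_l rtens_sc2_l ltens_tens rtens_tens cop_r_add cop_r_sc2
  cop_l_add cop_l_sc2 bv_V1 mul_V1 unt_V1

lemma mul2_assoc:
  assumes X: "X \<in> V2 dH" and Y: "Y \<in> V2 dH" and Z: "Z \<in> V2 dH"
  shows "mul2 H (mul2 H X Y) Z = mul2 H X (mul2 H Y Z)"
proof -
  have s1: "mul2 H (tens (mul H x x') (mul H y y')) Z = mul2 H (tens x y) (mul2 H (tens x' y') Z)"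
    if "x \<in> V1 dH" "y \<in> V1 dH" "x' \<in> V1 dH" "y' \<in> V1 dH" "Z \<in> V2 dH" for x y x' y' Z
    by (rule lin_ext2[of Z dH "\<lambda>Z. mul2 H (tens (mul H x x') (mul H y y')) Z" sc2
          "\<lambda>Z. mul2 H (tens x y) (mul2 H (tens x' y') Z)"])
       (simp_all add: that lin2_simps mul_assoc)
  have s2: "mul2 H (mul2 H (tens x y) Y) Z = mul2 H (tens x y) (mul2 H Y Z)"
    if "x \<in> V1 dH" "y \<in> V1 dH" "Y \<in> V2 dH" "Z \<in> V2 dH" for x y Y Z
    by (rule lin_ext2[of Y dH "\<lambda>Y. mul2 H (mul2 H (tens x y) Y) Z" sc2
          "\<lambda>Y. mul2 H (tens x y) (mul2 H Y Z)"])
       (simp_all add: that lin2_simps s1)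
  show ?thesis
    by (rule lin_ext2[of X dH "\<lambda>X. mul2 H (mul2 H X Y) Z" sc2 "\<lambda>X. mul2 H X (mul2 H Y Z)"])
       (simp_all add: X Y Z lin2_simps s2)
qed

lemma mul2_one_l: "X \<in> V2 dH \<Longrightarrow> mul2 H (one2 H) X = X"
  by (rule lin_ext2[of X dH "\<lambda>X. mul2 H (one2 H) X" sc2 "\<lambda>X. X"])
     (simp_all add: one2_eq lin2_simps mul_unt_l)
lemma mul2_one_r: "X \<in> V2 dH \<Longrightarrow> mul2 H X (one2 H) = X"
  by (rule lin_ext2[of X dH "\<lambda>X. mul2 H X (one2 H)" sc2 "\<lambda>X. X"])
     (simp_all add: one2_eq lin2_simps mul_unt_r)

lemma mul3_assoc:
  assumes X: "X \<in> V3 dH" and Y: "Y \<in> V3 dH" and Z: "Z \<in> V3 dH"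
  shows "mul3 H (mul3 H X Y) Z = mul3 H X (mul3 H Y Z)"
proof -
  have s1: "mul3 H (tens3 (mul H x x') (mul H y y') (mul H z z')) Z = mul3 H (tens3 x y z) (mul3 H (tens3 x' y' z') Z)"
    if "x \<in> V1 dH" "y \<in> V1 dH" "z \<in> V1 dH" "x' \<in> V1 dH" "y' \<in> V1 dH" "z' \<in> V1 dH" "Z \<in> V3 dH"
    for x y z x' y' z' Z
    by (rule lin_ext3[of Z dH "\<lambda>Z. mul3 H (tens3 (mul H x x') (mul H y y') (mul H z z')) Z" sc3
          "\<lambda>Z. mul3 H (tens3 x y z) (mul3 H (tens3 x' y' z') Z)"])
       (simp_all add: that lin2_simps mul_assoc)
  have s2: "mul3 H (mul3 H (tens3 x y z) Y) Z = mul3 H (tens3 x y z) (mul3 H Y Z)"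
    if "x \<in> V1 dH" "y \<in> V1 dH" "z \<in> V1 dH" "Y \<in> V3 dH" "Z \<in> V3 dH" for x y z Y Z
    by (rule lin_ext3[of Y dH "\<lambda>Y. mul3 H (mul3 H (tens3 x y z) Y) Z" sc3
          "\<lambda>Y. mul3 H (tens3 x y z) (mul3 H Y Z)"])
       (simp_all add: that lin2_simps s1)
  show ?thesis
    by (rule lin_ext3[of X dH "\<lambda>X. mul3 H (mul3 H X Y) Z" sc3 "\<lambda>X. mul3 H X (mul3 H Y Z)"])
       (simp_all add: X Y Z lin2_simps s2)
qed

lemma mul3_one_l: "X \<in> V3 dH \<Longrightarrow> mul3 H (one3 H) X = X"
  by (rule lin_ext3[of X dH "\<lambda>X. mul3 H (one3 H) X" sc3 "\<lambda>X. X"])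
     (simp_all add: one3_eq lin2_simps mul_unt_l)
lemma mul3_one_r: "X \<in> V3 dH \<Longrightarrow> mul3 H X (one3 H) = X"
  by (rule lin_ext3[of X dH "\<lambda>X. mul3 H X (one3 H)" sc3 "\<lambda>X. X"])
     (simp_all add: one3_eq lin2_simps mul_unt_r)

lemma ltens_mul:
  assumes Y: "Y \<in> V2 dH" and Z: "Z \<in> V2 dH"
  shows "mul3 H (ltens u Y) (ltens x Z) = ltens (mul H u x) (mul2 H Y Z)"
proof -
  have s1: "mul3 H (tens3 u a b) (ltens x Z) = ltens (mul H u x) (mul2 H (tens a b) Z)" if "Z \<in> V2 dH" for a b Z
    by (rule lin_ext2[of Z dH "\<lambda>Z. mul3 H (tens3 u a b) (ltens x Z)" sc3
          "\<lambda>Z. ltens (mul H u x) (mul2 H (tens a b) Z)"])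
       (simp_all add: that lin2_simps)
  show ?thesis
    by (rule lin_ext2[of Y dH "\<lambda>Y. mul3 H (ltens u Y) (ltens x Z)" sc3 "\<lambda>Y. ltens (mul H u x) (mul2 H Y Z)"])
       (simp_all add: Y Z lin2_simps s1)
qed

lemma rtens_mul:
  assumes Y: "Y \<in> V2 dH" and Z: "Z \<in> V2 dH"
  shows "mul3 H (rtens Y u) (rtens Z x) = rtens (mul2 H Y Z) (mul H u x)"
proof -
  have s1: "mul3 H (tens3 a b u) (rtens Z x) = rtens (mul2 H (tens a b) Z) (mul H u x)" if "Z \<in> V2 dH" for a b Z
    by (rule lin_ext2[of Z dH "\<lambda>Z. mul3 H (tens3 a b u) (rtens Z x)" sc3
          "\<lambda>Z. rtens (mul2 H (tens a b) Z) (mul H u x)"])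
       (simp_all add: that lin2_simps)
  show ?thesis
    by (rule lin_ext2[of Y dH "\<lambda>Y. mul3 H (rtens Y u) (rtens Z x)" sc3 "\<lambda>Y. rtens (mul2 H Y Z) (mul H u x)"])
       (simp_all add: Y Z lin2_simps s1)
qed

lemma lone_mul: "X \<in> V2 dH \<Longrightarrow> Y \<in> V2 dH \<Longrightarrow> lone H (mul2 H X Y) = mul3 H (lone H X) (lone H Y)"
  by (simp add: lone_eq ltens_mul mul_unt_l unt_V1)
lemma rone_mul: "X \<in> V2 dH \<Longrightarrow> Y \<in> V2 dH \<Longrightarrow> rone H (mul2 H X Y) = mul3 H (rone H X) (rone H Y)"
  by (simp add: rone_eq rtens_mul mul_unt_l unt_V1)
lemma lone_V3: "X \<in> V2 dH \<Longrightarrow> lone H X \<in> V3 dH" by (simp add: lone_eq ltens_V3 unt_V1)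
lemma rone_V3: "X \<in> V2 dH \<Longrightarrow> rone H X \<in> V3 dH" by (simp add: rone_eq rtens_V3 unt_V1)

lemma cop_r_mul:
  assumes X: "X \<in> V2 dH" and Y: "Y \<in> V2 dH"
  shows "cop_r H (mul2 H X Y) = mul3 H (cop_r H X) (cop_r H Y)"
proof -
  have s1: "cop_r H (mul2 H (tens a b) Y) = mul3 H (cop_r H (tens a b)) (cop_r H Y)"
    if "a \<in> V1 dH" "b \<in> V1 dH" "Y \<in> V2 dH" for a b Y
    by (rule lin_ext2[of Y dH "\<lambda>Y. cop_r H (mul2 H (tens a b) Y)" sc3 "\<lambda>Y. mul3 H (cop_r H (tens a b)) (cop_r H Y)"])
       (simp_all add: that lin2_simps cop_r_tens cop_mul ltens_mul cop_V2)
  show ?thesis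
    by (rule lin_ext2[of X dH "\<lambda>X. cop_r H (mul2 H X Y)" sc3 "\<lambda>X. mul3 H (cop_r H X) (cop_r H Y)"])
       (simp_all add: X Y lin2_simps s1)
qed

lemma cop_l_mul:
  assumes X: "X \<in> V2 dH" and Y: "Y \<in> V2 dH"
  shows "cop_l H (mul2 H X Y) = mul3 H (cop_l H X) (cop_l H Y)"
proof -
  have s1: "cop_l H (mul2 H (tens a b) Y) = mul3 H (cop_l H (tens a b)) (cop_l H Y)"
    if "a \<in> V1 dH" "b \<in> V1 dH" "Y \<in> V2 dH" for a b Y
    by (rule lin_ext2[of Y dH "\<lambda>Y. cop_l H (mul2 H (tens a b) Y)" sc3 "\<lambda>Y. mul3 H (cop_l H (tens a b)) (cop_l H Y)"])
       (simp_all add: that lin2_simps cop_l_tens cop_mul rtens_mul cop_V2)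
  show ?thesis
    by (rule lin_ext2[of X dH "\<lambda>X. cop_l H (mul2 H X Y)" sc3 "\<lambda>X. mul3 H (cop_l H X) (cop_l H Y)"])
       (simp_all add: X Y lin2_simps s1)
qed

end


locale qroot =
  fixes n :: nat and q :: complex
  assumes n2: "n \<ge> 2" and q_root: "q ^ (n^2) = 1" and q_prim: "\<forall>k. 0 < k \<and> k < n^2 \<longrightarrow> q ^ k \<noteq> 1"
begin

definition NN :: nat where "NN = n^2"
abbreviation "N \<equiv> NN"

lemma prod_inv: "(\<Prod>i\<in>A. inverse (f i :: complex)) = inverse (prod f A)"
  using prod_inversef[of f A] by (simp add: o_def)

definition Q :: "int \<Rightarrow> complex" where "Q z = q ^ nat (z mod int N)"

lemma n_pos: "n > 0" using n2 by simp
lemma N_gt1: "N > 1"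
proof -
  have "n * n \<ge> 2 * 2" using n2 by (intro mult_mono) auto
  then show ?thesis by (simp add: power2_eq_square NN_def)
qed
lemma N_pos: "N > 0" using N_gt1 by simp
lemma n_lt_N: "n < N"
proof -
  have "n * 1 < n * n" using n2 by (intro mult_strict_left_mono) auto
  then show ?thesis by (simp add: power2_eq_square NN_def)
qed
lemma qN: "q ^ N = 1" using q_root by (simp add: NN_def)

lemma q_pow_mod: "q ^ k = q ^ (k mod N)"
proof -
  have "q ^ k = q ^ (N * (k div N) + k mod N)" by simp
  also have "\<dots> = (q ^ N) ^ (k div N) * q ^ (k mod N)" by (simp only: power_add power_mult)
  finally show ?thesis using qN by simp
qed

lemma Q_int: "Q (int k) = q ^ k"
proof -
  have "nat (int k mod int N) = k mod N" by (metis nat_int zmod_int)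
  then show ?thesis by (simp add: Q_def q_pow_mod[of k])
qed

lemma Q_cong: "z mod int N = w mod int N \<Longrightarrow> Q z = Q w" by (simp add: Q_def)

lemma Q_add: "Q (x + y) = Q x * Q y"
proof -
  define u where "u = x mod int N"
  define v where "v = y mod int N"
  have u0: "u \<ge> 0" "v \<ge> 0" using N_pos by (auto simp: u_def v_def)
  have "Q (x + y) = Q (u + v)" by (rule Q_cong) (simp add: u_def v_def mod_add_eq)
  also have "u + v = int (nat u + nat v)" using u0 by simp
  also have "Q (int (nat u + nat v)) = q ^ nat u * q ^ nat v" by (simp only: Q_int power_add)
  also have "q ^ nat u * q ^ nat v = Q x * Q y" by (simp add: Q_def u_def v_def)
  finally show ?thesis .
qed

lemma Q_0[simp]: "Q 0 = 1" by (simp add: Q_def)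
lemma q_nz: "q \<noteq> 0"
proof
  assume "q = 0" then have "q ^ N = 0" using N_pos by simp
  with qN show False by simp
qed
lemma qprim: "0 < k \<Longrightarrow> k < N \<Longrightarrow> q ^ k \<noteq> 1" using q_prim by (simp add: NN_def)
lemma Q_nz: "Q z \<noteq> 0" using q_nz by (simp add: Q_def)
lemma Q_neg: "Q (- z) = inverse (Q z)"
proof -
  have "Q (- z) * Q z = 1" by (simp add: Q_add[symmetric])
  then show ?thesis using Q_nz by (simp add: field_simps)
qed
lemma Q_minus: "Q (x - y) = Q x / Q y"
  using Q_add[of x "-y"] Q_neg[of y] by (simp add: divide_inverse)
lemma Q_N: "Q (int N * z) = 1" by (simp add: Q_def)
lemma Q_inv_pow: "inverse q ^ k = Q (- int k)"
  by (simp add: Q_neg Q_int power_inverse)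
lemma Q_pow: "Q z ^ k = Q (int k * z)"
  by (induction k) (simp_all add: Q_add[symmetric] algebra_simps)
lemma Q_eq_1: "Q z = 1 \<longleftrightarrow> int N dvd z"
proof
  assume "Q z = 1"
  define k where "k = nat (z mod int N)"
  have "k < N" using N_pos by (simp add: k_def nat_less_iff)
  moreover have "q ^ k = 1" using \<open>Q z = 1\<close> by (simp add: Q_def k_def)
  ultimately have "k = 0" using qprim by (metis neq0_conv)
  moreover have "z mod int N \<ge> 0" using N_pos by simp
  ultimately have "z mod int N = 0" by (simp add: k_def)
  then show "int N dvd z" by (simp add: dvd_eq_mod_eq_0)
next
  assume "int N dvd z" then show "Q z = 1" by (auto simp: Q_N)
qed
lemma Q_sum: "Q (sum f K) = (\<Prod>k\<in>K. Q (f k))"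
  by (induction K rule: infinite_finite_induct) (simp_all add: Q_add)

lemma geo: "(\<Sum>a<N. Q (int a * t)) = (if int N dvd t then of_nat N else 0)"
proof -
  have "(\<Sum>a<N. Q (int a * t)) = (\<Sum>a<N. Q t ^ a)" by (simp add: Q_pow)
  also have "\<dots> = (if Q t = 1 then of_nat N else (1 - Q t ^ N) / (1 - Q t))" by (rule sum_gp_strict)
  also have "Q t ^ N = 1" by (simp add: Q_pow Q_N)
  finally show ?thesis by (simp add: Q_eq_1)
qed

end

locale grp = qroot +
  fixes m :: nat
begin

abbreviation "GG \<equiv> Gm n m"

definition addG :: "(nat \<Rightarrow> nat) \<Rightarrow> (nat \<Rightarrow> nat) \<Rightarrow> nat \<Rightarrow> nat" where
  "addG b c = (\<lambda>i\<in>{..<m}. (b i + c i) mod N)"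
definition negG :: "(nat \<Rightarrow> nat) \<Rightarrow> nat \<Rightarrow> nat" where
  "negG b = (\<lambda>i\<in>{..<m}. (N - b i) mod N)"
definition zeroG :: "nat \<Rightarrow> nat" where "zeroG = (\<lambda>i\<in>{..<m}. 0)"
definition kG :: "nat \<Rightarrow> nat \<Rightarrow> nat \<Rightarrow> nat" where "kG k j = (\<lambda>i\<in>{..<m}. if i = j then k else 0)"
definition red :: "(nat \<Rightarrow> nat) \<Rightarrow> nat \<Rightarrow> nat" where "red b = (\<lambda>i\<in>{..<m}. b i mod n)"

lemma Gm_iff: "b \<in> GG \<longleftrightarrow> (\<forall>i<m. b i < N) \<and> (\<forall>i. m \<le> i \<longrightarrow> b i = undefined)"
  by (auto simp: Gm_def PiE_iff extensional_def NN_def)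
lemma Gm_lt: "b \<in> GG \<Longrightarrow> i < m \<Longrightarrow> b i < N" by (simp add: Gm_iff)
lemma Gm_eq: "b \<in> GG \<Longrightarrow> c \<in> GG \<Longrightarrow> b = c \<longleftrightarrow> (\<forall>i<m. b i = c i)"
  by (auto simp: Gm_def intro: PiE_ext)
lemma finite_Gm: "finite GG" by (simp add: Gm_def finite_PiE)
lemma card_Gm: "card GG = N ^ m" by (simp add: Gm_def card_PiE NN_def)

lemma addG_Gm: "addG b c \<in> GG" using N_pos by (simp add: Gm_iff addG_def)
lemma negG_Gm: "negG b \<in> GG" using N_pos by (simp add: Gm_iff negG_def)
lemma zeroG_Gm: "zeroG \<in> GG" using N_pos by (simp add: Gm_iff zeroG_def)
lemma kG_Gm: "k < N \<Longrightarrow> kG k j \<in> GG" using N_pos by (simp add: Gm_iff kG_def)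
lemma red_Gm: "red b \<in> GG"
proof -
  have "b i mod n < N" for i using n_lt_N n_pos by (meson mod_less_divisor less_trans)
  then show ?thesis by (auto simp: Gm_iff red_def NN_def)
qed

lemma addG_app: "i < m \<Longrightarrow> addG b c i = (b i + c i) mod N" by (simp add: addG_def)
lemma negG_app: "i < m \<Longrightarrow> negG b i = (N - b i) mod N" by (simp add: negG_def)
lemma zeroG_app: "i < m \<Longrightarrow> zeroG i = 0" by (simp add: zeroG_def)
lemma kG_app: "i < m \<Longrightarrow> kG k j i = (if i = j then k else 0)" by (simp add: kG_def)
lemma red_app: "i < m \<Longrightarrow> red b i = b i mod n" by (simp add: red_def)

lemma addG_comm: "addG b c = addG c b" by (simp add: addG_def add.commute)
lemma addG_assoc: "addG (addG b c) d = addG b (addG c d)"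
  by (auto simp: addG_def fun_eq_iff mod_add_left_eq mod_add_right_eq add.assoc)
lemma addG_zero: "b \<in> GG \<Longrightarrow> addG b zeroG = b"
  by (rule Gm_eq[THEN iffD2]) (auto simp: addG_Gm addG_app zeroG_app Gm_lt)
lemma addG_neg: "b \<in> GG \<Longrightarrow> addG b (negG b) = zeroG"
proof (rule Gm_eq[THEN iffD2])
  assume b: "b \<in> GG"
  show "\<forall>i<m. addG b (negG b) i = zeroG i"
  proof (intro allI impI)
    fix i assume i: "i < m"
    have lt: "b i < N" using b i by (simp add: Gm_lt)
    have "(b i + (N - b i) mod N) mod N = (b i + (N - b i)) mod N" by (simp add: mod_add_right_eq)
    also have "\<dots> = 0" using lt by simp
    finally show "addG b (negG b) i = zeroG i" using i by (simp add: addG_app negG_app zeroG_app)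
  qed
qed (auto simp: addG_Gm zeroG_Gm)

lemma addG_cancel: "b \<in> GG \<Longrightarrow> c \<in> GG \<Longrightarrow> addG (addG b c) (negG c) = b"
  by (simp add: addG_assoc addG_neg addG_zero)
lemma addG_cancel2: "b \<in> GG \<Longrightarrow> c \<in> GG \<Longrightarrow> addG (addG b (negG c)) c = b"
  by (simp add: addG_assoc addG_comm[of "negG c" c] addG_neg addG_zero)

lemma sum_shift: "c \<in> GG \<Longrightarrow> (\<Sum>b\<in>GG. F (addG b c)) = (\<Sum>b\<in>GG. F b)"
  by (rule sum.reindex_bij_witness[where i="\<lambda>b. addG b (negG c)" and j="\<lambda>b. addG b c"])
     (auto simp: addG_Gm addG_cancel addG_cancel2 negG_Gm)

lemma sum_delta_G: "b0 \<in> GG \<Longrightarrow> (\<Sum>b\<in>GG. if b = b0 then F b else 0) = F b0"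
  by (simp add: sum.delta finite_Gm)
lemma sum_delta_G': "b0 \<in> GG \<Longrightarrow> (\<Sum>b\<in>GG. if b0 = b then F b else 0) = F b0"
  by (simp add: sum.delta' finite_Gm)

definition chi :: "(nat \<Rightarrow> nat) \<Rightarrow> (nat \<Rightarrow> nat) \<Rightarrow> complex" where
  "chi b c = (\<Prod>i<m. Q (int (b i) * int (c i)))"

lemma chi_comm: "chi b c = chi c b" by (simp add: chi_def mult.commute)
lemma chi_nz: "chi b c \<noteq> 0" by (simp add: chi_def Q_nz)
lemma chi_zero: "chi b zeroG = 1" by (simp add: chi_def zeroG_app)
lemma chi_addG: "chi (addG b c) d = chi b d * chi c d"
proof -
  have "chi (addG b c) d = (\<Prod>i<m. Q (int (b i) * int (d i)) * Q (int (c i) * int (d i)))"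
    unfolding chi_def
  proof (rule prod.cong[OF refl])
    fix i assume "i \<in> {..<m}"
    then have "Q (int (addG b c i) * int (d i)) = Q ((int (b i) + int (c i)) * int (d i))"
      by (intro Q_cong) (simp add: addG_app zmod_int mod_mult_left_eq)
    then show "Q (int (addG b c i) * int (d i)) = Q (int (b i) * int (d i)) * Q (int (c i) * int (d i))"
      by (simp add: Q_add[symmetric] algebra_simps)
  qed
  then show ?thesis by (simp add: chi_def prod.distrib)
qed

lemma idem_coef: "(\<Prod>i<m. inverse q ^ (b i * a i)) = inverse (chi b a)"
  by (simp add: chi_def Q_inv_pow Q_neg prod_inv)

lemma charsum:
  assumes b: "b \<in> GG" and c: "c \<in> GG"
  shows "(\<Sum>a\<in>GG. inverse (chi b a) * chi a c) = (if b = c then of_nat N ^ m else 0)"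
proof -
  have "(\<Sum>a\<in>GG. inverse (chi b a) * chi a c) = (\<Sum>a\<in>GG. \<Prod>i<m. Q (int (a i) * (int (c i) - int (b i))))"
  proof (rule sum.cong[OF refl])
    fix a
    have "inverse (chi b a) * chi a c = (\<Prod>i<m. inverse (Q (int (b i) * int (a i))) * Q (int (a i) * int (c i)))"
      by (simp add: chi_def prod_inv[symmetric] prod.distrib)
    also have "\<dots> = (\<Prod>i<m. Q (int (a i) * (int (c i) - int (b i))))"
      by (rule prod.cong[OF refl]) (simp add: Q_neg[symmetric] Q_add[symmetric] algebra_simps)
    finally show "inverse (chi b a) * chi a c = (\<Prod>i<m. Q (int (a i) * (int (c i) - int (b i))))" .
  qed
  also have "\<dots> = (\<Prod>i<m. \<Sum>x<N. Q (int x * (int (c i) - int (b i))))"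
    by (simp add: Gm_def prod_sum_PiE NN_def)
  also have "\<dots> = (\<Prod>i<m. if b i = c i then of_nat N else 0)"
  proof (rule prod.cong[OF refl])
    fix i assume "i \<in> {..<m}"
    then have lt: "b i < N" "c i < N" using b c by (auto simp: Gm_lt)
    have "int N dvd (int (c i) - int (b i)) \<longleftrightarrow> b i = c i"
    proof
      assume "int N dvd (int (c i) - int (b i))"
      then obtain k where k: "int (c i) - int (b i) = int N * k" by (auto elim: dvdE)
      have "\<bar>int (c i) - int (b i)\<bar> < int N" using lt by auto
      then have "k = 0" using k N_pos
        by (metis abs_mult abs_of_nat mult_less_cancel_left2 nat_int of_nat_less_0_iff zero_less_abs_iff
            abs_ge_self linorder_not_less mult.right_neutral less_le_trans zero_less_one_class.zero_le_one
            int_one_le_iff_zero_less)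
      then show "b i = c i" using k by simp
    qed simp
    then show "(\<Sum>x<N. Q (int x * (int (c i) - int (b i)))) = (if b i = c i then of_nat N else 0)"
      by (simp add: geo)
  qed
  also have "\<dots> = (if b = c then of_nat N ^ m else 0)"
    using Gm_eq[OF b c] by (auto simp: prod.neutral)
  finally show ?thesis .
qed

end


locale setting = hopfH H + grp n q m for H n q m +
  fixes g e :: "nat \<Rightarrow> v1" and a :: "nat \<Rightarrow> nat \<Rightarrow> nat"
  assumes gens_in: "\<forall>i<m. g i \<in> V1 (dim H) \<and> e i \<in> V1 (dim H)"
    and g_grouplike: "\<forall>i<m. grouplike H (g i)"
    and g_order: "\<forall>i<m. pw H (g i) (n^2) = unt H"
    and g_comm: "\<forall>i<m. \<forall>j<m. mul H (g i) (g j) = mul H (g j) (g i)"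
    and g_e: "\<forall>i<m. \<forall>j<m. mul H (g i) (e j) = scal (if i = j then q else 1) (mul H (e j) (g i))"
    and e_cop: "\<forall>i<m. cop H (e i) = (\<lambda>k l. e i k * Kel H g m a i l + unt H k * e i l)"
    and group_alg: "inj_on (gmon H g m) (Gm n m)"
begin

lemma g_V1: "i < m \<Longrightarrow> g i \<in> V1 dH" using gens_in by auto
lemma e_V1: "i < m \<Longrightarrow> e i \<in> V1 dH" using gens_in by auto
lemma g_cop: "i < m \<Longrightarrow> cop H (g i) = tens (g i) (g i)" using g_grouplike by (auto simp: grouplike_def)
lemma g_cnt: "i < m \<Longrightarrow> cnt H (g i) = 1" using g_grouplike by (auto simp: grouplike_def)

lemma pw_0[simp]: "pw H x 0 = unt H" by (simp add: pw_def)
lemma pw_Suc: "pw H x (Suc k) = mul H x (pw H x k)" by (simp add: pw_def)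
lemma pw_V1: "pw H x k \<in> V1 dH" by (cases k) (simp_all add: pw_Suc unt_V1 mul_V1)
lemma pw_add: "x \<in> V1 dH \<Longrightarrow> pw H x (k + l) = mul H (pw H x k) (pw H x l)"
  by (induction k) (simp_all add: pw_Suc mul_unt_l pw_V1 mul_assoc)
lemma pw_mult: "x \<in> V1 dH \<Longrightarrow> pw H x (k * l) = pw H (pw H x k) l"
  by (induction l) (simp_all add: pw_Suc pw_add)
lemma pw_unt: "pw H (unt H) k = unt H" by (induction k) (simp_all add: pw_Suc mul_unt_l unt_V1)
lemma g_pw_N: "i < m \<Longrightarrow> pw H (g i) N = unt H" using g_order by (simp add: NN_def)
lemma g_pw_mod: "i < m \<Longrightarrow> pw H (g i) k = pw H (g i) (k mod N)"
proof -
  assume i: "i < m"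
  have "pw H (g i) k = pw H (g i) (N * (k div N) + k mod N)" by simp
  also have "\<dots> = mul H (pw H (pw H (g i) N) (k div N)) (pw H (g i) (k mod N))"
    by (simp only: pw_add[OF g_V1[OF i]] pw_mult[OF g_V1[OF i]])
  also have "\<dots> = pw H (g i) (k mod N)" by (simp add: g_pw_N i pw_unt mul_unt_l pw_V1)
  finally show ?thesis .
qed

lemma mprod_V1: "mprod H f k \<in> V1 dH" by (cases k) (simp_all add: unt_V1 mul_V1)
lemma mprod_cong: "(\<And>i. i < k \<Longrightarrow> f i = f' i) \<Longrightarrow> mprod H f k = mprod H f' k"
  by (induction k) auto

definition cm :: "v1 \<Rightarrow> v1 \<Rightarrow> bool" where "cm x y \<longleftrightarrow> mul H x y = mul H y x"

lemma cm_mprod: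
  assumes x: "x \<in> V1 dH" and f: "\<forall>i<k. f i \<in> V1 dH \<and> cm x (f i)"
  shows "cm x (mprod H f k)"
  using f
proof (induction k)
  case 0 then show ?case by (simp add: cm_def mul_unt_l mul_unt_r x)
next
  case (Suc k)
  then have ih: "cm x (mprod H f k)" and fk: "f k \<in> V1 dH" "cm x (f k)" by auto
  have "mul H x (mul H (mprod H f k) (f k)) = mul H (mul H x (mprod H f k)) (f k)"
    by (simp add: mul_assoc x mprod_V1 fk)
  also have "\<dots> = mul H (mprod H f k) (mul H x (f k))"
    using ih by (simp add: cm_def mul_assoc x mprod_V1 fk)
  also have "\<dots> = mul H (mul H (mprod H f k) (f k)) x"
    using fk by (simp add: cm_def mul_assoc x mprod_V1)
  finally show ?case by (simp add: cm_def)
qed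

lemma mprod_upd:
  assumes x: "x \<in> V1 dH" and f: "\<forall>i<k. f i \<in> V1 dH \<and> cm x (f i)" and j: "j < k"
  shows "mul H x (mprod H f k) = mprod H (f(j := mul H x (f j))) k"
  using f j
proof (induction k)
  case 0 then show ?case by simp
next
  case (Suc k)
  have fk: "f k \<in> V1 dH" "cm x (f k)" using Suc.prems by auto
  have cmk: "cm x (mprod H f k)" using cm_mprod[OF x] Suc.prems by auto
  show ?case
  proof (cases "j = k")
    case True
    have m1: "mprod H (f(k := mul H x (f k))) k = mprod H f k" by (rule mprod_cong) auto
    have "mprod H (f(k := mul H x (f k))) (Suc k) = mul H (mprod H f k) (mul H x (f k))"
      using m1 by simp
    also have "\<dots> = mul H (mul H x (mprod H f k)) (f k)"
      using cmk by (simp add: cm_def mul_assoc x mprod_V1 fk)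
    also have "\<dots> = mul H x (mprod H f (Suc k))" by (simp add: mul_assoc x mprod_V1 fk)
    finally show ?thesis unfolding True by (rule sym)
  next
    case False
    then have jk: "j < k" using Suc.prems by simp
    have ih: "mul H x (mprod H f k) = mprod H (f(j := mul H x (f j))) k"
      by (rule Suc.IH) (use Suc.prems jk in auto)
    have "mul H x (mprod H f (Suc k)) = mul H (mul H x (mprod H f k)) (f k)"
      by (simp add: mul_assoc x mprod_V1 fk)
    also have "\<dots> = mul H (mprod H (f(j := mul H x (f j))) k) (f k)"
      by (simp only: ih)
    also have "\<dots> = mprod H (f(j := mul H x (f j))) (Suc k)" using False by simp
    finally show ?thesis .
  qed
qed

lemma ag_V1: assumes "S \<subseteq> V1 dH" "x \<in> alg_gen H S" shows "x \<in> V1 dH"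
  using assms(2)
proof (induction rule: alg_gen.induct)
  case unit show ?case by (rule unt_V1)
next
  case (gen x) then show ?case using assms(1) by auto
next
  case (add x y) then show ?case by (simp add: V1_def)
next
  case (smul x c) then show ?case by (simp add: V1_scal)
next
  case (mult x y) show ?case by (rule mul_V1)
qed
lemma ag_add: "x \<in> alg_gen H S \<Longrightarrow> y \<in> alg_gen H S \<Longrightarrow> x + y \<in> alg_gen H S"
proof -
  assume "x \<in> alg_gen H S" "y \<in> alg_gen H S"
  then have "(\<lambda>k. x k + y k) \<in> alg_gen H S" by (rule alg_gen.add)
  then show ?thesis by (simp add: plus_fun_def)
qed
lemma ag_zero: "0 \<in> alg_gen H S"
proof -
  have "scal 0 (unt H) \<in> alg_gen H S" by (rule alg_gen.smul[OF alg_gen.unit])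
  then show ?thesis by simp
qed
lemma ag_scal: "x \<in> alg_gen H S \<Longrightarrow> scal c x \<in> alg_gen H S" by (rule alg_gen.smul)
lemma ag_sum: "(\<And>k. k \<in> K \<Longrightarrow> f k \<in> alg_gen H S) \<Longrightarrow> sum f K \<in> alg_gen H S"
  by (induction K rule: infinite_finite_induct) (auto simp: ag_zero ag_add)
lemma ag_pw: "x \<in> alg_gen H S \<Longrightarrow> pw H x k \<in> alg_gen H S"
  by (induction k) (simp_all add: pw_Suc alg_gen.unit alg_gen.mult)
lemma ag_mprod: "(\<And>i. i < k \<Longrightarrow> f i \<in> alg_gen H S) \<Longrightarrow> mprod H f k \<in> alg_gen H S"
  by (induction k) (simp_all add: alg_gen.unit alg_gen.mult)
lemma ag_mono: assumes "S \<subseteq> T" "x \<in> alg_gen H S" shows "x \<in> alg_gen H T"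
  using assms(2) by (induction rule: alg_gen.induct) (use assms(1) in \<open>auto intro: alg_gen.intros\<close>)

lemma ag_cm1:
  assumes S: "S \<subseteq> V1 dH" and z: "z \<in> V1 dH" and zs: "\<forall>s\<in>S. cm z s" and y: "y \<in> alg_gen H S"
  shows "cm z y"
  using y
proof (induction y rule: alg_gen.induct)
  case unit then show ?case by (simp add: cm_def mul_unt_l mul_unt_r z)
next
  case (gen x) then show ?case using zs by auto
next
  case (add x y) then show ?case
    using mul_add_l[of H x y z] mul_add_r[of H z x y] by (simp add: cm_def plus_fun_def)
next
  case (smul x c) then show ?case by (simp add: cm_def mul_scal_l mul_scal_r)
next
  case (mult x y)
  have xv: "x \<in> V1 dH" "y \<in> V1 dH" using ag_V1[OF S] mult.hyps by auto
  have "mul H z (mul H x y) = mul H (mul H x z) y" using mult.IH by (simp add: cm_def mul_assoc[symmetric] z xv)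
  also have "\<dots> = mul H x (mul H y z)" using mult.IH by (simp add: cm_def mul_assoc z xv)
  also have "\<dots> = mul H (mul H x y) z" by (simp add: mul_assoc z xv)
  finally show ?case by (simp add: cm_def)
qed

lemma ag_cm:
  assumes S: "S \<subseteq> V1 dH" and SS: "\<forall>s\<in>S. \<forall>t\<in>S. cm s t" and x: "x \<in> alg_gen H S" and y: "y \<in> alg_gen H S"
  shows "cm x y"
  using x y
proof (induction x arbitrary: y rule: alg_gen.induct)
  case unit then show ?case using ag_V1[OF S] by (simp add: cm_def mul_unt_l mul_unt_r)
next
  case (gen s) then show ?case using ag_cm1[OF S, of s y] SS S by auto
next
  case (add x1 x2) then show ?case
    using mul_add_l[of H x1 x2 y] mul_add_r[of H y x1 x2] by (simp add: cm_def plus_fun_def)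
next
  case (smul x c) then show ?case by (simp add: cm_def mul_scal_l mul_scal_r)
next
  case (mult x1 x2)
  have xv: "x1 \<in> V1 dH" "x2 \<in> V1 dH" "y \<in> V1 dH" using ag_V1[OF S] mult.hyps mult.prems by auto
  have c1: "cm x1 y" "cm x2 y" using mult.IH mult.prems by auto
  have "mul H (mul H x1 x2) y = mul H x1 (mul H y x2)" using c1 by (simp add: cm_def mul_assoc xv)
  also have "\<dots> = mul H (mul H y x1) x2" using c1 by (simp add: cm_def mul_assoc[symmetric] xv)
  also have "\<dots> = mul H y (mul H x1 x2)" by (simp add: mul_assoc xv)
  finally show ?case by (simp add: cm_def)
qed

abbreviation "CC \<equiv> alg_gen H {g i | i. i < m}"

lemma CC_S: "{g i | i. i < m} \<subseteq> V1 dH" using g_V1 by auto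
lemma CC_V1: "x \<in> CC \<Longrightarrow> x \<in> V1 dH" using ag_V1[OF CC_S] by auto
lemma CC_cm: "x \<in> CC \<Longrightarrow> y \<in> CC \<Longrightarrow> mul H x y = mul H y x"
  using ag_cm[OF CC_S, of x y] g_comm by (auto simp: cm_def)
lemma g_CC: "i < m \<Longrightarrow> g i \<in> CC" by (auto intro: alg_gen.gen)
lemma gmon_CC: "gmon H g m al \<in> CC" unfolding gmon_def by (intro ag_mprod ag_pw g_CC)
lemma gmon_V1: "gmon H g m al \<in> V1 dH" by (simp add: gmon_def mprod_V1)

definition gl :: "v1 \<Rightarrow> bool" where "gl x \<longleftrightarrow> cop H x = tens x x"
lemma gl_mul: "x \<in> V1 dH \<Longrightarrow> y \<in> V1 dH \<Longrightarrow> gl x \<Longrightarrow> gl y \<Longrightarrow> gl (mul H x y)"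
  by (simp add: gl_def cop_mul mul2_tens)
lemma gl_unt: "gl (unt H)" by (simp add: gl_def cop_unt one2_eq)
lemma gl_pw: "x \<in> V1 dH \<Longrightarrow> gl x \<Longrightarrow> gl (pw H x k)"
  by (induction k) (simp_all add: pw_Suc gl_unt gl_mul pw_V1)
lemma gl_mprod: "(\<And>i. i < k \<Longrightarrow> f i \<in> V1 dH \<and> gl (f i)) \<Longrightarrow> gl (mprod H f k)"
  by (induction k) (simp_all add: gl_unt gl_mul mprod_V1)
lemma gmon_gl: "cop H (gmon H g m al) = tens (gmon H g m al) (gmon H g m al)"
proof -
  have "pw H (g i) (al i) \<in> V1 dH \<and> gl (pw H (g i) (al i))" if "i < m" for i
    using that gl_pw[OF g_V1[OF that], of "al i"] g_cop[OF that] by (simp add: gl_def pw_V1)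
  then have "gl (mprod H (\<lambda>i. pw H (g i) (al i)) m)" by (rule gl_mprod)
  then show ?thesis by (simp add: gl_def gmon_def)
qed

lemma cnt_add: "cnt H (x + y) = cnt H x + cnt H y" by (simp add: cnt_def distrib_left sum.distrib)
lemma cnt_zero: "cnt H 0 = 0" by (simp add: cnt_def)
lemma cnt_scal: "cnt H (scal c x) = c * cnt H x" by (simp add: cnt_def scal_def sum_distrib_left algebra_simps)
lemma cnt_sum: "cnt H (sum f K) = (\<Sum>k\<in>K. cnt H (f k))"
  by (rule add_sum[of "cnt H"]) (simp_all add: cnt_add cnt_zero)
lemma cnt_mul: "x \<in> V1 dH \<Longrightarrow> y \<in> V1 dH \<Longrightarrow> cnt H (mul H x y) = cnt H x * cnt H y"
  using hopf by (simp add: is_hopf_def)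
lemma cnt_unt: "cnt H (unt H) = 1" using hopf by (simp add: is_hopf_def)
lemma cnt_gmon: "cnt H (gmon H g m al) = 1"
proof -
  have "cnt H (pw H (g i) k) = 1" if "i < m" for i k
    using that by (induction k) (simp_all add: pw_Suc cnt_unt cnt_mul g_V1 pw_V1 g_cnt)
  then have "k \<le> m \<Longrightarrow> cnt H (mprod H (\<lambda>i. pw H (g i) (al i)) k) = 1" for k
    by (induction k) (simp_all add: cnt_unt cnt_mul mprod_V1 pw_V1)
  then show ?thesis by (simp add: gmon_def)
qed

lemma chi_addG2: "chi d (addG b c) = chi d b * chi d c"
  by (metis chi_comm chi_addG)

lemma Kel_eq: "Kel H g m a i = gmon H g m (a i)" by (simp add: Kel_def gmon_def)

abbreviation I :: "(nat \<Rightarrow> nat) \<Rightarrow> v1" where "I b \<equiv> idem H q n m g b"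
abbreviation "cN \<equiv> (1 / of_nat N :: complex) ^ m"

lemma cN_N: "cN * of_nat N ^ m = 1" using N_pos by (simp add: power_one_over[symmetric] power_mult_distrib[symmetric])

lemma idem_eq: "I b = scal cN (\<Sum>al\<in>GG. scal (inverse (chi b al)) (gmon H g m al))"
  by (simp add: idem_def fun_eq_iff scal_def sum_fun_app idem_coef NN_def)

lemma idem_V1: "I b \<in> V1 dH" by (simp add: idem_eq V1_scal V1_sum gmon_V1)
lemma idem_CC: "I b \<in> CC" by (simp add: idem_eq ag_scal ag_sum gmon_CC)

lemma sum_scal_same: "(\<Sum>k\<in>K. scal (f k) X) = scal (sum f K) X" by (simp add: scal_sum2)

lemma gmon_shift:
  assumes j: "j < m" and al: "al \<in> GG"
  shows "mul H (g j) (gmon H g m al) = gmon H g m (addG al (kG 1 j))"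
proof -
  let ?f = "\<lambda>i. pw H (g i) (al i)"
  have "mul H (g j) (gmon H g m al) = mprod H (?f(j := mul H (g j) (?f j))) m"
    unfolding gmon_def
    by (rule mprod_upd) (auto simp: g_V1 j pw_V1 cm_def intro!: CC_cm g_CC ag_pw)
  also have "\<dots> = gmon H g m (addG al (kG 1 j))" unfolding gmon_def
  proof (rule mprod_cong)
    fix i assume i: "i < m"
    show "(?f(j := mul H (g j) (?f j))) i = pw H (g i) (addG al (kG 1 j) i)"
    proof (cases "i = j")
      case True
      then show ?thesis using i
        by (simp add: addG_app kG_app pw_Suc[symmetric] g_pw_mod[of j "Suc (al j)"])
    next
      case False
      then show ?thesis using i al by (simp add: addG_app kG_app Gm_lt)
    qed
  qed
  finally show ?thesis .
qed

lemma chi_kG1: "j < m \<Longrightarrow> chi (kG 1 j) b = q ^ b j"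
proof -
  assume j: "j < m"
  have "chi (kG 1 j) b = (\<Prod>i<m. if i = j then Q (int (b j)) else 1)"
    unfolding chi_def by (rule prod.cong) (auto simp: kG_app)
  also have "\<dots> = Q (int (b j))" using j by (simp add: prod.delta)
  finally show ?thesis by (simp add: Q_int)
qed

lemma g_idem:
  assumes j: "j < m" and b: "b \<in> GG"
  shows "mul H (g j) (I b) = scal (q ^ b j) (I b)"
proof -
  have eps: "kG 1 j \<in> GG" using N_gt1 by (simp add: kG_Gm)
  define F where "F al = scal (inverse (chi b al) * q ^ b j) (gmon H g m al)" for al
  have "mul H (g j) (I b) = scal cN (\<Sum>al\<in>GG. scal (inverse (chi b al)) (mul H (g j) (gmon H g m al)))"
    by (simp add: idem_eq mul_scal_r mul_sum_r)
  also have "\<dots> = scal cN (\<Sum>al\<in>GG. F (addG al (kG 1 j)))"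
  proof -
    have "scal (inverse (chi b al)) (mul H (g j) (gmon H g m al)) = F (addG al (kG 1 j))" if "al \<in> GG" for al
    proof -
      have "chi b (addG al (kG 1 j)) = chi b al * q ^ b j"
        by (metis chi_comm chi_addG chi_kG1[OF j])
      moreover have "inverse (q ^ b j) * q ^ b j = 1" using q_nz by simp
      ultimately show ?thesis using that chi_nz[of b al]
        by (simp add: F_def gmon_shift j mult.assoc)
    qed
    then show ?thesis by (simp cong: sum.cong)
  qed
  also have "\<dots> = scal cN (\<Sum>al\<in>GG. F al)" by (simp only: sum_shift[OF eps])
  also have "\<dots> = scal (q ^ b j) (I b)"
    by (simp add: F_def idem_eq scal_scal scal_sum mult_ac)
  finally show ?thesis .
qed

lemma pw_idem:
  assumes j: "j < m" and b: "b \<in> GG"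
  shows "mul H (pw H (g j) t) (I b) = scal (q ^ (t * b j)) (I b)"
proof (induction t)
  case 0 then show ?case by (simp add: mul_unt_l idem_V1)
next
  case (Suc t)
  have "mul H (pw H (g j) (Suc t)) (I b) = mul H (g j) (mul H (pw H (g j) t) (I b))"
    by (simp add: pw_Suc mul_assoc g_V1 j pw_V1 idem_V1)
  also have "\<dots> = scal (q ^ (Suc t * b j)) (I b)"
    using Suc by (simp add: mul_scal_r g_idem j b scal_scal power_add mult.commute)
  finally show ?case .
qed

lemma gmon_idem:
  assumes b: "b \<in> GG"
  shows "mul H (gmon H g m al) (I b) = scal (chi al b) (I b)"
proof -
  have "k \<le> m \<Longrightarrow> mul H (mprod H (\<lambda>i. pw H (g i) (al i)) k) (I b) = scal (\<Prod>i<k. Q (int (al i) * int (b i))) (I b)" for k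
  proof (induction k)
    case 0 then show ?case by (simp add: mul_unt_l idem_V1)
  next
    case (Suc k)
    have "mul H (mprod H (\<lambda>i. pw H (g i) (al i)) (Suc k)) (I b)
        = mul H (mprod H (\<lambda>i. pw H (g i) (al i)) k) (mul H (pw H (g k) (al k)) (I b))"
      by (simp add: mul_assoc mprod_V1 pw_V1 idem_V1)
    also have "\<dots> = scal (\<Prod>i<Suc k. Q (int (al i) * int (b i))) (I b)"
      using Suc by (simp add: pw_idem b mul_scal_r scal_scal Q_int[symmetric] mult.commute)
    finally show ?case .
  qed
  then show ?thesis by (simp add: gmon_def chi_def)
qed

lemma idem_orth:
  assumes b: "b \<in> GG" and b': "b' \<in> GG"
  shows "mul H (I b') (I b) = (if b' = b then I b else 0)"
proof -
  have "mul H (I b') (I b) = scal cN (\<Sum>al\<in>GG. scal (inverse (chi b' al) * chi al b) (I b))"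
    by (simp add: idem_eq[of b'] mul_scal_l mul_sum_l gmon_idem b scal_scal)
  also have "\<dots> = scal (cN * (\<Sum>al\<in>GG. inverse (chi b' al) * chi al b)) (I b)"
    by (simp add: sum_scal_same scal_scal)
  also have "\<dots> = (if b' = b then I b else 0)" using cN_N by (simp add: charsum b b')
  finally show ?thesis .
qed

lemma gmon_zero: "gmon H g m zeroG = unt H"
proof -
  have "k \<le> m \<Longrightarrow> mprod H (\<lambda>i. pw H (g i) (zeroG i)) k = unt H" for k
    by (induction k) (simp_all add: zeroG_app mul_unt_l unt_V1)
  then show ?thesis by (simp add: gmon_def)
qed

lemma idem_sum: "(\<Sum>b\<in>GG. I b) = unt H"
proof -
  have "(\<Sum>b\<in>GG. I b) = scal cN (\<Sum>b\<in>GG. \<Sum>al\<in>GG. scal (inverse (chi b al)) (gmon H g m al))"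
    by (simp add: idem_eq scal_sum)
  also have "\<dots> = scal cN (\<Sum>al\<in>GG. scal (\<Sum>b\<in>GG. inverse (chi al b) * chi b zeroG) (gmon H g m al))"
    by (subst sum.swap) (simp add: sum_scal_same chi_zero chi_comm)
  also have "\<dots> = scal cN (\<Sum>al\<in>GG. if al = zeroG then scal (of_nat N ^ m) (gmon H g m al) else 0)"
    by (intro arg_cong[where f="scal cN"] sum.cong refl) (simp add: charsum zeroG_Gm)
  also have "\<dots> = unt H" using cN_N by (simp add: sum_delta_G zeroG_Gm gmon_zero scal_scal)
  finally show ?thesis .
qed

lemma gmon_expand: "gmon H g m al = (\<Sum>b\<in>GG. scal (chi al b) (I b))"
proof -
  have "gmon H g m al = mul H (gmon H g m al) (unt H)" by (simp add: mul_unt_r gmon_V1)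
  also have "\<dots> = (\<Sum>b\<in>GG. scal (chi al b) (I b))"
    by (simp add: idem_sum[symmetric] mul_sum_r gmon_idem cong: sum.cong)
  finally show ?thesis .
qed

lemma cnt_idem: "b \<in> GG \<Longrightarrow> cnt H (I b) = (if b = zeroG then 1 else 0)"
proof -
  assume b: "b \<in> GG"
  have "cnt H (I b) = cN * (\<Sum>al\<in>GG. inverse (chi b al) * chi al zeroG)"
    by (simp add: idem_eq cnt_scal cnt_sum cnt_gmon chi_zero)
  then show ?thesis using cN_N by (simp add: charsum b zeroG_Gm)
qed

lemma cop_idem_eig:
  assumes b: "b \<in> GG" and c: "c \<in> GG" and d: "d \<in> GG"
  shows "mul2 H (cop H (I b)) (tens (I c) (I d)) = (if b = addG c d then tens (I c) (I d) else 0)"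
proof -
  have "mul2 H (cop H (I b)) (tens (I c) (I d)) =
     sc2 cN (\<Sum>al\<in>GG. sc2 (inverse (chi b al) * chi al (addG c d)) (tens (I c) (I d)))"
    by (simp add: idem_eq[of b] cop_scal cop_sum mul2_sc2_l mul2_sum_l gmon_gl mul2_tens gmon_idem c d
        tens_scal_l tens_scal_r sc2_sc2 chi_addG2 mult_ac)
  also have "\<dots> = sc2 (cN * (\<Sum>al\<in>GG. inverse (chi b al) * chi al (addG c d))) (tens (I c) (I d))"
    by (simp add: sc2_sum[symmetric] sc2_sc2 fun_eq_iff sum_fun_app sc2_def sum_distrib_right)
  also have "\<dots> = (if b = addG c d then tens (I c) (I d) else 0)"
    using cN_N by (simp add: charsum b addG_Gm)
  finally show ?thesis .
qed

lemma unt_tens_expand: "one2 H = (\<Sum>c\<in>GG. \<Sum>d\<in>GG. tens (I c) (I d))"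
proof -
  have "one2 H = tens (\<Sum>c\<in>GG. I c) (\<Sum>d\<in>GG. I d)" by (simp add: one2_eq idem_sum)
  also have "\<dots> = (\<Sum>c\<in>GG. tens (I c) (\<Sum>d\<in>GG. I d))" by (rule tens_sum_l)
  also have "\<dots> = (\<Sum>c\<in>GG. \<Sum>d\<in>GG. tens (I c) (I d))" by (simp only: tens_sum_r)
  finally show ?thesis .
qed

lemma cop_idem:
  assumes b: "b \<in> GG"
  shows "cop H (I b) = (\<Sum>c\<in>GG. tens (I c) (I (addG b (negG c))))"
proof -
  have "cop H (I b) = mul2 H (cop H (I b)) (one2 H)" by (simp add: mul2_one_r cop_V2)
  also have "\<dots> = (\<Sum>c\<in>GG. \<Sum>d\<in>GG. if d = addG b (negG c) then tens (I c) (I d) else 0)"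
  proof -
    have "\<And>c d. c \<in> GG \<Longrightarrow> d \<in> GG \<Longrightarrow> (b = addG c d) = (d = addG b (negG c))"
      using b by (metis addG_cancel addG_cancel2 addG_comm negG_Gm addG_Gm addG_assoc)
    then show ?thesis
      by (simp add: unt_tens_expand mul2_sum_r cop_idem_eig b cong: sum.cong)
  qed
  also have "\<dots> = (\<Sum>c\<in>GG. tens (I c) (I (addG b (negG c))))"
    by (simp add: sum.delta finite_Gm addG_Gm)
  finally show ?thesis .
qed

end


context setting
begin

lemma tens_nz: "x \<noteq> 0 \<Longrightarrow> y \<noteq> 0 \<Longrightarrow> tens x y \<noteq> 0"
proof -
  assume "x \<noteq> 0" "y \<noteq> 0"
  then obtain k l where "x k \<noteq> 0" "y l \<noteq> 0" by (auto simp: fun_eq_iff)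
  then have "tens x y k l \<noteq> 0" by (simp add: tens_def)
  then show ?thesis by auto
qed

lemma tens3_nz: "x \<noteq> 0 \<Longrightarrow> y \<noteq> 0 \<Longrightarrow> z \<noteq> 0 \<Longrightarrow> tens3 x y z \<noteq> 0"
proof -
  assume "x \<noteq> 0" "y \<noteq> 0" "z \<noteq> 0"
  then obtain k l r where "x k \<noteq> 0" "y l \<noteq> 0" "z r \<noteq> 0" by (auto simp: fun_eq_iff)
  then have "tens3 x y z k l r \<noteq> 0" by (simp add: tens3_def)
  then show ?thesis by auto
qed

lemma addG_inj: "c \<in> GG \<Longrightarrow> inj_on (\<lambda>b. addG b c) GG"
  by (rule inj_onI) (metis addG_cancel)

lemma idem_nz: assumes b: "b \<in> GG" shows "I b \<noteq> 0"
proof -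
  define S where "S = {b \<in> GG. I b \<noteq> 0}"
  have SG: "S \<subseteq> GG" by (auto simp: S_def)
  have finS: "finite S" using finite_subset[OF SG finite_Gm] .
  have zS: "zeroG \<in> S"
  proof -
    have "cnt H (I zeroG) = 1" by (simp add: cnt_idem zeroG_Gm)
    then have "I zeroG \<noteq> 0" using cnt_zero by auto
    then show ?thesis by (simp add: S_def zeroG_Gm)
  qed
  have clos: "addG c d \<in> S" if c: "c \<in> S" and d: "d \<in> S" for c d
  proof (rule ccontr)
    assume "addG c d \<notin> S"
    then have z: "I (addG c d) = 0" by (simp add: S_def addG_Gm)
    have cG: "c \<in> GG" "d \<in> GG" using c d by (auto simp: S_def)
    have "mul2 H (cop H (I (addG c d))) (tens (I c) (I d)) = tens (I c) (I d)"
      using cop_idem_eig[OF addG_Gm cG] by simp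
    then have "tens (I c) (I d) = 0" using z by simp
    moreover have "tens (I c) (I d) \<noteq> 0" using c d by (intro tens_nz) (auto simp: S_def)
    ultimately show False by simp
  qed
  have csum: "(\<Sum>c\<in>S. chi al c) = 0" if al: "al \<in> GG" and c1: "c1 \<in> S" and ne: "chi al c1 \<noteq> 1" for al c1
  proof -
    have c1G: "c1 \<in> GG" using c1 SG by auto
    have inj: "inj_on (\<lambda>b. addG b c1) S" using addG_inj[OF c1G] SG by (rule inj_on_subset)
    have img: "(\<lambda>b. addG b c1) ` S = S"
      by (rule endo_inj_surj[OF finS _ inj]) (auto intro: clos c1)
    have "(\<Sum>c\<in>S. chi al c) = (\<Sum>c\<in>(\<lambda>b. addG b c1) ` S. chi al c)" using img by simp
    also have "\<dots> = (\<Sum>c\<in>S. chi al (addG c c1))" by (rule sum.reindex[OF inj, unfolded o_def])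
    also have "\<dots> = (\<Sum>c\<in>S. chi al c) * chi al c1" by (simp add: chi_addG2 sum_distrib_right)
    finally have "(\<Sum>c\<in>S. chi al c) * (1 - chi al c1) = 0" by (simp add: algebra_simps)
    then show ?thesis using ne by simp
  qed
  have T: "al = zeroG" if al: "al \<in> GG" and t: "\<forall>c\<in>S. chi al c = 1" for al
  proof -
    have "gmon H g m al = (\<Sum>b\<in>GG. scal (chi al b) (I b))" by (rule gmon_expand)
    also have "\<dots> = (\<Sum>b\<in>GG. I b)"
    proof (rule sum.cong[OF refl])
      fix b assume "b \<in> GG"
      then show "scal (chi al b) (I b) = I b" using t by (cases "b \<in> S") (auto simp: S_def)
    qed
    also have "\<dots> = gmon H g m zeroG" by (simp add: idem_sum gmon_zero)
    finally show ?thesis using group_alg al zeroG_Gm by (auto dest: inj_onD)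
  qed
  have "(\<Sum>al\<in>GG. \<Sum>c\<in>S. chi al c) = (\<Sum>c\<in>S. \<Sum>al\<in>GG. inverse (chi zeroG al) * chi al c)"
    by (subst sum.swap) (simp add: chi_comm[of zeroG] chi_zero)
  also have "\<dots> = (\<Sum>c\<in>S. if zeroG = c then of_nat N ^ m else 0)"
    using SG by (intro sum.cong refl) (auto simp: charsum zeroG_Gm)
  also have "\<dots> = of_nat N ^ m" using zS finS by (simp add: sum.delta)
  finally have e1: "(\<Sum>al\<in>GG. \<Sum>c\<in>S. chi al c) = of_nat N ^ m" .
  have "(\<Sum>al\<in>GG. \<Sum>c\<in>S. chi al c) = (\<Sum>al\<in>GG. if al = zeroG then of_nat (card S) else 0)"
  proof (rule sum.cong[OF refl])
    fix al assume al: "al \<in> GG"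
    show "(\<Sum>c\<in>S. chi al c) = (if al = zeroG then of_nat (card S) else 0)"
    proof (cases "\<forall>c\<in>S. chi al c = 1")
      case True
      then have "al = zeroG" using T al by auto
      then show ?thesis using True by simp
    next
      case False
      then obtain c1 where "c1 \<in> S" "chi al c1 \<noteq> 1" by auto
      moreover have "al \<noteq> zeroG" using calculation by (auto simp: chi_comm[of zeroG] chi_zero)
      ultimately show ?thesis using csum[OF al] by auto
    qed
  qed
  also have "\<dots> = of_nat (card S)" by (simp add: sum_delta_G zeroG_Gm)
  finally have "of_nat (card S) = (of_nat N ^ m :: complex)" using e1 by simp
  then have "card S = N ^ m" by (metis of_nat_eq_iff of_nat_power)
  then have "S = GG" using card_subset_eq[OF finite_Gm SG] card_Gm by simp
  then show ?thesis using b by (auto simp: S_def)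
qed

end


lemma sum_if_const: "(\<Sum>x\<in>A. if P then f x else 0) = (if P then sum f A else 0)" by auto
lemma scal_if: "scal c (if P then x else 0) = (if P then scal c x else 0)" by simp
lemma sc2_if: "sc2 c (if P then x else 0) = (if P then sc2 c x else 0)" by simp
lemma sc3_if: "sc3 c (if P then x else 0) = (if P then sc3 c x else 0)" by simp
lemma tens_if: "tens (if P then x else 0) y = (if P then tens x y else 0)"
  "tens x (if P then y else 0) = (if P then tens x y else 0)" by simp_all
lemma tens3_if: "tens3 (if P then x else 0) y z = (if P then tens3 x y z else 0)"
  "tens3 x (if P then y else 0) z = (if P then tens3 x y z else 0)"
  "tens3 x y (if P then z else 0) = (if P then tens3 x y z else 0)" by simp_all
lemma ltens_if: "ltens (if P then x else 0) Y = (if P then ltens x Y else 0)"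
  "ltens x (if P then Y else 0) = (if P then ltens x Y else 0)" by simp_all
lemma rtens_if: "rtens (if P then Y else 0) x = (if P then rtens Y x else 0)"
  "rtens Y (if P then x else 0) = (if P then rtens Y x else 0)" by simp_all
lemma cop_r_sum: "cop_r H (sum f K) = (\<Sum>k\<in>K. cop_r H (f k))"
  by (rule add_sum[of "cop_r H"]) (simp_all add: cop_r_add, simp add: cop_r_def fun_eq_iff)
lemma cop_l_sum: "cop_l H (sum f K) = (\<Sum>k\<in>K. cop_l H (f k))"
  by (rule add_sum[of "cop_l H"]) (simp_all add: cop_l_add, simp add: cop_l_def fun_eq_iff)

context setting
begin

definition D1 :: "((nat \<Rightarrow> nat) \<Rightarrow> complex) \<Rightarrow> v1" where
  "D1 h = (\<Sum>b\<in>GG. scal (h b) (I b))"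
definition D2 :: "((nat \<Rightarrow> nat) \<Rightarrow> (nat \<Rightarrow> nat) \<Rightarrow> complex) \<Rightarrow> v2" where
  "D2 h = (\<Sum>b\<in>GG. \<Sum>c\<in>GG. sc2 (h b c) (tens (I b) (I c)))"
definition D3 :: "((nat \<Rightarrow> nat) \<Rightarrow> (nat \<Rightarrow> nat) \<Rightarrow> (nat \<Rightarrow> nat) \<Rightarrow> complex) \<Rightarrow> v3" where
  "D3 h = (\<Sum>b\<in>GG. \<Sum>c\<in>GG. \<Sum>d\<in>GG. sc3 (h b c d) (tens3 (I b) (I c) (I d)))"

lemma D1_V1: "D1 h \<in> V1 dH" by (simp add: D1_def V1_sum V1_scal idem_V1)
lemma D2_V2: "D2 h \<in> V2 dH" by (simp add: D2_def V2_sum V2_sc2 tens_V2 idem_V1)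
lemma D3_V3: "D3 h \<in> V3 dH" by (simp add: D3_def V3_sum V3_sc3 tens3_V3 idem_V1)

lemma sum_single_G: "b \<in> GG \<Longrightarrow> (\<And>x. x \<in> GG \<Longrightarrow> x \<noteq> b \<Longrightarrow> F x = 0) \<Longrightarrow> sum F GG = F b"
  by (metis (mono_tags, lifting) finite_Gm sum.remove sum.neutral DiffE insertCI add.right_neutral)

lemma ltens_mul_t3: "Y \<in> V2 dH \<Longrightarrow> y \<in> V1 dH \<Longrightarrow> z \<in> V1 dH \<Longrightarrow>
   mul3 H (ltens u Y) (tens3 x y z) = ltens (mul H u x) (mul2 H Y (tens y z))"
  using ltens_mul[of Y "tens y z" u x] by (simp add: tens_V2 ltens_tens)
lemma rtens_mul_t3: "Y \<in> V2 dH \<Longrightarrow> x \<in> V1 dH \<Longrightarrow> y \<in> V1 dH \<Longrightarrow>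
   mul3 H (rtens Y u) (tens3 x y z) = rtens (mul2 H Y (tens x y)) (mul H u z)"
  using rtens_mul[of Y "tens x y" u z] by (simp add: tens_V2 rtens_tens)

lemma orth0: "b \<in> GG \<Longrightarrow> b' \<in> GG \<Longrightarrow> b' \<noteq> b \<Longrightarrow> mul H (I b') (I b) = 0"
  by (simp add: idem_orth)
lemma orth1: "b \<in> GG \<Longrightarrow> mul H (I b) (I b) = I b"
  by (simp add: idem_orth)

lemma E1: "b \<in> GG \<Longrightarrow> mul H (D1 h) (I b) = scal (h b) (I b)"
  unfolding D1_def mul_sum_l mul_scal_l
  by (subst sum_single_G[of b]) (simp_all add: orth0 orth1)

lemma E2: assumes b: "b \<in> GG" and c: "c \<in> GG"
  shows "mul2 H (D2 h) (tens (I b) (I c)) = sc2 (h b c) (tens (I b) (I c))"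
proof -
  have "mul2 H (D2 h) (tens (I b) (I c)) =
     (\<Sum>b'\<in>GG. \<Sum>c'\<in>GG. sc2 (h b' c') (tens (mul H (I b') (I b)) (mul H (I c') (I c))))"
    by (simp add: D2_def mul2_sum_l mul2_sc2_l mul2_tens)
  also have "\<dots> = (\<Sum>c'\<in>GG. sc2 (h b c') (tens (mul H (I b) (I b)) (mul H (I c') (I c))))"
    by (rule sum_single_G[OF b]) (simp add: orth0 b)
  also have "\<dots> = sc2 (h b c) (tens (mul H (I b) (I b)) (mul H (I c) (I c)))"
    by (rule sum_single_G[OF c]) (simp add: orth0 c)
  finally show ?thesis by (simp add: orth1 b c)
qed

lemma E3: assumes b: "b \<in> GG" and c: "c \<in> GG" and d: "d \<in> GG"
  shows "mul3 H (D3 h) (tens3 (I b) (I c) (I d)) = sc3 (h b c d) (tens3 (I b) (I c) (I d))"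
proof -
  have "mul3 H (D3 h) (tens3 (I b) (I c) (I d)) =
     (\<Sum>b'\<in>GG. \<Sum>c'\<in>GG. \<Sum>d'\<in>GG. sc3 (h b' c' d') (tens3 (mul H (I b') (I b)) (mul H (I c') (I c)) (mul H (I d') (I d))))"
    by (simp add: D3_def mul3_sum_l mul3_sc3_l mul3_tens3)
  also have "\<dots> = (\<Sum>c'\<in>GG. \<Sum>d'\<in>GG. sc3 (h b c' d') (tens3 (mul H (I b) (I b)) (mul H (I c') (I c)) (mul H (I d') (I d))))"
    by (rule sum_single_G[OF b]) (simp add: orth0 b)
  also have "\<dots> = (\<Sum>d'\<in>GG. sc3 (h b c d') (tens3 (mul H (I b) (I b)) (mul H (I c) (I c)) (mul H (I d') (I d))))"
    by (rule sum_single_G[OF c]) (simp add: orth0 c)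
  also have "\<dots> = sc3 (h b c d) (tens3 (mul H (I b) (I b)) (mul H (I c) (I c)) (mul H (I d) (I d)))"
    by (rule sum_single_G[OF d]) (simp add: orth0 d)
  finally show ?thesis by (simp add: orth1 b c d)
qed

lemma D1_char: assumes X: "X \<in> V1 dH" and ev: "\<And>b. b \<in> GG \<Longrightarrow> mul H X (I b) = scal (h b) (I b)"
  shows "X = D1 h"
proof -
  have "X = mul H X (unt H)" by (simp add: mul_unt_r X)
  also have "\<dots> = D1 h" by (simp add: idem_sum[symmetric] mul_sum_r ev D1_def cong: sum.cong)
  finally show ?thesis .
qed

lemma D2_char: assumes X: "X \<in> V2 dH"
  and ev: "\<And>b c. b \<in> GG \<Longrightarrow> c \<in> GG \<Longrightarrow> mul2 H X (tens (I b) (I c)) = sc2 (h b c) (tens (I b) (I c))"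
  shows "X = D2 h"
proof -
  have "X = mul2 H X (one2 H)" by (simp add: mul2_one_r X)
  also have "\<dots> = D2 h" by (simp add: unt_tens_expand mul2_sum_r ev D2_def cong: sum.cong)
  finally show ?thesis .
qed

lemma one3_expand: "one3 H = (\<Sum>b\<in>GG. \<Sum>c\<in>GG. \<Sum>d\<in>GG. tens3 (I b) (I c) (I d))"
proof -
  have "one3 H = tens3 (\<Sum>b\<in>GG. I b) (\<Sum>c\<in>GG. I c) (\<Sum>d\<in>GG. I d)" by (simp add: one3_eq idem_sum)
  also have "\<dots> = (\<Sum>b\<in>GG. tens3 (I b) (\<Sum>c\<in>GG. I c) (\<Sum>d\<in>GG. I d))" by (rule tens3_sum_1)
  also have "\<dots> = (\<Sum>b\<in>GG. \<Sum>c\<in>GG. tens3 (I b) (I c) (\<Sum>d\<in>GG. I d))" by (simp only: tens3_sum_2)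
  also have "\<dots> = (\<Sum>b\<in>GG. \<Sum>c\<in>GG. \<Sum>d\<in>GG. tens3 (I b) (I c) (I d))" by (simp only: tens3_sum_3)
  finally show ?thesis .
qed

lemma D3_char: assumes X: "X \<in> V3 dH"
  and ev: "\<And>b c d. b \<in> GG \<Longrightarrow> c \<in> GG \<Longrightarrow> d \<in> GG \<Longrightarrow>
      mul3 H X (tens3 (I b) (I c) (I d)) = sc3 (h b c d) (tens3 (I b) (I c) (I d))"
  shows "X = D3 h"
proof -
  have "X = mul3 H X (one3 H)" by (simp add: mul3_one_r X)
  also have "\<dots> = D3 h" by (simp add: one3_expand mul3_sum_r ev D3_def cong: sum.cong)
  finally show ?thesis .
qed

lemma D1_mul: "mul H (D1 h) (D1 k) = D1 (\<lambda>b. h b * k b)"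
  by (rule D1_char) (simp_all add: mul_V1 mul_assoc D1_V1 idem_V1 E1 mul_scal_r scal_scal mult.commute)

lemma D2_mul: "mul2 H (D2 h) (D2 k) = D2 (\<lambda>b c. h b c * k b c)"
  by (rule D2_char) (simp_all add: mul2_V2 mul2_assoc D2_V2 tens_V2 idem_V1 E2 mul2_sc2_r sc2_sc2 mult.commute)

lemma D3_mul: "mul3 H (D3 h) (D3 k) = D3 (\<lambda>b c d. h b c d * k b c d)"
  by (rule D3_char) (simp_all add: mul3_V3 mul3_assoc D3_V3 tens3_V3 idem_V1 E3 mul3_sc3_r sc3_sc3 mult.commute)

lemma unt_D1: "unt H = D1 (\<lambda>_. 1)" by (simp add: D1_def idem_sum)
lemma one2_D2: "one2 H = D2 (\<lambda>_ _. 1)" by (simp add: D2_def unt_tens_expand)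
lemma one3_D3: "one3 H = D3 (\<lambda>_ _ _. 1)" by (simp add: D3_def one3_expand)

lemma sc2_inj: "sc2 c X = sc2 c' X \<Longrightarrow> X \<noteq> 0 \<Longrightarrow> c = c'"
proof -
  assume e: "sc2 c X = sc2 c' X" and "X \<noteq> 0"
  then obtain k l where "X k l \<noteq> 0" by (auto simp: fun_eq_iff)
  moreover have "c * X k l = c' * X k l" using e by (auto simp: sc2_def fun_eq_iff)
  ultimately show ?thesis by simp
qed
lemma sc3_inj: "sc3 c X = sc3 c' X \<Longrightarrow> X \<noteq> 0 \<Longrightarrow> c = c'"
proof -
  assume e: "sc3 c X = sc3 c' X" and "X \<noteq> 0"
  then obtain k l r where "X k l r \<noteq> 0" by (auto simp: fun_eq_iff)
  moreover have "c * X k l r = c' * X k l r" using e by (auto simp: sc3_def fun_eq_iff)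
  ultimately show ?thesis by simp
qed

lemma D2_inj: "D2 h = D2 k \<Longrightarrow> b \<in> GG \<Longrightarrow> c \<in> GG \<Longrightarrow> h b c = k b c"
  by (metis E2 sc2_inj tens_nz idem_nz)
lemma D3_inj: "D3 h = D3 k \<Longrightarrow> b \<in> GG \<Longrightarrow> c \<in> GG \<Longrightarrow> d \<in> GG \<Longrightarrow> h b c d = k b c d"
  by (metis E3 sc3_inj tens3_nz idem_nz)

lemma tens_D1: "tens (D1 h) (D1 k) = D2 (\<lambda>b c. h b * k c)"
proof -
  have "tens (D1 h) (D1 k) = (\<Sum>b\<in>GG. tens (scal (h b) (I b)) (D1 k))" unfolding D1_def[of h] by (rule tens_sum_l)
  also have "\<dots> = (\<Sum>b\<in>GG. \<Sum>c\<in>GG. tens (scal (h b) (I b)) (scal (k c) (I c)))"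
    unfolding D1_def by (simp only: tens_sum_r)
  also have "\<dots> = D2 (\<lambda>b c. h b * k c)" by (simp add: D2_def tens_scal_l tens_scal_r sc2_sc2 mult.commute)
  finally show ?thesis .
qed

lemma lone_D2: "lone H (D2 h) = D3 (\<lambda>b c d. h c d)"
proof (rule D3_char)
  show "lone H (D2 h) \<in> V3 dH" by (simp add: lone_V3 D2_V2)
  fix b c d assume b: "b \<in> GG" and c: "c \<in> GG" and d: "d \<in> GG"
  have "mul3 H (lone H (D2 h)) (tens3 (I b) (I c) (I d)) = mul3 H (ltens (unt H) (D2 h)) (ltens (I b) (tens (I c) (I d)))"
    by (simp add: lone_eq ltens_tens)
  also have "\<dots> = ltens (mul H (unt H) (I b)) (mul2 H (D2 h) (tens (I c) (I d)))"
    by (rule ltens_mul[OF D2_V2 tens_V2[OF idem_V1 idem_V1]])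
  also have "\<dots> = sc3 (h c d) (tens3 (I b) (I c) (I d))"
    by (simp add: idem_V1 mul_unt_l E2 c d ltens_sc2_r ltens_tens)
  finally show "mul3 H (lone H (D2 h)) (tens3 (I b) (I c) (I d)) = sc3 (h c d) (tens3 (I b) (I c) (I d))" .
qed

lemma rone_D2: "rone H (D2 h) = D3 (\<lambda>b c d. h b c)"
proof (rule D3_char)
  show "rone H (D2 h) \<in> V3 dH" by (simp add: rone_V3 D2_V2)
  fix b c d assume b: "b \<in> GG" and c: "c \<in> GG" and d: "d \<in> GG"
  have "mul3 H (rone H (D2 h)) (tens3 (I b) (I c) (I d)) = mul3 H (rtens (D2 h) (unt H)) (rtens (tens (I b) (I c)) (I d))"
    by (simp add: rone_eq rtens_tens)
  also have "\<dots> = rtens (mul2 H (D2 h) (tens (I b) (I c))) (mul H (unt H) (I d))"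
    by (rule rtens_mul[OF D2_V2 tens_V2[OF idem_V1 idem_V1]])
  also have "\<dots> = sc3 (h b c) (tens3 (I b) (I c) (I d))"
    by (simp add: idem_V1 mul_unt_l E2 b c rtens_sc2_l rtens_tens)
  finally show "mul3 H (rone H (D2 h)) (tens3 (I b) (I c) (I d)) = sc3 (h b c) (tens3 (I b) (I c) (I d))" .
qed

lemma cop_r_D2: "cop_r H (D2 h) = D3 (\<lambda>b c d. h b (addG c d))"
proof (rule D3_char)
  show "cop_r H (D2 h) \<in> V3 dH" by (simp add: cop_r_V3)
  fix b c d assume b: "b \<in> GG" and c: "c \<in> GG" and d: "d \<in> GG"
  have cd: "addG c d \<in> GG" by (rule addG_Gm)
  have "mul3 H (cop_r H (D2 h)) (tens3 (I b) (I c) (I d)) =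
     (\<Sum>b'\<in>GG. \<Sum>c'\<in>GG. sc3 (h b' c') (ltens (mul H (I b') (I b)) (mul2 H (cop H (I c')) (tens (I c) (I d)))))"
    by (simp add: D2_def cop_r_sum cop_r_sc2 cop_r_tens idem_V1 mul3_sum_l mul3_sc3_l ltens_mul_t3 cop_V2)
  also have "\<dots> = (\<Sum>c'\<in>GG. sc3 (h b c') (ltens (mul H (I b) (I b)) (mul2 H (cop H (I c')) (tens (I c) (I d)))))"
    by (rule sum_single_G[OF b]) (simp add: orth0 b)
  also have "\<dots> = sc3 (h b (addG c d)) (ltens (mul H (I b) (I b)) (mul2 H (cop H (I (addG c d))) (tens (I c) (I d))))"
    by (rule sum_single_G[OF cd]) (simp add: cop_idem_eig c d)
  also have "\<dots> = sc3 (h b (addG c d)) (tens3 (I b) (I c) (I d))"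
    by (simp add: orth1 b cop_idem_eig c d cd ltens_tens)
  finally show "mul3 H (cop_r H (D2 h)) (tens3 (I b) (I c) (I d)) = sc3 (h b (addG c d)) (tens3 (I b) (I c) (I d))" .
qed

lemma cop_l_D2: "cop_l H (D2 h) = D3 (\<lambda>b c d. h (addG b c) d)"
proof (rule D3_char)
  show "cop_l H (D2 h) \<in> V3 dH" by (simp add: cop_l_V3)
  fix b c d assume b: "b \<in> GG" and c: "c \<in> GG" and d: "d \<in> GG"
  have bc: "addG b c \<in> GG" by (rule addG_Gm)
  have "mul3 H (cop_l H (D2 h)) (tens3 (I b) (I c) (I d)) =
     (\<Sum>b'\<in>GG. \<Sum>c'\<in>GG. sc3 (h b' c') (rtens (mul2 H (cop H (I b')) (tens (I b) (I c))) (mul H (I c') (I d))))"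
    by (simp add: D2_def cop_l_sum cop_l_sc2 cop_l_tens idem_V1 mul3_sum_l mul3_sc3_l rtens_mul_t3 cop_V2)
  also have "\<dots> = (\<Sum>c'\<in>GG. sc3 (h (addG b c) c') (rtens (mul2 H (cop H (I (addG b c))) (tens (I b) (I c))) (mul H (I c') (I d))))"
    by (rule sum_single_G[OF bc]) (simp add: cop_idem_eig b c)
  also have "\<dots> = sc3 (h (addG b c) d) (rtens (mul2 H (cop H (I (addG b c))) (tens (I b) (I c))) (mul H (I d) (I d)))"
    by (rule sum_single_G[OF d]) (simp add: orth0 d)
  also have "\<dots> = sc3 (h (addG b c) d) (tens3 (I b) (I c) (I d))"
    by (simp add: orth1 d cop_idem_eig b c bc rtens_tens)
  finally show "mul3 H (cop_l H (D2 h)) (tens3 (I b) (I c) (I d)) = sc3 (h (addG b c) d) (tens3 (I b) (I c) (I d))" .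
qed

lemma inv2_D2:
  assumes nz: "\<And>b c. b \<in> GG \<Longrightarrow> c \<in> GG \<Longrightarrow> h b c \<noteq> 0"
  shows "inv2 H (D2 h) = D2 (\<lambda>b c. inverse (h b c))"
proof -
  let ?Y = "D2 (\<lambda>b c. inverse (h b c))"
  have p1: "mul2 H (D2 h) ?Y = one2 H"
  proof -
    have "mul2 H (D2 h) ?Y = D2 (\<lambda>b c. h b c * inverse (h b c))" by (rule D2_mul)
    also have "\<dots> = D2 (\<lambda>_ _. 1)" unfolding D2_def by (intro sum.cong refl) (simp add: nz)
    finally show ?thesis by (simp add: one2_D2)
  qed
  have p2: "mul2 H ?Y (D2 h) = one2 H"
  proof -
    have "mul2 H ?Y (D2 h) = D2 (\<lambda>b c. inverse (h b c) * h b c)" by (rule D2_mul)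
    also have "\<dots> = D2 (\<lambda>_ _. 1)" unfolding D2_def by (intro sum.cong refl) (simp add: nz)
    finally show ?thesis by (simp add: one2_D2)
  qed
  show ?thesis unfolding inv2_def
  proof (rule the_equality)
    show "(\<forall>i j. dH \<le> i \<or> dH \<le> j \<longrightarrow> ?Y i j = 0) \<and> mul2 H (D2 h) ?Y = one2 H \<and> mul2 H ?Y (D2 h) = one2 H"
      using D2_V2 p1 p2 by (simp add: V2_def)
  next
    fix Y assume Y: "(\<forall>i j. dH \<le> i \<or> dH \<le> j \<longrightarrow> Y i j = 0) \<and> mul2 H (D2 h) Y = one2 H \<and> mul2 H Y (D2 h) = one2 H"
    then have YV: "Y \<in> V2 dH" by (simp add: V2_def)
    have "Y = mul2 H Y (mul2 H (D2 h) ?Y)" using p1 by (simp add: mul2_one_r YV)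
    also have "\<dots> = mul2 H (mul2 H Y (D2 h)) ?Y" by (simp add: mul2_assoc YV D2_V2)
    also have "\<dots> = ?Y" using Y by (simp add: mul2_one_l D2_V2)
    finally show "Y = ?Y" .
  qed
qed

end


lemma prod_single: "finite A \<Longrightarrow> i \<in> A \<Longrightarrow> (\<And>x. x \<in> A \<Longrightarrow> x \<noteq> i \<Longrightarrow> F x = 1) \<Longrightarrow> prod F A = F i"
  by (metis (mono_tags, lifting) prod.remove prod.neutral DiffE insertCI mult.right_neutral)

lemma mod_cong_int: assumes "(x::int) mod M = y mod M" shows "(c * x) mod M = (c * y) mod M"
proof -
  from assms have "M dvd x - y" by (simp add: mod_eq_dvd_iff)
  then have "M dvd c * (x - y)" by (rule dvd_mult)
  then show ?thesis by (simp add: mod_eq_dvd_iff right_diff_distrib)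
qed

context grp
begin

definition fl :: "nat \<Rightarrow> nat" where "fl y = y - y mod n"
definition carry :: "nat \<Rightarrow> nat \<Rightarrow> nat" where "carry x y = (if n \<le> x mod n + y mod n then 1 else 0)"

lemma n_dvd_N: "n dvd N" by (simp add: NN_def power2_eq_square)

lemma int_fl: "int (fl y) = int y - int (y mod n)" by (simp add: fl_def of_nat_diff)

lemma mod_n_sum: "(x + y) mod n = x mod n + y mod n - n * carry x y"
proof -
  have r: "x mod n < n" "y mod n < n" using n_pos by auto
  have "(x + y) mod n = (x mod n + y mod n) mod n" by (simp add: mod_add_eq)
  also have "\<dots> = x mod n + y mod n - n * carry x y"
  proof (cases "n \<le> x mod n + y mod n")
    case True
    have "(x mod n + y mod n) mod n = (x mod n + y mod n - n) mod n" using True by (simp add: le_mod_geq)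
    also have "\<dots> = x mod n + y mod n - n" using r by (intro mod_less) linarith
    finally show ?thesis using True by (simp add: carry_def)
  next
    case False then show ?thesis by (simp add: carry_def)
  qed
  finally show ?thesis .
qed

lemma carry_le: "n * carry x y \<le> x mod n + y mod n" by (simp add: carry_def)

lemma fl_carry: "(int (fl ((x + y) mod N)) - int (fl x) - int (fl y)) mod int N = int (n * carry x y) mod int N"
proof -
  have mm: "((x + y) mod N) mod n = (x + y) mod n" using n_dvd_N by (simp add: mod_mod_cancel)
  have "int (fl ((x + y) mod N)) - int (fl x) - int (fl y) =
      int ((x + y) mod N) - int ((x + y) mod n) - (int x - int (x mod n)) - (int y - int (y mod n))"
    by (simp add: int_fl mm)
  also have "\<dots> = int ((x + y) mod N) - (int x + int y) + int (n * carry x y)"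
    using carry_le[of x y] by (simp add: mod_n_sum of_nat_diff)
  also have "int ((x + y) mod N) = (int x + int y) - int N * ((int x + int y) div int N)"
    by (metis zmod_int of_nat_add minus_div_mult_eq_mod mult.commute)
  finally have E: "int (fl ((x + y) mod N)) - int (fl x) - int (fl y) = int (n * carry x y) + (- ((int x + int y) div int N)) * int N"
    by (simp add: algebra_simps)
  show ?thesis unfolding E by (rule mod_mult_self1)
qed

lemma kG1_Gm: "kG 1 i \<in> GG" "kG (Suc 0) i \<in> GG" using N_gt1 kG_Gm by auto

lemma fl_small: "k < n \<Longrightarrow> fl k = 0" by (simp add: fl_def)
lemma fl_n: "fl n = n" by (simp add: fl_def)

definition per1 :: "((nat \<Rightarrow> nat) \<Rightarrow> complex) \<Rightarrow> bool" where
  "per1 h \<longleftrightarrow> (\<forall>b\<in>GG. h (red b) = h b)"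
definition per2 :: "((nat \<Rightarrow> nat) \<Rightarrow> (nat \<Rightarrow> nat) \<Rightarrow> complex) \<Rightarrow> bool" where
  "per2 h \<longleftrightarrow> (\<forall>b\<in>GG. \<forall>c\<in>GG. h (red b) (red c) = h b c)"
definition per3 :: "((nat \<Rightarrow> nat) \<Rightarrow> (nat \<Rightarrow> nat) \<Rightarrow> (nat \<Rightarrow> nat) \<Rightarrow> complex) \<Rightarrow> bool" where
  "per3 h \<longleftrightarrow> (\<forall>b\<in>GG. \<forall>c\<in>GG. \<forall>d\<in>GG. h (red b) (red c) (red d) = h b c d)"

lemma Q_n_mod: "Q (int n * z) = Q (int n * (z mod int n))"
proof (rule Q_cong)
  have e: "z = z mod int n + int n * (z div int n)" by simp
  have "int n * z = int n * (z mod int n + int n * (z div int n))" by simp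
  also have "\<dots> = int n * (z mod int n) + int n * int n * (z div int n)"
    by (simp only: distrib_left mult.assoc)
  finally have "int n * z = int n * (z mod int n) + int n * int n * (z div int n)" .
  then have "int n * z = int n * (z mod int n) + int N * (z div int n)"
    by (simp add: NN_def power2_eq_square)
  then show "int n * z mod int N = int n * (z mod int n) mod int N" by simp
qed

lemma carry_red: "carry (x mod n) (y mod n) = carry x y" by (simp add: carry_def)

end

context setting
begin

definition cJ :: "(nat \<Rightarrow> nat) \<Rightarrow> (nat \<Rightarrow> nat) \<Rightarrow> complex" where
  "cJ b c = (\<Prod>i<m. \<Prod>j<m. cpow q n (b i) (c j) (a i j))"

lemma cpow_Q: "cpow q n z y k = Q (- (int k * int z * int (fl y)))"
  by (simp add: cpow_def Q_inv_pow fl_def of_nat_diff mult.assoc)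

lemma cJ_eq: "cJ b c = (\<Prod>i<m. \<Prod>j<m. Q (- (int (a i j) * int (b i) * int (fl (c j)))))"
  by (simp add: cJ_def cpow_Q)

lemma cJ_nz: "cJ b c \<noteq> 0" by (simp add: cJ_eq Q_nz)

lemma Jel_D2: "Jel H q n m a g = D2 cJ"
  by (simp add: Jel_def D2_def fun_eq_iff sum_fun_app sc2_def tens_def cJ_def mult.assoc)

lemma cJ_add1: "cJ (addG b c) d = cJ b d * cJ c d"
proof -
  have "cJ (addG b c) d = (\<Prod>i<m. \<Prod>j<m. Q (- (int (a i j) * int (b i) * int (fl (d j)))) * Q (- (int (a i j) * int (c i) * int (fl (d j)))))"
    unfolding cJ_eq
  proof (intro prod.cong refl)
    fix i j assume i: "i \<in> {..<m}"
    have "Q (- (int (a i j) * int (addG b c i) * int (fl (d j)))) = Q (- (int (a i j) * (int (b i) + int (c i)) * int (fl (d j))))"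
    proof (rule Q_cong)
      have "int (addG b c i) = (int (b i) + int (c i)) mod int N" using i by (simp add: addG_app zmod_int)
      then have "int (addG b c i) mod int N = (int (b i) + int (c i)) mod int N" by simp
      from mod_cong_int[OF this, of "- (int (a i j) * int (fl (d j)))"]
      show "- (int (a i j) * int (addG b c i) * int (fl (d j))) mod int N =
                 - (int (a i j) * (int (b i) + int (c i)) * int (fl (d j))) mod int N"
        by (simp add: algebra_simps)
    qed
    then show "Q (- (int (a i j) * int (addG b c i) * int (fl (d j)))) =
      Q (- (int (a i j) * int (b i) * int (fl (d j)))) * Q (- (int (a i j) * int (c i) * int (fl (d j))))"
      by (simp add: Q_add[symmetric] algebra_simps)
  qed
  then show ?thesis by (simp add: cJ_eq prod.distrib)
qed

definition W :: "(nat \<Rightarrow> nat) \<Rightarrow> (nat \<Rightarrow> nat) \<Rightarrow> (nat \<Rightarrow> nat) \<Rightarrow> complex" where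
  "W b c d = cJ b (addG c d) * inverse (cJ b c) * inverse (cJ b d)"

lemma W_closed:
  assumes c: "c \<in> GG" and d: "d \<in> GG"
  shows "W b c d = (\<Prod>i<m. \<Prod>j<m. Q (- (int (a i j) * int (b i) * int (n * carry (c j) (d j)))))"
proof -
  have "W b c d = (\<Prod>i<m. \<Prod>j<m. Q (- (int (a i j) * int (b i) * int (fl (addG c d j))))
      * inverse (Q (- (int (a i j) * int (b i) * int (fl (c j))))) * inverse (Q (- (int (a i j) * int (b i) * int (fl (d j))))))"
    by (simp add: W_def cJ_eq prod.distrib prod_inv)
  also have "\<dots> = (\<Prod>i<m. \<Prod>j<m. Q (- (int (a i j) * int (b i) * int (n * carry (c j) (d j)))))"
  proof (intro prod.cong refl)
    fix i j assume j: "j \<in> {..<m}"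
    let ?k = "int (a i j) * int (b i)"
    have "Q (- (?k * int (fl (addG c d j)))) * inverse (Q (- (?k * int (fl (c j))))) * inverse (Q (- (?k * int (fl (d j)))))
        = Q (- (?k * (int (fl ((c j + d j) mod N)) - int (fl (c j)) - int (fl (d j)))))"
      using j by (simp add: Q_neg[symmetric] Q_add[symmetric] addG_app algebra_simps)
    also have "\<dots> = Q (- (?k * int (n * carry (c j) (d j))))"
      by (rule Q_cong) (use mod_cong_int[OF fl_carry, of "- ?k" "c j" "d j"] in simp)
    finally show "Q (- (?k * int (fl (addG c d j)))) * inverse (Q (- (?k * int (fl (c j))))) * inverse (Q (- (?k * int (fl (d j)))))
        = Q (- (?k * int (n * carry (c j) (d j))))" .
  qed
  finally show ?thesis .
qed

lemma W_per: "per3 W"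
  unfolding per3_def
proof (intro ballI)
  fix b c d assume b: "b \<in> GG" and c: "c \<in> GG" and d: "d \<in> GG"
  show "W (red b) (red c) (red d) = W b c d"
    unfolding W_closed[OF red_Gm red_Gm] W_closed[OF c d]
  proof (intro prod.cong refl)
    fix i j assume i: "i \<in> {..<m}" and j: "j \<in> {..<m}"
    have "Q (- (int (a i j) * int (b i mod n) * int (n * carry (c j) (d j)))) =
          Q (int n * (- (int (a i j) * int (carry (c j) (d j))) * int (b i mod n)))"
      by (simp add: algebra_simps)
    also have "\<dots> = Q (int n * (- (int (a i j) * int (carry (c j) (d j))) * int (b i)))"
    proof -
      have "int (b i mod n) mod int n = int (b i) mod int n" by (simp add: zmod_int)
      from mod_cong_int[OF this, of "- (int (a i j) * int (carry (c j) (d j)))"]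
      have "(- (int (a i j) * int (carry (c j) (d j))) * int (b i mod n)) mod int n =
            (- (int (a i j) * int (carry (c j) (d j))) * int (b i)) mod int n" .
      then show ?thesis by (metis Q_n_mod mult.assoc)
    qed
    finally show "Q (- (int (a i j) * int (red b i) * int (n * carry (red c j) (red d j)))) =
          Q (- (int (a i j) * int (b i) * int (n * carry (c j) (d j))))"
      using i j by (simp add: red_app carry_red algebra_simps)
  qed
qed

lemma PhiJ_D3: "PhiJ H (Jel H q n m a g) = D3 W"
proof -
  have inv: "inv2 H (D2 cJ) = D2 (\<lambda>b c. inverse (cJ b c))"
    by (simp add: inv2_D2 cJ_nz)
  have "PhiJ H (Jel H q n m a g) = D3 (\<lambda>b c d. cJ c d * cJ b (addG c d) * inverse (cJ (addG b c) d) * inverse (cJ b c))"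
    by (simp add: PhiJ_def inv Jel_D2 lone_D2 rone_D2 cop_r_D2 cop_l_D2 D3_mul)
  also have "\<dots> = D3 W"
    unfolding D3_def
    by (intro sum.cong refl) (simp add: W_def cJ_add1 cJ_nz field_simps)
  finally show ?thesis .
qed

lemma W_spec:
  assumes i: "i < m" and k: "k < n"
  shows "W (kG 1 i) (kG k i) (kG 1 i) = (if k = n - 1 then Q (- (int (a i i) * int n)) else 1)"
proof -
  have kN: "k < N" "1 < N" using k n_lt_N N_gt1 by auto
  have "W (kG 1 i) (kG k i) (kG 1 i) = (\<Prod>i'<m. \<Prod>j<m. Q (- (int (a i' j) * int (kG 1 i i') * int (n * carry (kG k i j) (kG 1 i j)))))"
    by (rule W_closed) (simp_all add: kG_Gm kN kG1_Gm)
  also have "\<dots> = (\<Prod>j<m. Q (- (int (a i j) * int (n * carry (kG k i j) (kG 1 i j)))))"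
    by (subst prod_single[of _ i]) (simp_all add: i kG_app Q_def)
  also have "\<dots> = Q (- (int (a i i) * int (n * carry k 1)))"
    by (subst prod_single[of _ i]) (simp_all add: i kG_app carry_def Q_def)
  also have "\<dots> = (if k = n - 1 then Q (- (int (a i i) * int n)) else 1)"
  proof -
    have "n \<le> k mod n + 1 mod n \<longleftrightarrow> k = n - 1" using k n2 by auto
    then show ?thesis by (simp add: carry_def)
  qed
  finally show ?thesis .
qed

lemma Qan_ne1: assumes "a i i mod n \<noteq> 0" shows "Q (- (int (a i i) * int n)) \<noteq> 1"
proof
  assume "Q (- (int (a i i) * int n)) = 1"
  then have "int N dvd (- (int (a i i) * int n))" by (simp add: Q_eq_1)
  then have "int n * int n dvd int (a i i) * int n" by (simp add: NN_def power2_eq_square)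
  then have "int n dvd int (a i i)" using n_pos by (metis dvd_mult_cancel_right mult_cancel_right of_nat_0_less_iff less_irrefl)
  then show False using assms by (simp add: dvd_eq_mod_eq_0[symmetric] of_nat_dvd_iff)
qed

lemma part1:
  assumes i: "i < m" and ai: "a i i mod n \<noteq> 0"
  shows "PhiJ H (Jel H q n m a g) \<noteq> one3 H"
proof
  assume "PhiJ H (Jel H q n m a g) = one3 H"
  then have "D3 W = D3 (\<lambda>_ _ _. 1)" by (simp add: PhiJ_D3 one3_D3)
  moreover have "kG 1 i \<in> GG" "kG (n - 1) i \<in> GG" using N_gt1 n_lt_N by (simp_all add: kG_Gm)
  ultimately have "W (kG 1 i) (kG (n - 1) i) (kG 1 i) = 1" by (metis D3_inj)
  moreover have "n - 1 < n" using n_pos by simp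
  ultimately show False using W_spec[OF i, of "n - 1"] Qan_ne1[OF ai] by simp
qed

end


inductive_set T2i :: "v1 set \<Rightarrow> v2 set" for S where
  T2z: "0 \<in> T2i S"
| T2t: "x \<in> S \<Longrightarrow> y \<in> S \<Longrightarrow> tens x y \<in> T2i S"
| T2a: "X \<in> T2i S \<Longrightarrow> Y \<in> T2i S \<Longrightarrow> X + Y \<in> T2i S"

inductive_set T3i :: "v1 set \<Rightarrow> v3 set" for S where
  T3z: "0 \<in> T3i S"
| T3t: "x \<in> S \<Longrightarrow> y \<in> S \<Longrightarrow> z \<in> S \<Longrightarrow> tens3 x y z \<in> T3i S"
| T3a: "X \<in> T3i S \<Longrightarrow> Y \<in> T3i S \<Longrightarrow> X + Y \<in> T3i S"

lemma z2: "(\<lambda>a b. 0::complex) = (0::v2)" by (simp add: fun_eq_iff)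
lemma z3: "(\<lambda>a b c. 0::complex) = (0::v3)" by (simp add: fun_eq_iff)
lemma p2: "(\<lambda>a b. X a b + Y a b) = (X + Y :: v2)" by (simp add: fun_eq_iff)
lemma p3: "(\<lambda>a b c. X a b c + Y a b c) = (X + Y :: v3)" by (simp add: fun_eq_iff)

lemma T2_sum: "(\<And>k. k \<in> K \<Longrightarrow> f k \<in> T2i S) \<Longrightarrow> sum f K \<in> T2i S"
  by (induction K rule: infinite_finite_induct) (auto intro: T2i.intros)
lemma T3_sum: "(\<And>k. k \<in> K \<Longrightarrow> f k \<in> T3i S) \<Longrightarrow> sum f K \<in> T3i S"
  by (induction K rule: infinite_finite_induct) (auto intro: T3i.intros)

context setting
begin

abbreviation "AA \<equiv> alg_gen H ({pw H (g i) n | i. i < m} \<union> {e i | i. i < m})"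

lemma AA_S: "{pw H (g i) n | i. i < m} \<union> {e i | i. i < m} \<subseteq> V1 dH"
  using pw_V1 e_V1 by auto
lemma AA_V1: "x \<in> AA \<Longrightarrow> x \<in> V1 dH" using ag_V1[OF AA_S] by blast
lemma unt_AA: "unt H \<in> AA" by (rule alg_gen.unit)
lemma e_AA: "i < m \<Longrightarrow> e i \<in> AA" by (auto intro: alg_gen.gen)
lemma pwn_AA: "i < m \<Longrightarrow> pw H (g i) n \<in> AA" by (auto intro: alg_gen.gen)
lemma mul_AA: "x \<in> AA \<Longrightarrow> y \<in> AA \<Longrightarrow> mul H x y \<in> AA" by (rule alg_gen.mult)

lemma T2_sc2: "X \<in> T2i AA \<Longrightarrow> sc2 c X \<in> T2i AA"
proof (induction rule: T2i.induct)
  case T2z then show ?case by (simp only: sc2_zero) (rule T2i.T2z)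
next
  case (T2t x y) then show ?case by (simp only: tens_scal_l[symmetric]) (rule T2i.T2t[OF ag_scal])
next
  case (T2a X Y) then show ?case by (simp only: sc2_add) (rule T2i.T2a)
qed

lemma T3_sc3: "X \<in> T3i AA \<Longrightarrow> sc3 c X \<in> T3i AA"
proof (induction rule: T3i.induct)
  case T3z then show ?case by (simp only: sc3_zero) (rule T3i.T3z)
next
  case (T3t x y z) then show ?case by (simp only: tens3_scal_1[symmetric]) (rule T3i.T3t[OF ag_scal])
next
  case (T3a X Y) then show ?case by (simp only: sc3_add) (rule T3i.T3a)
qed

lemma T2_V2: "X \<in> T2i AA \<Longrightarrow> X \<in> V2 dH"
proof (induction rule: T2i.induct)
  case T2z then show ?case by (rule V2_zero)
next
  case (T2t x y) then show ?case by (simp add: tens_V2 AA_V1)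
next
  case (T2a X Y) show ?case by (rule V2_add[OF T2a.IH])
qed
lemma T3_V3: "X \<in> T3i AA \<Longrightarrow> X \<in> V3 dH"
proof (induction rule: T3i.induct)
  case T3z then show ?case by (rule V3_zero)
next
  case (T3t x y z) then show ?case by (simp add: tens3_V3 AA_V1)
next
  case (T3a X Y) show ?case by (rule V3_add[OF T3a.IH])
qed

lemma T2_mul: assumes X: "X \<in> T2i AA" and Y: "Y \<in> T2i AA" shows "mul2 H X Y \<in> T2i AA"
  using X
proof (induction rule: T2i.induct)
  case T2z then show ?case by (simp only: mul2_zero) (rule T2i.T2z)
next
  case (T2t x y)
  have o: "x \<in> AA" "y \<in> AA" using T2t by auto
  show ?case using Y
  proof (induction rule: T2i.induct)
    case T2z then show ?case by (simp only: mul2_zero) (rule T2i.T2z)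
  next
    case (T2t x' y') then show ?case using o by (simp only: mul2_tens) (rule T2i.T2t; rule mul_AA)
  next
    case (T2a X' Y') then show ?case by (simp only: mul2_add_r) (rule T2i.T2a)
  qed
next
  case (T2a X1 X2) then show ?case by (simp only: mul2_add_l) (rule T2i.T2a)
qed

lemma T3_mul: assumes X: "X \<in> T3i AA" and Y: "Y \<in> T3i AA" shows "mul3 H X Y \<in> T3i AA"
  using X
proof (induction rule: T3i.induct)
  case T3z then show ?case by (simp only: mul3_zero) (rule T3i.T3z)
next
  case (T3t x y z)
  have o: "x \<in> AA" "y \<in> AA" "z \<in> AA" using T3t by auto
  show ?case using Y
  proof (induction rule: T3i.induct)
    case T3z then show ?case by (simp only: mul3_zero) (rule T3i.T3z)
  next
    case (T3t x' y' z') then show ?case using o by (simp only: mul3_tens3) (rule T3i.T3t; rule mul_AA)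
  next
    case (T3a X' Y') then show ?case by (simp only: mul3_add_r) (rule T3i.T3a)
  qed
next
  case (T3a X1 X2) then show ?case by (simp only: mul3_add_l) (rule T3i.T3a)
qed

lemma ltens_T3: assumes x: "x \<in> AA" and Y: "Y \<in> T2i AA" shows "ltens x Y \<in> T3i AA"
  using Y
proof (induction rule: T2i.induct)
  case T2z then show ?case by (simp only: ltens_zero) (rule T3i.T3z)
next
  case (T2t y z) then show ?case using x by (simp only: ltens_tens) (rule T3i.T3t)
next
  case (T2a X Y) then show ?case by (simp only: ltens_add_r) (rule T3i.T3a)
qed
lemma rtens_T3: assumes x: "x \<in> AA" and Y: "Y \<in> T2i AA" shows "rtens Y x \<in> T3i AA"
  using Y
proof (induction rule: T2i.induct)
  case T2z then show ?case by (simp only: rtens_zero) (rule T3i.T3z)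
next
  case (T2t y z) then show ?case using x by (simp only: rtens_tens) (rule T3i.T3t)
next
  case (T2a X Y) then show ?case by (simp only: rtens_add_l) (rule T3i.T3a)
qed

lemma tens2_T2: "X \<in> tens2 AA \<Longrightarrow> X \<in> T2i AA"
proof -
  assume "X \<in> tens2 AA"
  then obtain xs where xs: "set xs \<subseteq> AA \<times> AA" and X: "X = (\<lambda>i j. sum_list (map (\<lambda>(x, y). x i * y j) xs))"
    by (auto simp: tens2_def)
  have "set xs \<subseteq> AA \<times> AA \<Longrightarrow> (\<lambda>i j. sum_list (map (\<lambda>(x, y). x i * y j) xs)) \<in> T2i AA"
  proof (induction xs)
    case Nil
    have e: "(\<lambda>i j. sum_list (map (\<lambda>(x, y). x i * y j) ([]::(v1 \<times> v1) list))) = (0::v2)" by (simp add: fun_eq_iff)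
    show ?case by (subst e) (rule T2i.T2z)
  next
    case (Cons p xs)
    obtain x y where p: "p = (x, y)" by (cases p)
    have eq: "(\<lambda>i j. sum_list (map (\<lambda>(x, y). x i * y j) (p # xs))) =
          tens x y + (\<lambda>i j. sum_list (map (\<lambda>(x, y). x i * y j) xs))"
      by (simp add: p tens_def fun_eq_iff)
    have hx: "x \<in> AA" "y \<in> AA" using Cons.prems p by auto
    have ih: "(\<lambda>i j. sum_list (map (\<lambda>(x, y). x i * y j) xs)) \<in> T2i AA" using Cons by auto
    show ?case by (subst eq) (rule T2i.T2a[OF T2i.T2t[OF hx] ih])
  qed
  then show ?thesis using xs X by simp
qed

lemma red_red: "red (red b) = red b" by (simp add: red_def restrict_def fun_eq_iff)

lemma red_shift: assumes j: "j < m" shows "red (addG b (kG n j)) = red b"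
proof -
  have "((b i + (if i = j then n else 0)) mod N) mod n = b i mod n" for i
    using n_dvd_N by (simp add: mod_mod_cancel)
  then show ?thesis by (simp add: red_def addG_def kG_def restrict_def fun_eq_iff)
qed

lemma chi_kGn: "j < m \<Longrightarrow> chi (kG n j) al = Q (int n * int (al j))"
proof -
  assume j: "j < m"
  have "chi (kG n j) al = (\<Prod>i<m. if i = j then Q (int n * int (al j)) else 1)"
    unfolding chi_def by (rule prod.cong) (auto simp: kG_app)
  also have "\<dots> = Q (int n * int (al j))" using j by (simp add: prod.delta)
  finally show ?thesis .
qed

lemma coef_vanish:
  assumes h: "per1 h" and al: "al \<in> GG" and j: "j < m" and nd: "\<not> n dvd al j"
  shows "(\<Sum>b\<in>GG. h b * inverse (chi b al)) = 0"
proof -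
  let ?s = "kG n j"
  have s: "?s \<in> GG" using n_lt_N by (simp add: kG_Gm)
  have hp: "\<And>b. b \<in> GG \<Longrightarrow> h (red b) = h b" using h by (simp add: per1_def)
  let ?c = "(\<Sum>b\<in>GG. h b * inverse (chi b al))"
  have "?c = (\<Sum>b\<in>GG. h (addG b ?s) * inverse (chi (addG b ?s) al))"
    by (rule sum_shift[OF s, symmetric])
  also have "\<dots> = (\<Sum>b\<in>GG. h b * inverse (chi b al) * inverse (chi ?s al))"
  proof (rule sum.cong[OF refl])
    fix b assume b: "b \<in> GG"
    have "h (addG b ?s) = h (red (addG b ?s))" using hp[OF addG_Gm] by simp
    also have "\<dots> = h (red b)" by (simp only: red_shift[OF j])
    also have "\<dots> = h b" by (rule hp[OF b])
    finally show "h (addG b ?s) * inverse (chi (addG b ?s) al) = h b * inverse (chi b al) * inverse (chi ?s al)"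
      by (simp add: chi_addG)
  qed
  also have "\<dots> = ?c * inverse (chi ?s al)" by (simp add: sum_distrib_right)
  finally have e: "?c * (1 - inverse (chi ?s al)) = 0" by (simp add: algebra_simps)
  have "chi ?s al \<noteq> 1"
  proof
    assume "chi ?s al = 1"
    then have "int N dvd int n * int (al j)" by (simp add: chi_kGn j Q_eq_1)
    then have "int n * int n dvd int n * int (al j)" by (simp add: NN_def power2_eq_square)
    then have "int n dvd int (al j)" using n_pos by (subst (asm) dvd_times_left_cancel_iff) auto
    then show False using nd by (simp add: of_nat_dvd_iff)
  qed
  then have "1 - inverse (chi ?s al) \<noteq> 0" using chi_nz[of ?s al] by (simp add: field_simps)
  then show ?thesis using e by simp
qed

lemma gmon_AA: assumes d: "\<And>j. j < m \<Longrightarrow> n dvd al j" shows "gmon H g m al \<in> AA"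
  unfolding gmon_def
proof (rule ag_mprod)
  fix i assume i: "i < m"
  then obtain t where t: "al i = n * t" using d by (auto elim: dvdE)
  show "pw H (g i) (al i) \<in> AA" by (simp add: t pw_mult g_V1 i ag_pw pwn_AA)
qed

lemma D1_AA: assumes h: "per1 h" shows "D1 h \<in> AA"
proof -
  have "D1 h = (\<Sum>b\<in>GG. \<Sum>al\<in>GG. scal (cN * (h b * inverse (chi b al))) (gmon H g m al))"
    by (simp add: D1_def idem_eq scal_sum scal_scal mult_ac)
  also have "\<dots> = (\<Sum>al\<in>GG. scal (cN * (\<Sum>b\<in>GG. h b * inverse (chi b al))) (gmon H g m al))"
    by (subst sum.swap) (simp add: sum_scal_same sum_distrib_left)
  finally have e: "D1 h = \<dots>" .
  show ?thesis unfolding e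
  proof (rule ag_sum)
    fix al assume al: "al \<in> GG"
    show "scal (cN * (\<Sum>b\<in>GG. h b * inverse (chi b al))) (gmon H g m al) \<in> AA"
    proof (cases "\<forall>j<m. n dvd al j")
      case True then show ?thesis by (intro ag_scal gmon_AA) auto
    next
      case False
      then obtain j where "j < m" "\<not> n dvd al j" by auto
      then show ?thesis using coef_vanish[OF h al] by (simp add: ag_zero)
    qed
  qed
qed

definition ind :: "(nat \<Rightarrow> nat) \<Rightarrow> (nat \<Rightarrow> nat) \<Rightarrow> complex" where
  "ind t b = (if red b = t then 1 else 0)"

lemma ind_per: "per1 (ind t)" by (simp add: per1_def ind_def red_red)

lemma D2_T2: assumes h: "per2 h" shows "D2 h \<in> T2i AA"
proof -
  let ?X = "\<Sum>t\<in>GG. \<Sum>t'\<in>GG. sc2 (h t t') (tens (D1 (ind t)) (D1 (ind t')))"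
  have X: "?X \<in> T2i AA"
    by (intro T2_sum T2_sc2 T2i.T2t D1_AA ind_per)
  have "?X = D2 h"
  proof (rule D2_char)
    show "?X \<in> V2 dH" using X by (rule T2_V2)
    fix b c assume b: "b \<in> GG" and c: "c \<in> GG"
    have "mul2 H ?X (tens (I b) (I c)) = (\<Sum>t\<in>GG. \<Sum>t'\<in>GG. sc2 (h t t' * (ind t b * ind t' c)) (tens (I b) (I c)))"
      by (simp add: mul2_sum_l mul2_sc2_l tens_D1 E2 b c sc2_sc2)
    also have "\<dots> = (\<Sum>t'\<in>GG. sc2 (h (red b) t' * (ind (red b) b * ind t' c)) (tens (I b) (I c)))"
      by (rule sum_single_G[OF red_Gm]) (simp add: ind_def)
    also have "\<dots> = sc2 (h (red b) (red c) * (ind (red b) b * ind (red c) c)) (tens (I b) (I c))"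
      by (rule sum_single_G[OF red_Gm]) (simp add: ind_def)
    also have "\<dots> = sc2 (h b c) (tens (I b) (I c))" using h b c by (simp add: ind_def per2_def)
    finally show "mul2 H ?X (tens (I b) (I c)) = sc2 (h b c) (tens (I b) (I c))" .
  qed
  then show ?thesis using X by simp
qed

lemma tens3_D1: "tens3 (D1 h) (D1 k) (D1 l) = D3 (\<lambda>b c d. h b * k c * l d)"
proof -
  have "tens3 (D1 h) (D1 k) (D1 l) = (\<Sum>b\<in>GG. tens3 (scal (h b) (I b)) (D1 k) (D1 l))"
    unfolding D1_def[of h] by (rule tens3_sum_1)
  also have "\<dots> = (\<Sum>b\<in>GG. \<Sum>c\<in>GG. tens3 (scal (h b) (I b)) (scal (k c) (I c)) (D1 l))"
    unfolding D1_def[of k] by (simp only: tens3_sum_2)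
  also have "\<dots> = (\<Sum>b\<in>GG. \<Sum>c\<in>GG. \<Sum>d\<in>GG. tens3 (scal (h b) (I b)) (scal (k c) (I c)) (scal (l d) (I d)))"
    unfolding D1_def[of l] by (simp only: tens3_sum_3)
  also have "\<dots> = D3 (\<lambda>b c d. h b * k c * l d)"
    by (simp add: D3_def tens3_scal_1 tens3_scal_2 tens3_scal_3 sc3_sc3 mult_ac)
  finally show ?thesis .
qed

lemma D3_T3: assumes h: "per3 h" shows "D3 h \<in> T3i AA"
proof -
  let ?X = "\<Sum>t\<in>GG. \<Sum>t'\<in>GG. \<Sum>t''\<in>GG. sc3 (h t t' t'') (tens3 (D1 (ind t)) (D1 (ind t')) (D1 (ind t'')))"
  have X: "?X \<in> T3i AA"
    by (intro T3_sum T3_sc3 T3i.T3t D1_AA ind_per)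
  have "?X = D3 h"
  proof (rule D3_char)
    show "?X \<in> V3 dH" using X by (rule T3_V3)
    fix b c d assume b: "b \<in> GG" and c: "c \<in> GG" and d: "d \<in> GG"
    have "mul3 H ?X (tens3 (I b) (I c) (I d)) = (\<Sum>t\<in>GG. \<Sum>t'\<in>GG. \<Sum>t''\<in>GG.
        sc3 (h t t' t'' * (ind t b * ind t' c * ind t'' d)) (tens3 (I b) (I c) (I d)))"
      by (simp add: mul3_sum_l mul3_sc3_l tens3_D1 E3 b c d sc3_sc3)
    also have "\<dots> = (\<Sum>t'\<in>GG. \<Sum>t''\<in>GG.
        sc3 (h (red b) t' t'' * (ind (red b) b * ind t' c * ind t'' d)) (tens3 (I b) (I c) (I d)))"
      by (rule sum_single_G[OF red_Gm]) (simp add: ind_def)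
    also have "\<dots> = (\<Sum>t''\<in>GG.
        sc3 (h (red b) (red c) t'' * (ind (red b) b * ind (red c) c * ind t'' d)) (tens3 (I b) (I c) (I d)))"
      by (rule sum_single_G[OF red_Gm]) (simp add: ind_def)
    also have "\<dots> = sc3 (h (red b) (red c) (red d) * (ind (red b) b * ind (red c) c * ind (red d) d)) (tens3 (I b) (I c) (I d))"
      by (rule sum_single_G[OF red_Gm]) (simp add: ind_def)
    also have "\<dots> = sc3 (h b c d) (tens3 (I b) (I c) (I d))" using h b c d by (simp add: ind_def per3_def)
    finally show "mul3 H ?X (tens3 (I b) (I c) (I d)) = sc3 (h b c d) (tens3 (I b) (I c) (I d))" .
  qed
  then show ?thesis using X by simp
qed

end


context setting
begin

definition cj :: "v2 \<Rightarrow> v2" where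
  "cj X = mul2 H (mul2 H (D2 cJ) X) (D2 (\<lambda>b c. inverse (cJ b c)))"

lemma inv2J: "inv2 H (D2 cJ) = D2 (\<lambda>b c. inverse (cJ b c))" by (simp add: inv2_D2 cJ_nz)

lemma copJ_eq: "copJ H (Jel H q n m a g) x = cj (cop H x)"
  by (simp add: copJ_def Jel_D2 inv2J cj_def)

lemma cj_add: "cj (X + Y) = cj X + cj Y" by (simp add: cj_def mul2_add_r mul2_add_l)
lemma cj_sc2: "cj (sc2 c X) = sc2 c (cj X)" by (simp add: cj_def mul2_sc2_r mul2_sc2_l)
lemma cj_zero: "cj 0 = 0" by (simp add: cj_def)
lemma cj_V2: "cj X \<in> V2 dH" by (simp add: cj_def mul2_V2)

lemma D2_cong: "(\<And>b c. b \<in> GG \<Longrightarrow> c \<in> GG \<Longrightarrow> f b c = f' b c) \<Longrightarrow> D2 f = D2 f'"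
  unfolding D2_def by (intro sum.cong refl) auto
lemma D3_cong: "(\<And>b c d. b \<in> GG \<Longrightarrow> c \<in> GG \<Longrightarrow> d \<in> GG \<Longrightarrow> f b c d = f' b c d) \<Longrightarrow> D3 f = D3 f'"
  unfolding D3_def by (intro sum.cong refl) auto

lemma cj_D2: "cj (D2 h) = D2 h"
proof -
  have "cj (D2 h) = D2 (\<lambda>b c. cJ b c * h b c * inverse (cJ b c))" by (simp add: cj_def D2_mul)
  also have "\<dots> = D2 h" by (rule D2_cong) (simp add: cJ_nz)
  finally show ?thesis .
qed

lemma JiJ: "mul2 H (D2 (\<lambda>b c. inverse (cJ b c))) (D2 cJ) = one2 H"
proof -
  have "mul2 H (D2 (\<lambda>b c. inverse (cJ b c))) (D2 cJ) = D2 (\<lambda>b c. inverse (cJ b c) * cJ b c)" by (rule D2_mul)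
  also have "\<dots> = D2 (\<lambda>_ _. 1)" by (rule D2_cong) (simp add: cJ_nz)
  finally show ?thesis by (simp add: one2_D2)
qed

lemma cj_mul: assumes X: "X \<in> V2 dH" and Y: "Y \<in> V2 dH" shows "cj (mul2 H X Y) = mul2 H (cj X) (cj Y)"
proof -
  let ?J = "D2 cJ" and ?J' = "D2 (\<lambda>b c. inverse (cJ b c))"
  have V: "?J \<in> V2 dH" "?J' \<in> V2 dH" by (simp_all add: D2_V2)
  have "mul2 H (cj X) (cj Y) = mul2 H ?J (mul2 H X (mul2 H (mul2 H ?J' ?J) (mul2 H Y ?J')))"
    by (simp add: cj_def mul2_assoc V X Y mul2_V2)
  also have "\<dots> = mul2 H ?J (mul2 H X (mul2 H Y ?J'))" by (simp add: JiJ mul2_one_l mul2_V2)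
  also have "\<dots> = cj (mul2 H X Y)" by (simp add: cj_def mul2_assoc V X Y mul2_V2)
  finally show ?thesis by simp
qed

lemma pw_e:
  assumes j: "j < m" and i: "i < m"
  shows "mul H (pw H (g j) t) (e i) = scal ((if j = i then q else 1) ^ t) (mul H (e i) (pw H (g j) t))"
proof (induction t)
  case 0 then show ?case by (simp add: mul_unt_l mul_unt_r e_V1 i)
next
  case (Suc t)
  have "mul H (pw H (g j) (Suc t)) (e i) = mul H (g j) (mul H (pw H (g j) t) (e i))"
    by (simp add: pw_Suc mul_assoc g_V1 j pw_V1 e_V1 i)
  also have "\<dots> = scal ((if j = i then q else 1) ^ t) (mul H (mul H (g j) (e i)) (pw H (g j) t))"
    using Suc by (simp add: mul_scal_r mul_assoc g_V1 j pw_V1 e_V1 i)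
  also have "\<dots> = scal ((if j = i then q else 1) ^ Suc t) (mul H (e i) (pw H (g j) (Suc t)))"
    using g_e j i by (simp add: mul_scal_l scal_scal pw_Suc mul_assoc g_V1 pw_V1 e_V1 mult.commute)
  finally show ?case .
qed

lemma gmon_e:
  assumes i: "i < m"
  shows "mul H (gmon H g m al) (e i) = scal (q ^ al i) (mul H (e i) (gmon H g m al))"
proof -
  have "k \<le> m \<Longrightarrow> mul H (mprod H (\<lambda>j. pw H (g j) (al j)) k) (e i) =
     scal (\<Prod>j<k. (if j = i then q else 1) ^ al j) (mul H (e i) (mprod H (\<lambda>j. pw H (g j) (al j)) k))" for k
  proof (induction k)
    case 0 then show ?case by (simp add: mul_unt_l mul_unt_r e_V1 i)
  next
    case (Suc k)
    let ?P = "mprod H (\<lambda>j. pw H (g j) (al j)) k"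
    have "mul H (mprod H (\<lambda>j. pw H (g j) (al j)) (Suc k)) (e i) = mul H ?P (mul H (pw H (g k) (al k)) (e i))"
      by (simp add: mul_assoc mprod_V1 pw_V1 e_V1 i)
    also have "\<dots> = scal ((if k = i then q else 1) ^ al k) (mul H (mul H ?P (e i)) (pw H (g k) (al k)))"
      using Suc.prems by (simp add: pw_e i mul_scal_r mul_assoc mprod_V1 pw_V1 e_V1)
    also have "\<dots> = scal (\<Prod>j<Suc k. (if j = i then q else 1) ^ al j) (mul H (e i) (mprod H (\<lambda>j. pw H (g j) (al j)) (Suc k)))"
      using Suc by (simp add: mul_scal_l scal_scal mul_assoc mprod_V1 pw_V1 e_V1 i mult.commute)
    finally show ?case .
  qed
  moreover have "(\<Prod>j<m. (if j = i then q else 1) ^ al j) = q ^ al i"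
    by (subst prod_single[of _ i]) (simp_all add: i)
  ultimately show ?thesis by (simp add: gmon_def)
qed

lemma idem_e:
  assumes i: "i < m" and b: "b \<in> GG"
  shows "mul H (I b) (e i) = mul H (e i) (I (addG b (negG (kG (Suc 0) i))))"
proof -
  let ?b' = "addG b (negG (kG (Suc 0) i))"
  have ch: "inverse (chi b al) * q ^ al i = inverse (chi ?b' al)" for al
  proof -
    have "chi b al = chi (addG ?b' (kG (Suc 0) i)) al" using b kG1_Gm by (simp add: addG_cancel2)
    also have "\<dots> = chi ?b' al * q ^ al i" by (simp add: chi_addG chi_comm[of "kG (Suc 0) i"] chi_kG1[OF i, simplified, symmetric])
    finally show ?thesis using q_nz by (simp add: field_simps)
  qed
  have "mul H (I b) (e i) = scal cN (\<Sum>al\<in>GG. scal (inverse (chi b al) * q ^ al i) (mul H (e i) (gmon H g m al)))"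
    by (simp add: idem_eq[of b] mul_scal_l mul_sum_l gmon_e i scal_scal)
  also have "\<dots> = mul H (e i) (I ?b')"
    by (simp add: ch idem_eq[of ?b'] mul_scal_r mul_sum_r)
  finally show ?thesis .
qed

lemma negG_Gm': "addG b (negG (kG (Suc 0) i)) \<in> GG" by (rule addG_Gm)

lemma L1:
  assumes i: "i < m"
  shows "mul2 H (D2 h) (tens (e i) (unt H)) = mul2 H (tens (e i) (unt H)) (D2 (\<lambda>b c. h (addG b (kG (Suc 0) i)) c))"
proof -
  let ?eps = "kG (Suc 0) i"
  define F where "F b = (\<Sum>c\<in>GG. sc2 (h b c) (tens (mul H (e i) (I (addG b (negG ?eps)))) (I c)))" for b
  have "mul2 H (D2 h) (tens (e i) (unt H)) = (\<Sum>b\<in>GG. F b)"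
    unfolding D2_def F_def mul2_sum_l
    by (intro sum.cong refl) (simp add: mul2_sum_l mul2_sc2_l mul2_tens idem_e i mul_unt_r idem_V1)
  also have "\<dots> = (\<Sum>b\<in>GG. F (addG b ?eps))" by (rule sum_shift[OF kG1_Gm(2), symmetric])
  also have "\<dots> = mul2 H (tens (e i) (unt H)) (D2 (\<lambda>b c. h (addG b ?eps) c))"
    unfolding D2_def F_def mul2_sum_r
    by (intro sum.cong refl) (simp add: mul2_sum_r mul2_sc2_r mul2_tens addG_cancel kG1_Gm mul_unt_l idem_V1)
  finally show ?thesis .
qed

lemma L2:
  assumes i: "i < m"
  shows "mul2 H (D2 h) (tens (unt H) (e i)) = mul2 H (tens (unt H) (e i)) (D2 (\<lambda>b c. h b (addG c (kG (Suc 0) i))))"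
proof -
  let ?eps = "kG (Suc 0) i"
  define F where "F b c = sc2 (h b c) (tens (I b) (mul H (e i) (I (addG c (negG ?eps)))))" for b c
  have "mul2 H (D2 h) (tens (unt H) (e i)) = (\<Sum>b\<in>GG. \<Sum>c\<in>GG. F b c)"
    unfolding D2_def F_def mul2_sum_l
    by (intro sum.cong refl) (simp add: mul2_sc2_l mul2_tens idem_e i mul_unt_r idem_V1)
  also have "\<dots> = (\<Sum>b\<in>GG. \<Sum>c\<in>GG. F b (addG c ?eps))"
    by (rule sum.cong[OF refl], rule sum_shift[OF kG1_Gm(2), symmetric])
  also have "\<dots> = mul2 H (tens (unt H) (e i)) (D2 (\<lambda>b c. h b (addG c ?eps)))"
    unfolding D2_def F_def mul2_sum_r
    by (intro sum.cong refl) (simp add: mul2_sum_r mul2_sc2_r mul2_tens addG_cancel kG1_Gm mul_unt_l idem_V1)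
  finally show ?thesis .
qed

definition phi1 :: "nat \<Rightarrow> (nat \<Rightarrow> nat) \<Rightarrow> (nat \<Rightarrow> nat) \<Rightarrow> complex" where
  "phi1 i b c = cJ (addG b (kG (Suc 0) i)) c * chi (a i) c * inverse (cJ b c)"
definition phi2 :: "nat \<Rightarrow> (nat \<Rightarrow> nat) \<Rightarrow> (nat \<Rightarrow> nat) \<Rightarrow> complex" where
  "phi2 i b c = cJ b (addG c (kG (Suc 0) i)) * inverse (cJ b c)"

lemma gmon_D1: "gmon H g m al = D1 (chi al)" by (simp add: gmon_expand D1_def)

lemma copJ_e:
  assumes i: "i < m"
  shows "cj (cop H (e i)) = mul2 H (tens (e i) (unt H)) (D2 (phi1 i)) + mul2 H (tens (unt H) (e i)) (D2 (phi2 i))"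
proof -
  let ?J = "D2 cJ" and ?J' = "D2 (\<lambda>b c. inverse (cJ b c))" and ?E1 = "tens (e i) (unt H)" and ?E2 = "tens (unt H) (e i)"
  have V: "?J \<in> V2 dH" "?J' \<in> V2 dH" "?E1 \<in> V2 dH" "?E2 \<in> V2 dH"
    by (simp_all add: D2_V2 tens_V2 e_V1 i unt_V1)
  have c: "cop H (e i) = mul2 H ?E1 (D2 (\<lambda>b c. chi (a i) c)) + ?E2"
  proof -
    have "cop H (e i) = tens (e i) (Kel H g m a i) + tens (unt H) (e i)"
      using e_cop i by (simp add: fun_eq_iff tens_def)
    moreover have "tens (e i) (Kel H g m a i) = mul2 H ?E1 (tens (unt H) (Kel H g m a i))"
      by (simp add: mul2_tens mul_unt_l mul_unt_r e_V1 i Kel_eq gmon_V1)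
    moreover have "tens (unt H) (Kel H g m a i) = D2 (\<lambda>b c. chi (a i) c)"
      by (simp add: Kel_eq gmon_D1 unt_D1 tens_D1)
    ultimately show ?thesis by simp
  qed
  have t1: "cj (mul2 H ?E1 (D2 (\<lambda>b c. chi (a i) c))) = mul2 H ?E1 (D2 (phi1 i))"
  proof -
    have "cj (mul2 H ?E1 (D2 (\<lambda>b c. chi (a i) c))) = mul2 H (mul2 H (mul2 H ?J ?E1) (D2 (\<lambda>b c. chi (a i) c))) ?J'"
      by (simp add: cj_def mul2_assoc V D2_V2)
    also have "\<dots> = mul2 H ?E1 (mul2 H (mul2 H (D2 (\<lambda>b c. cJ (addG b (kG (Suc 0) i)) c)) (D2 (\<lambda>b c. chi (a i) c))) ?J')"
      by (simp add: L1 i mul2_assoc V D2_V2 mul2_V2)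
    also have "\<dots> = mul2 H ?E1 (D2 (phi1 i))" by (simp add: D2_mul phi1_def[abs_def])
    finally show ?thesis .
  qed
  have t2: "cj ?E2 = mul2 H ?E2 (D2 (phi2 i))"
  proof -
    have "cj ?E2 = mul2 H (mul2 H ?E2 (D2 (\<lambda>b c. cJ b (addG c (kG (Suc 0) i))))) ?J'"
      by (simp add: cj_def L2 i)
    also have "\<dots> = mul2 H ?E2 (D2 (phi2 i))" by (simp add: mul2_assoc V D2_V2 D2_mul phi2_def[abs_def])
    finally show ?thesis .
  qed
  show ?thesis by (simp add: c cj_add t1 t2)
qed

lemma red_kG1: "red (kG (Suc 0) i) = kG (Suc 0) i"
  using n2 by (simp add: red_def kG_def restrict_def fun_eq_iff)

lemma cJ_eps1: "cJ (kG (Suc 0) i) c = (if i < m then (\<Prod>j<m. Q (- (int (a i j) * int (fl (c j))))) else 1)"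
proof (cases "i < m")
  case True
  then show ?thesis unfolding cJ_eq
    by (subst prod_single[of _ i]) (simp_all add: kG_app Q_def)
next
  case False
  then show ?thesis unfolding cJ_eq by (simp add: kG_app Q_def)
qed

lemma phi1_closed:
  assumes i: "i < m" and b: "b \<in> GG" and c: "c \<in> GG"
  shows "phi1 i b c = (\<Prod>j<m. Q (int (a i j) * int (c j mod n)))"
proof -
  have "phi1 i b c = cJ (kG (Suc 0) i) c * chi (a i) c" by (simp add: phi1_def cJ_add1 cJ_nz)
  also have "\<dots> = (\<Prod>j<m. Q (- (int (a i j) * int (fl (c j)))) * Q (int (a i j) * int (c j)))"
    by (simp add: cJ_eps1 i chi_def prod.distrib)
  also have "\<dots> = (\<Prod>j<m. Q (int (a i j) * int (c j mod n)))"
    by (intro prod.cong refl) (simp add: Q_add[symmetric] int_fl algebra_simps)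
  finally show ?thesis .
qed

lemma phi1_per: "i < m \<Longrightarrow> per2 (phi1 i)"
  unfolding per2_def by (simp add: phi1_closed red_Gm red_app)

lemma cJ_eps2: "cJ b (kG (Suc 0) i) = 1"
  unfolding cJ_eq by (rule prod.neutral, rule ballI, rule prod.neutral) (use n2 in \<open>auto simp: kG_def fl_def Q_def\<close>)

lemma phi2_W: "phi2 i b c = W b c (kG (Suc 0) i)" by (simp add: phi2_def W_def cJ_eps2)

lemma phi2_per: "per2 (phi2 i)"
  unfolding per2_def
proof (intro ballI)
  fix b c assume b: "b \<in> GG" and c: "c \<in> GG"
  have "W (red b) (red c) (red (kG (Suc 0) i)) = W b c (kG (Suc 0) i)"
    using W_per b c kG1_Gm by (simp add: per3_def)
  then show "phi2 i (red b) (red c) = phi2 i b c" by (simp add: phi2_W red_kG1)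
qed

lemma pw_D1: "i < m \<Longrightarrow> pw H (g i) t = D1 (\<lambda>b. q ^ (t * b i))"
  by (rule D1_char) (simp_all add: pw_V1 pw_idem)

lemma pw_per: "per1 (\<lambda>b. q ^ (n * b i))"
  unfolding per1_def
proof (intro ballI)
  fix b assume b: "b \<in> GG"
  show "q ^ (n * red b i) = q ^ (n * b i)"
  proof (cases "i < m")
    case True
    have "Q (int n * int (b i mod n)) = Q (int n * (int (b i) mod int n))" by (simp add: zmod_int)
    also have "\<dots> = Q (int n * int (b i))" by (rule Q_n_mod[symmetric])
    finally show ?thesis using True by (simp add: red_app Q_int[symmetric])
  next
    case False then show ?thesis using b by (simp add: red_def Gm_iff)
  qed
qed

lemma cj_AA: assumes x: "x \<in> AA" shows "cj (cop H x) \<in> T2i AA"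
  using x
proof (induct x rule: alg_gen.induct)
  case unit
  have "cj (cop H (unt H)) = cj (D2 (\<lambda>_ _. 1))" by (simp only: cop_unt one2_D2)
  also have "\<dots> = D2 (\<lambda>_ _. 1)" by (rule cj_D2)
  also have "\<dots> = tens (unt H) (unt H)" by (simp only: one2_D2[symmetric] one2_eq)
  finally show ?case by (simp only:) (rule T2i.T2t[OF unt_AA unt_AA])
next
  case (gen x)
  then consider (p) i where "i < m" "x = pw H (g i) n" | (e) i where "i < m" "x = e i" by auto
  then show ?case
  proof cases
    case p
    have gx: "gl x" using p gl_pw[of "g i" n] g_V1 g_cop by (simp add: gl_def)
    have tx: "tens x x = D2 (\<lambda>b c. q ^ (n * b i) * q ^ (n * c i))" by (simp only: p pw_D1[OF p(1)] tens_D1)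
    have "cj (cop H x) = tens x x" using gx unfolding gl_def by (simp only: tx cj_D2)
    then show ?thesis using p by (simp only:) (rule T2i.T2t; rule pwn_AA)
  next
    case e
    have d1: "D2 (phi1 i) \<in> T2i AA" by (rule D2_T2[OF phi1_per[OF e(1)]])
    have d2: "D2 (phi2 i) \<in> T2i AA" by (rule D2_T2[OF phi2_per])
    have t1: "tens (e i) (unt H) \<in> T2i AA" "tens (unt H) (e i) \<in> T2i AA"
      by (rule T2i.T2t[OF e_AA[OF e(1)] unt_AA], rule T2i.T2t[OF unt_AA e_AA[OF e(1)]])
    show ?thesis unfolding e(2) copJ_e[OF e(1)]
      by (rule T2i.T2a[OF T2_mul[OF t1(1) d1] T2_mul[OF t1(2) d2]])
  qed
next
  case (add x y)
  have e: "(\<lambda>k. x k + y k) = x + y" by (simp add: fun_eq_iff)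
  have i1: "cj (cop H x) \<in> T2i AA" "cj (cop H y) \<in> T2i AA" using add by auto
  show ?case unfolding e cop_add cj_add by (rule T2i.T2a[OF i1])
next
  case (smul x c)
  have "cj (cop H x) \<in> T2i AA" using smul by auto
  then show ?case unfolding cop_scal cj_sc2 by (rule T2_sc2)
next
  case (mult x y)
  have v: "x \<in> V1 dH" "y \<in> V1 dH" using mult by (auto intro: AA_V1)
  have i1: "cj (cop H x) \<in> T2i AA" "cj (cop H y) \<in> T2i AA" using mult by auto
  show ?case unfolding cop_mul[OF v] cj_mul[OF cop_V2 cop_V2] by (rule T2_mul[OF i1])
qed

end


context setting
begin

lemma copJr_tens: "x \<in> V1 dH \<Longrightarrow> copJ_r H (D2 cJ) (tens x y) = ltens x (cj (cop H y))"
  by (simp add: copJ_r_def inv2J lone_eq cop_r_tens ltens_mul D2_V2 cop_V2 mul2_V2 mul_unt_l mul_unt_r cj_def)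
lemma copJl_tens: "y \<in> V1 dH \<Longrightarrow> copJ_l H (D2 cJ) (tens x y) = rtens (cj (cop H x)) y"
  by (simp add: copJ_l_def inv2J rone_eq cop_l_tens rtens_mul D2_V2 cop_V2 mul2_V2 mul_unt_l mul_unt_r cj_def)
lemma copJr_add: "copJ_r H J (X + Y) = copJ_r H J X + copJ_r H J Y"
  by (simp add: copJ_r_def cop_r_add mul3_add_r mul3_add_l)
lemma copJl_add: "copJ_l H J (X + Y) = copJ_l H J X + copJ_l H J Y"
  by (simp add: copJ_l_def cop_l_add mul3_add_r mul3_add_l)
lemma copJr_zero: "copJ_r H J 0 = 0"
proof -
  have "cop_r H 0 = 0" by (simp add: cop_r_def fun_eq_iff)
  then show ?thesis by (simp add: copJ_r_def)
qed
lemma copJl_zero: "copJ_l H J 0 = 0"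
proof -
  have "cop_l H 0 = 0" by (simp add: cop_l_def fun_eq_iff)
  then show ?thesis by (simp add: copJ_l_def)
qed

lemma copJr_T3: assumes F: "F \<in> T2i AA" shows "copJ_r H (D2 cJ) F \<in> T3i AA"
  using F
proof (induction rule: T2i.induct)
  case T2z then show ?case by (simp only: copJr_zero) (rule T3i.T3z)
next
  case (T2t x y)
  have eq: "copJ_r H (D2 cJ) (tens x y) = ltens x (cj (cop H y))" using T2t by (simp add: copJr_tens AA_V1)
  show ?case unfolding eq by (rule ltens_T3[OF T2t.hyps(1) cj_AA[OF T2t.hyps(2)]])
next
  case (T2a X Y) then show ?case by (simp only: copJr_add) (rule T3i.T3a)
qed

lemma copJl_T3: assumes F: "F \<in> T2i AA" shows "copJ_l H (D2 cJ) F \<in> T3i AA"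
  using F
proof (induction rule: T2i.induct)
  case T2z then show ?case by (simp only: copJl_zero) (rule T3i.T3z)
next
  case (T2t x y)
  have eq: "copJ_l H (D2 cJ) (tens x y) = rtens (cj (cop H x)) y" using T2t by (simp add: copJl_tens AA_V1)
  show ?case unfolding eq by (rule rtens_T3[OF T2t.hyps(2) cj_AA[OF T2t.hyps(1)]])
next
  case (T2a X Y) then show ?case by (simp only: copJl_add) (rule T3i.T3a)
qed

definition PhiF :: "v2 \<Rightarrow> v2 \<Rightarrow> v3" where
  "PhiF F G = mul3 H (mul3 H (mul3 H (mul3 H (lone H F) (copJ_r H (Jel H q n m a g) F))
      (PhiJ H (Jel H q n m a g))) (copJ_l H (Jel H q n m a g) G)) (rone H G)"

lemma PhiF_T3: assumes F: "F \<in> T2i AA" and G: "G \<in> T2i AA" shows "PhiF F G \<in> T3i AA"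
proof -
  have l: "lone H F \<in> T3i AA" unfolding lone_eq by (rule ltens_T3[OF unt_AA F])
  have r: "rone H G \<in> T3i AA" unfolding rone_eq by (rule rtens_T3[OF unt_AA G])
  have p: "PhiJ H (Jel H q n m a g) \<in> T3i AA" unfolding PhiJ_D3 by (rule D3_T3[OF W_per])
  show ?thesis unfolding PhiF_def Jel_D2
    by (intro T3_mul l r copJr_T3 copJl_T3 F G p[unfolded Jel_D2])
qed

lemma one3_T3: "one3 H \<in> T3i AA" unfolding one3_eq by (rule T3i.T3t[OF unt_AA unt_AA unt_AA])

lemma lmap_inv_T3:
  assumes bij: "bij_betw (lmap dH dB f) AA (V1 dB)"
    and X: "X \<in> T3i AA" and Y: "Y \<in> T3i AA" and eq: "lmap3 dH dB f X = lmap3 dH dB f Y"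
  shows "X = Y"
proof -
  let ?L = "lmap dH dB f"
  define hinv where "hinv = the_inv_into AA ?L"
  have inj: "inj_on ?L AA" and img: "?L ` AA = V1 dB" using bij by (auto simp: bij_betw_def)
  have hin: "y \<in> V1 dB \<Longrightarrow> hinv y \<in> AA \<and> ?L (hinv y) = y" for y
  proof -
    assume y: "y \<in> V1 dB"
    then have yi: "y \<in> ?L ` AA" using img by simp
    show ?thesis using the_inv_into_into[OF inj yi subset_refl] f_the_inv_into_f[OF inj yi] by (simp add: hinv_def)
  qed
  have hL: "x \<in> AA \<Longrightarrow> hinv (?L x) = x" for x using inj by (simp add: hinv_def the_inv_into_f_f)
  have hadd: "hinv (u + v) = hinv u + hinv v" if u: "u \<in> V1 dB" and v: "v \<in> V1 dB" for u v
  proof -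
    have A: "hinv u + hinv v \<in> AA" using hin u v by (simp add: ag_add)
    have B: "?L (hinv u + hinv v) = u + v" using hin u v by (simp add: lmap_add)
    show ?thesis using hL[OF A] unfolding B by simp
  qed
  have hscal: "hinv (scal c u) = scal c (hinv u)" if u: "u \<in> V1 dB" for u c
  proof -
    have A: "scal c (hinv u) \<in> AA" using hin u by (simp add: ag_scal)
    have B: "?L (scal c (hinv u)) = scal c u" using hin u by (simp add: lmap_scal)
    show ?thesis using hL[OF A] unfolding B by simp
  qed
  have hzero: "hinv 0 = 0" using hL[OF ag_zero] by simp
  have hsum: "J \<subseteq> {..<dB} \<Longrightarrow> hinv (\<Sum>j\<in>J. scal (y j) (bv j)) = (\<Sum>j\<in>J. scal (y j) (hinv (bv j)))" for J y
  proof (induction J rule: infinite_finite_induct)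
    case (infinite J) then show ?case using finite_subset[of J "{..<dB}"] by auto
  next
    case empty then show ?case by (simp only: sum.empty hzero)
  next
    case (insert j J)
    have bj: "bv j \<in> V1 dB" using insert by (simp add: bv_V1)
    have u: "scal (y j) (bv j) \<in> V1 dB" using bj by (rule V1_scal)
    have v: "(\<Sum>j\<in>J. scal (y j) (bv j)) \<in> V1 dB" using insert by (intro V1_sum V1_scal bv_V1) auto
    have ih: "hinv (\<Sum>j\<in>J. scal (y j) (bv j)) = (\<Sum>j\<in>J. scal (y j) (hinv (bv j)))"
      using insert by auto
    show ?case unfolding sum.insert[OF insert.hyps(1) insert.hyps(2)]
      by (simp only: hadd[OF u v] hscal[OF bj] ih)
  qed
  define hm where "hm k j = hinv (bv j) k" for k j
  let ?M = "lmap dB dH hm"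
  have Minv: "?M (?L x) = x" if x: "x \<in> AA" for x
  proof -
    let ?y = "?L x"
    have yV: "?y \<in> V1 dB" by (rule lmap_V1)
    have "hinv ?y = hinv (\<Sum>j<dB. scal (?y j) (bv j))" using expand1[OF yV] by simp
    also have "\<dots> = (\<Sum>j<dB. scal (?y j) (hinv (bv j)))" by (rule hsum) simp
    finally have e1: "hinv ?y = (\<Sum>j<dB. scal (?y j) (hinv (bv j)))" .
    have bvA: "j < dB \<Longrightarrow> hinv (bv j) \<in> V1 dH" for j using hin[OF bv_V1] AA_V1 by blast
    have "?M ?y = hinv ?y"
    proof (rule ext)
      fix k
      show "?M ?y k = hinv ?y k"
      proof (cases "k < dH")
        case True
        have "hinv ?y k = (\<Sum>j<dB. ?y j * hinv (bv j) k)" unfolding e1 by (simp only: sum_fun_app scal_def)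
        moreover have "?M ?y k = (\<Sum>j<dB. hm k j * ?y j)" using True by (simp only: lmap_def[of dB dH hm] if_True)
        ultimately show ?thesis by (simp add: hm_def mult.commute)
      next
        case False
        have "hinv ?y \<in> V1 dH" using hin[OF yV] AA_V1 by blast
        then show ?thesis using False by (simp add: lmap_def V1_def)
      qed
    qed
    then show ?thesis using hL[OF x] by simp
  qed
  have bck: "Z \<in> T3i AA \<Longrightarrow> lmap3 dB dH hm (lmap3 dH dB f Z) = Z" for Z
  proof (induction rule: T3i.induct)
    case T3z then show ?case by (simp only: z3 lmap3_zero)
  next
    case (T3t x y z) then show ?case by (simp add: lmap3_tens3 Minv)
  next
    case (T3a X Y) then show ?case by (simp only: p3 lmap3_add)
  qed
  have "X = lmap3 dB dH hm (lmap3 dH dB f X)" using bck[OF X] by simp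
  also have "\<dots> = lmap3 dB dH hm (lmap3 dH dB f Y)" by (simp only: eq)
  also have "\<dots> = Y" by (rule bck[OF Y])
  finally show ?thesis .
qed

end


locale proj = setting H n q m g e a for H n q m g e a +
  fixes p :: "nat \<Rightarrow> nat \<Rightarrow> complex"
  assumes hom: "hopf_hom H H p"
    and pg: "\<forall>i<m. lmap (dim H) (dim H) p (g i) = g i"
    and pe: "\<forall>i<m. lmap (dim H) (dim H) p (e i) = (\<lambda>_. 0)"
begin

abbreviation "P \<equiv> lmap dH dH p"
abbreviation "L2 \<equiv> lmap2 dH dH p"
abbreviation "L3 \<equiv> lmap3 dH dH p"

lemma P_mul: "x \<in> V1 dH \<Longrightarrow> y \<in> V1 dH \<Longrightarrow> P (mul H x y) = mul H (P x) (P y)"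
  using hom by (simp add: hopf_hom_def)
lemma P_unt: "P (unt H) = unt H" using hom by (simp add: hopf_hom_def)
lemma P_cop: "x \<in> V1 dH \<Longrightarrow> cop H (P x) = L2 (cop H x)" using hom by (simp add: hopf_hom_def)
lemma P_g: "i < m \<Longrightarrow> P (g i) = g i" using pg by simp
lemma P_e: "i < m \<Longrightarrow> P (e i) = 0" using pe by (simp add: zero_fun_def)

lemma P_pw: "i < m \<Longrightarrow> P (pw H (g i) t) = pw H (g i) t"
  by (induction t) (simp_all add: P_unt pw_Suc P_mul g_V1 pw_V1 P_g)

lemma P_gmon: "P (gmon H g m al) = gmon H g m al"
proof -
  have "k \<le> m \<Longrightarrow> P (mprod H (\<lambda>i. pw H (g i) (al i)) k) = mprod H (\<lambda>i. pw H (g i) (al i)) k" for k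
    by (induction k) (simp_all add: P_unt P_mul mprod_V1 pw_V1 P_pw)
  then show ?thesis by (simp add: gmon_def)
qed

lemma P_idem: "P (I b) = I b" by (simp add: idem_eq[of b] lmap_scal lmap_sum P_gmon)
lemma P_D1: "P (D1 h) = D1 h" by (simp add: D1_def lmap_sum lmap_scal P_idem)
lemma L2_D2: "L2 (D2 h) = D2 h" by (simp add: D2_def lmap2_sum lmap2_sc2 lmap2_tens P_idem)
lemma L3_D3: "L3 (D3 h) = D3 h" by (simp add: D3_def lmap3_sum lmap3_sc3 lmap3_tens3 P_idem)

lemma L2_mul: assumes X: "X \<in> V2 dH" and Y: "Y \<in> V2 dH" shows "L2 (mul2 H X Y) = mul2 H (L2 X) (L2 Y)"
proof -
  have s1: "L2 (mul2 H (tens x y) Y) = mul2 H (tens (P x) (P y)) (L2 Y)"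
    if "x \<in> V1 dH" "y \<in> V1 dH" "Y \<in> V2 dH" for x y Y
    by (rule lin_ext2[of Y dH "\<lambda>Y. L2 (mul2 H (tens x y) Y)" sc2 "\<lambda>Y. mul2 H (tens (P x) (P y)) (L2 Y)"])
       (simp_all add: that mul2_add_r mul2_sc2_r lmap2_add lmap2_sc2 mul2_tens lmap2_tens P_mul bv_V1)
  show ?thesis
    by (rule lin_ext2[of X dH "\<lambda>X. L2 (mul2 H X Y)" sc2 "\<lambda>X. mul2 H (L2 X) (L2 Y)"])
       (simp_all add: X Y mul2_add_l mul2_sc2_l lmap2_add lmap2_sc2 s1 bv_V1 lmap2_tens)
qed

lemma L3_mul: assumes X: "X \<in> V3 dH" and Y: "Y \<in> V3 dH" shows "L3 (mul3 H X Y) = mul3 H (L3 X) (L3 Y)"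
proof -
  have s1: "L3 (mul3 H (tens3 x y z) Y) = mul3 H (tens3 (P x) (P y) (P z)) (L3 Y)"
    if "x \<in> V1 dH" "y \<in> V1 dH" "z \<in> V1 dH" "Y \<in> V3 dH" for x y z Y
    by (rule lin_ext3[of Y dH "\<lambda>Y. L3 (mul3 H (tens3 x y z) Y)" sc3 "\<lambda>Y. mul3 H (tens3 (P x) (P y) (P z)) (L3 Y)"])
       (simp_all add: that mul3_add_r mul3_sc3_r lmap3_add lmap3_sc3 mul3_tens3 lmap3_tens3 P_mul bv_V1)
  show ?thesis
    by (rule lin_ext3[of X dH "\<lambda>X. L3 (mul3 H X Y)" sc3 "\<lambda>X. mul3 H (L3 X) (L3 Y)"])
       (simp_all add: X Y mul3_add_l mul3_sc3_l lmap3_add lmap3_sc3 s1 bv_V1 lmap3_tens3)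
qed

lemma L3_ltens: assumes Y: "Y \<in> V2 dH" shows "L3 (ltens x Y) = ltens (P x) (L2 Y)"
  by (rule lin_ext2[of Y dH "\<lambda>Y. L3 (ltens x Y)" sc3 "\<lambda>Y. ltens (P x) (L2 Y)"])
     (simp_all add: Y ltens_add_r ltens_sc2_r lmap3_add lmap3_sc3 lmap2_add lmap2_sc2 ltens_tens lmap3_tens3 lmap2_tens)
lemma L3_rtens: assumes Y: "Y \<in> V2 dH" shows "L3 (rtens Y x) = rtens (L2 Y) (P x)"
  by (rule lin_ext2[of Y dH "\<lambda>Y. L3 (rtens Y x)" sc3 "\<lambda>Y. rtens (L2 Y) (P x)"])
     (simp_all add: Y rtens_add_l rtens_sc2_l lmap3_add lmap3_sc3 lmap2_add lmap2_sc2 rtens_tens lmap3_tens3 lmap2_tens)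
lemma L3_lone: "Y \<in> V2 dH \<Longrightarrow> L3 (lone H Y) = lone H (L2 Y)" by (simp add: lone_eq L3_ltens P_unt)
lemma L3_rone: "Y \<in> V2 dH \<Longrightarrow> L3 (rone H Y) = rone H (L2 Y)" by (simp add: rone_eq L3_rtens P_unt)

lemma L3_cop_r: assumes X: "X \<in> V2 dH" shows "L3 (cop_r H X) = cop_r H (L2 X)"
  by (rule lin_ext2[of X dH "\<lambda>X. L3 (cop_r H X)" sc3 "\<lambda>X. cop_r H (L2 X)"])
     (simp_all add: X cop_r_add cop_r_sc2 lmap3_add lmap3_sc3 lmap2_add lmap2_sc2 lmap2_tens cop_r_tens bv_V1
       lmap_V1 L3_ltens cop_V2 P_cop)
lemma L3_cop_l: assumes X: "X \<in> V2 dH" shows "L3 (cop_l H X) = cop_l H (L2 X)"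
  by (rule lin_ext2[of X dH "\<lambda>X. L3 (cop_l H X)" sc3 "\<lambda>X. cop_l H (L2 X)"])
     (simp_all add: X cop_l_add cop_l_sc2 lmap3_add lmap3_sc3 lmap2_add lmap2_sc2 lmap2_tens cop_l_tens bv_V1
       lmap_V1 L3_rtens cop_V2 P_cop)

lemma L3_copJr: "F \<in> V2 dH \<Longrightarrow> L3 (copJ_r H (D2 cJ) F) = copJ_r H (D2 cJ) (L2 F)"
  by (simp add: copJ_r_def inv2J L3_mul mul3_V3 lone_V3 D2_V2 cop_r_V3 L3_lone L3_cop_r L2_D2)
lemma L3_copJl: "F \<in> V2 dH \<Longrightarrow> L3 (copJ_l H (D2 cJ) F) = copJ_l H (D2 cJ) (L2 F)"
  by (simp add: copJ_l_def inv2J L3_mul mul3_V3 rone_V3 D2_V2 cop_l_V3 L3_rone L3_cop_l L2_D2)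

lemma copJr_V3: "copJ_r H J X \<in> V3 dH" by (simp add: copJ_r_def mul3_V3)
lemma copJl_V3: "copJ_l H J X \<in> V3 dH" by (simp add: copJ_l_def mul3_V3)

lemma PhiJ': "PhiJ H (D2 cJ) = D3 W" using PhiJ_D3 by (simp add: Jel_D2)

lemma L3_PhiF: "F \<in> V2 dH \<Longrightarrow> G \<in> V2 dH \<Longrightarrow> L3 (PhiF F G) = PhiF (L2 F) (L2 G)"
  by (simp add: PhiF_def Jel_D2 PhiJ' L3_mul mul3_V3 lone_V3 rone_V3 L3_lone L3_rone L3_copJr L3_copJl L3_D3
      copJr_V3 copJl_V3 D3_V3)

lemma D1_add: "D1 h + D1 k = D1 (\<lambda>b. h b + k b)" by (simp add: D1_def sum.distrib[symmetric] scal_add2)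
lemma D1_scal: "scal c (D1 h) = D1 (\<lambda>b. c * h b)" by (simp add: D1_def scal_sum scal_scal)
lemma D1_0: "D1 (\<lambda>_. 0) = 0" by (simp add: D1_def)
lemma D2_add: "D2 h + D2 k = D2 (\<lambda>b c. h b c + k b c)"
  by (simp add: D2_def sum.distrib[symmetric] sc2_add2)
lemma D2_0: "D2 (\<lambda>_ _. 0) = 0" by (simp add: D2_def)

lemma P_AA: assumes x: "x \<in> AA" shows "\<exists>h. per1 h \<and> P x = D1 h"
  using x
proof (induct x rule: alg_gen.induct)
  case unit then show ?case by (intro exI[of _ "\<lambda>_. 1"]) (simp add: per1_def P_D1 unt_D1)
next
  case (gen x)
  then consider (p) i where "i < m" "x = pw H (g i) n" | (e) i where "i < m" "x = e i" by auto
  then show ?case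
  proof cases
    case p then show ?thesis by (intro exI[of _ "\<lambda>b. q ^ (n * b i)"]) (simp add: pw_per P_D1 pw_D1)
  next
    case e then show ?thesis by (intro exI[of _ "\<lambda>_. 0"]) (simp add: per1_def P_e D1_0)
  qed
next
  case (add x y)
  then obtain h k where h: "per1 h" "P x = D1 h" and k: "per1 k" "P y = D1 k" by auto
  have e: "(\<lambda>k. x k + y k) = x + y" by (simp add: fun_eq_iff)
  show ?case unfolding e lmap_add
    by (intro exI[of _ "\<lambda>b. h b + k b"]) (use h k in \<open>simp add: D1_add per1_def\<close>)
next
  case (smul x c)
  then obtain h where h: "per1 h" "P x = D1 h" by auto
  show ?case unfolding lmap_scal
    by (intro exI[of _ "\<lambda>b. c * h b"]) (use h in \<open>simp add: D1_scal per1_def\<close>)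
next
  case (mult x y)
  then obtain h k where h: "per1 h" "P x = D1 h" and k: "per1 k" "P y = D1 k" by auto
  have v: "x \<in> V1 dH" "y \<in> V1 dH" using mult by (auto intro: AA_V1)
  show ?case unfolding P_mul[OF v]
    by (intro exI[of _ "\<lambda>b. h b * k b"]) (use h k in \<open>simp add: D1_mul per1_def\<close>)
qed

lemma L2_T2: assumes F: "F \<in> T2i AA" shows "\<exists>f. per2 f \<and> L2 F = D2 f"
  using F
proof (induction rule: T2i.induct)
  case T2z then show ?case by (intro exI[of _ "\<lambda>_ _. 0"]) (simp add: z2 per2_def D2_0)
next
  case (T2t x y)
  obtain h where h: "per1 h" "P x = D1 h" using P_AA T2t by blast
  obtain k where k: "per1 k" "P y = D1 k" using P_AA T2t by blast
  show ?case
    by (intro exI[of _ "\<lambda>b c. h b * k c"]) (use h k in \<open>simp add: lmap2_tens tens_D1 per1_def per2_def\<close>)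
next
  case (T2a X Y)
  then obtain f f' where f: "per2 f" "L2 X = D2 f" and f': "per2 f'" "L2 Y = D2 f'" by auto
  show ?case unfolding p2 lmap2_add
    by (intro exI[of _ "\<lambda>b c. f b c + f' b c"]) (use f f' in \<open>simp add: D2_add per2_def\<close>)
qed

end


context setting
begin

lemma PhiJ2: "PhiJ H (D2 cJ) = D3 W" using PhiJ_D3 by (simp add: Jel_D2)

lemma PhiF_D: "PhiF (D2 f) (D2 gg) = D3 (\<lambda>b c d. f c d * (cJ c d * f b (addG c d) * inverse (cJ c d)) * W b c d *
    (cJ b c * gg (addG b c) d * inverse (cJ b c)) * gg b c)"
  by (simp add: PhiF_def Jel_D2 PhiJ2 copJ_r_def copJ_l_def inv2J lone_D2 rone_D2 cop_r_D2 cop_l_D2 D3_mul)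

lemma addG_kG: "k + l < N \<Longrightarrow> addG (kG k i) (kG l i) = kG (k + l) i"
  by (simp add: addG_def kG_def restrict_def fun_eq_iff)

lemma red_kGn: "red (kG n i) = red (kG 0 i)"
  by (simp add: red_def kG_def restrict_def fun_eq_iff)

lemma final_contra:
  assumes i: "i < m" and ai: "a i i mod n \<noteq> 0" and fper: "per2 f"
    and fg: "\<And>b c. b \<in> GG \<Longrightarrow> c \<in> GG \<Longrightarrow> f b c * gg b c = 1"
    and eq: "PhiF (D2 f) (D2 gg) = one3 H"
  shows False
proof -
  let ?e = "kG (Suc 0) i"
  define u where "u k = f (kG k i) ?e" for k
  define v where "v k = f ?e (kG k i)" for k
  have kG_in: "k \<le> n \<Longrightarrow> kG k i \<in> GG" for k using n_lt_N by (simp add: kG_Gm)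
  have eG: "?e \<in> GG" by (rule kG1_Gm(2))
  have fnz: "f b c \<noteq> 0" if "b \<in> GG" "c \<in> GG" for b c using fg[OF that] by auto
  have ginv: "gg b c = inverse (f b c)" if "b \<in> GG" "c \<in> GG" for b c
    using fg[OF that] fnz[OF that] by (simp add: field_simps)
  have unz: "k \<le> n \<Longrightarrow> u k \<noteq> 0" for k by (simp add: u_def fnz kG_in eG)
  have vnz: "k \<le> n \<Longrightarrow> v k \<noteq> 0" for k by (simp add: v_def fnz kG_in eG)
  define Wk where "Wk k = W (kG 1 i) (kG k i) (kG 1 i)" for k
  have Wk_val: "k < n \<Longrightarrow> Wk k = (if k = n - 1 then Q (- (int (a i i) * int n)) else 1)" for k
    unfolding Wk_def by (rule W_spec[OF i])
  have step: "u k * v (Suc k) * Wk k * inverse (u (Suc k)) * inverse (v k) = 1" if k: "k < n" for k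
  proof -
    have D: "D3 (\<lambda>b c d. f c d * (cJ c d * f b (addG c d) * inverse (cJ c d)) * W b c d *
      (cJ b c * gg (addG b c) d * inverse (cJ b c)) * gg b c) = D3 (\<lambda>_ _ _. 1)"
      using eq by (simp add: PhiF_D one3_D3)
    have kk: "kG k i \<in> GG" using k by (simp add: kG_in)
    have "f (kG k i) ?e * (cJ (kG k i) ?e * f ?e (addG (kG k i) ?e) * inverse (cJ (kG k i) ?e)) * W ?e (kG k i) ?e *
      (cJ ?e (kG k i) * gg (addG ?e (kG k i)) ?e * inverse (cJ ?e (kG k i))) * gg ?e (kG k i) = 1"
      using D3_inj[OF D eG kk eG] by simp
    moreover have "addG (kG k i) ?e = kG (Suc k) i" using addG_kG[of k "Suc 0" i] k n_lt_N by simp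
    moreover have "addG ?e (kG k i) = kG (Suc k) i" using addG_kG[of "Suc 0" k i] k n_lt_N by simp
    moreover have "kG (Suc k) i \<in> GG" using k by (simp add: kG_in)
    moreover have "W ?e (kG k i) ?e = Wk k" by (simp add: Wk_def)
    ultimately show ?thesis using cJ_nz kk eG by (simp add: ginv u_def v_def field_simps)
  qed
  define w where "w k = v k * inverse (u k)" for k
  have wstep: "w (Suc k) = w k * inverse (Wk k)" if k: "k < n" for k
  proof -
    have "Wk k \<noteq> 0" using step[OF k] by auto
    moreover have "u (Suc k) \<noteq> 0" using k by (simp add: unz)
    moreover have "u k \<noteq> 0" "v k \<noteq> 0" using k by (simp_all add: unz vnz)
    ultimately show ?thesis using step[OF k] by (simp add: w_def field_simps)
  qed
  have wconst: "k \<le> n - 1 \<Longrightarrow> w k = w 0" for k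
  proof (induction k)
    case 0 then show ?case by simp
  next
    case (Suc k)
    then have k: "k < n - 1" by simp
    then have "Wk k = 1" using n2 by (simp add: Wk_val)
    then show ?case using Suc wstep[of k] k by simp
  qed
  have wn: "w n = w 0 * inverse (Q (- (int (a i i) * int n)))"
  proof -
    have n1: "n - 1 < n" "Suc (n - 1) = n" using n2 by auto
    have "w n = w (n - 1) * inverse (Wk (n - 1))" using wstep[OF n1(1)] n1(2) by simp
    then show ?thesis using wconst[of "n - 1"] Wk_val[OF n1(1)] by simp
  qed
  have per_eq: "f (kG n i) ?e = f (kG 0 i) ?e" "f ?e (kG n i) = f ?e (kG 0 i)"
  proof -
    have a1: "kG n i \<in> GG" "kG 0 i \<in> GG" by (simp_all add: kG_in)
    have "f (kG n i) ?e = f (red (kG n i)) (red ?e)" using fper a1 eG by (simp add: per2_def)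
    also have "\<dots> = f (red (kG 0 i)) (red ?e)" by (simp only: red_kGn)
    also have "\<dots> = f (kG 0 i) ?e" using fper a1 eG by (simp add: per2_def)
    finally show "f (kG n i) ?e = f (kG 0 i) ?e" .
    have "f ?e (kG n i) = f (red ?e) (red (kG n i))" using fper a1 eG by (simp add: per2_def)
    also have "\<dots> = f (red ?e) (red (kG 0 i))" by (simp only: red_kGn)
    also have "\<dots> = f ?e (kG 0 i)" using fper a1 eG by (simp add: per2_def)
    finally show "f ?e (kG n i) = f ?e (kG 0 i)" .
  qed
  have "w n = w 0" using per_eq by (simp add: w_def u_def v_def)
  moreover have "w 0 \<noteq> 0" by (simp add: w_def unz vnz)
  ultimately have "inverse (Q (- (int (a i i) * int n))) = 1" using wn by simp
  then show False using Qan_ne1[OF ai] by (simp add: inverse_eq_iff_eq)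
qed

end

theorem mainTheorem6:
  fixes H :: hopf_data and n m :: nat and q :: complex
    and g e :: "nat \<Rightarrow> v1" and a :: "nat \<Rightarrow> nat \<Rightarrow> nat"
  assumes hopf: "is_hopf H"
    and n2: "n \<ge> 2" and m1: "m \<ge> 1"
    and q_root: "q ^ (n^2) = 1" "\<forall>k. 0 < k \<and> k < n^2 \<longrightarrow> q ^ k \<noteq> 1"
    and gens_in: "\<forall>i<m. g i \<in> V1 (dim H) \<and> e i \<in> V1 (dim H)"
    and g_grouplike: "\<forall>i<m. grouplike H (g i)"
    and g_order: "\<forall>i<m. pw H (g i) (n^2) = unt H"
    and g_comm: "\<forall>i<m. \<forall>j<m. mul H (g i) (g j) = mul H (g j) (g i)"
    and g_e: "\<forall>i<m. \<forall>j<m. mul H (g i) (e j) = scal (if i = j then q else 1) (mul H (e j) (g i))"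
    and a_range: "\<forall>i<m. \<forall>j<m. a i j < n^2"
    and e_cop: "\<forall>i<m. cop H (e i) = (\<lambda>k l. e i k * Kel H g m a i l + unt H k * e i l)"
    and generated: "alg_gen H ({g i | i. i < m} \<union> {e i | i. i < m}) = V1 (dim H)"
    and proj: "\<exists>p. hopf_hom H H p \<and>
                 (\<forall>i<m. lmap (dim H) (dim H) p (g i) = g i \<and> lmap (dim H) (dim H) p (e i) = (\<lambda>_. 0))"
    and group_alg: "inj_on (gmon H g m) (Gm n m)"
    and a_diag: "\<exists>i<m. a i i mod n \<noteq> 0"
  shows "PhiJ H (Jel H q n m a g) \<noteq> one3 H \<and>
         \<not> twist_equiv_hopf H (alg_gen H ({pw H (g i) n | i. i < m} \<union> {e i | i. i < m}))
              (Jel H q n m a g) (PhiJ H (Jel H q n m a g))"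
proof -
  interpret S: setting H n q m g e a
    by (unfold_locales) (use hopf n2 q_root gens_in g_grouplike g_order g_comm g_e e_cop group_alg in auto)
  obtain i where i: "i < m" "a i i mod n \<noteq> 0" using a_diag by auto
  have c1: "PhiJ H (Jel H q n m a g) \<noteq> one3 H" by (rule S.part1[OF i])
  have c2: "\<not> twist_equiv_hopf H S.AA (Jel H q n m a g) (PhiJ H (Jel H q n m a g))"
  proof
    assume "twist_equiv_hopf H S.AA (Jel H q n m a g) (PhiJ H (Jel H q n m a g))"
    then obtain F G B f where F: "F \<in> tens2 S.AA" and G: "G \<in> tens2 S.AA"
      and FG: "mul2 H F G = one2 H"
      and bij: "bij_betw (lmap (dim H) (dim B) f) S.AA (V1 (dim B))"
      and fu: "lmap (dim H) (dim B) f (unt H) = unt B"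
      and fa: "lmap3 (dim H) (dim B) f
           (mul3 H (mul3 H (mul3 H (mul3 H (lone H F) (copJ_r H (Jel H q n m a g) F)) (PhiJ H (Jel H q n m a g)))
              (copJ_l H (Jel H q n m a g) G)) (rone H G)) = one3 B"
      unfolding twist_equiv_hopf_def by blast
    have F2: "F \<in> T2i S.AA" and G2: "G \<in> T2i S.AA" using F G by (simp_all add: S.tens2_T2)
    have l1: "lmap3 (dim H) (dim B) f (S.PhiF F G) = one3 B" unfolding S.PhiF_def by (rule fa)
    have l2: "lmap3 (dim H) (dim B) f (one3 H) = one3 B" by (simp only: one3_eq lmap3_tens3 fu)
    have "lmap3 (dim H) (dim B) f (S.PhiF F G) = lmap3 (dim H) (dim B) f (one3 H)" using l1 l2 by simp
    then have PF: "S.PhiF F G = one3 H"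
      by (rule S.lmap_inv_T3[OF bij S.PhiF_T3[OF F2 G2] S.one3_T3])
    obtain p where hp: "hopf_hom H H p" "\<forall>i<m. lmap (dim H) (dim H) p (g i) = g i"
        "\<forall>i<m. lmap (dim H) (dim H) p (e i) = (\<lambda>_. 0)"
      using proj by blast
    interpret Pr: proj H n q m g e a p by unfold_locales (use hp in auto)
    have FV: "F \<in> V2 (dim H)" "G \<in> V2 (dim H)" using F2 G2 by (simp_all add: S.T2_V2)
    obtain f' where f': "S.per2 f'" "Pr.L2 F = S.D2 f'" using Pr.L2_T2[OF F2] by blast
    obtain gg where gg: "S.per2 gg" "Pr.L2 G = S.D2 gg" using Pr.L2_T2[OF G2] by blast
    have "S.D2 (\<lambda>b c. f' b c * gg b c) = S.D2 (\<lambda>_ _. 1)"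
    proof -
      have "S.D2 (\<lambda>b c. f' b c * gg b c) = mul2 H (Pr.L2 F) (Pr.L2 G)" by (simp add: f' gg S.D2_mul)
      also have "\<dots> = Pr.L2 (mul2 H F G)" by (rule Pr.L2_mul[OF FV, symmetric])
      also have "\<dots> = Pr.L2 (one2 H)" using FG by simp
      also have "\<dots> = S.D2 (\<lambda>_ _. 1)" by (simp add: S.one2_D2 Pr.L2_D2)
      finally show ?thesis .
    qed
    then have fg: "\<And>b c. b \<in> S.GG \<Longrightarrow> c \<in> S.GG \<Longrightarrow> f' b c * gg b c = 1"
      using S.D2_inj by force
    have "S.PhiF (S.D2 f') (S.D2 gg) = one3 H"
    proof -
      have "S.PhiF (S.D2 f') (S.D2 gg) = Pr.L3 (S.PhiF F G)" by (simp add: Pr.L3_PhiF FV f' gg)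
      also have "\<dots> = one3 H" by (simp add: PF S.one3_D3 Pr.L3_D3)
      finally show ?thesis .
    qed
    then show False using S.final_contra[where f=f' and gg=gg, OF i(1) i(2) f'(1)] fg by blast
  qed
  show ?thesis using c1 c2 by simp
qed


end
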